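(* For each $\vec a\in\mathcal M$, the multiplication $\vec\xi_1\circ\vec\xi_2=\eta\big(\eta^{-1}(\vec\xi_1)\circ\eta^{-1}(\vec\xi_2)\big)$ on $T_{\vec a}\mathcal M$ is commutative, associative, and invariant with respect to the metric $\langle\,,\rangle_\eta$, i.e. $\langle\vec\xi_1\circ\vec\xi_2,\vec\xi_3\rangle_\eta=\langle\vec\xi_1,\vec\xi_2\circ\vec\xi_3\rangle_\eta$.
   Context: Fix $m\ge1$, positive integers $n_0,\dots,n_m$, nonzero integers $d_1,\dots,d_m$; $D_1,\dots,D_m\subset\mathbb C$ pairwise disjoint closed disks, $\gamma_i=\partial D_i$ positively oriented, $\mathbf D^{int}=\bigcup(D_i\setminus\gamma_i)$, $\mathbf D^{ext}=\mathbb P^1\setminus\bigcup D_i$; $\mathcal H$ = germs of functions holomorphic near $\bigcup\gamma_i$; $f=f_++f_-$ with $f_+(z)=\frac1{2\pi\mathrm i}\sum_s\oint_{\gamma_s}\frac{f(p)}{p-z}dp$ ($z\in\mathbf D^{int}$), $f_-(z)=-\frac1{2\pi\mathrm i}\sum_s\oint_{\gamma_s}\frac{f(p)}{p-z}dp$ ($z\in\mathbf D^{ext}$), $f_-(\infty)=0$. $\mathcal M$: pairs $\vec a=(a,\hat a)\in\mathcal H\times\mathcal H$ with $a$ meromorphic on $\mathbf D^{ext}$, only pole $\infty$, $a=z^{n_0}+a_{n_0-2}z^{n_0-2}+\cdots$; $\hat a$ meromorphic on $\mathbf D^{int}$, only poles $\varphi_j\in D_j\setminus\gamma_j$, $\hat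 a=\hat a_{j,-n_j}(z-\varphi_j)^{-n_j}+\cdots$, $\hat a_{j,-n_j}\ne0$; $\zeta=a-\hat a=w_j^{d_j}$ on $\gamma_j$ with $w_j$ holomorphic near $\gamma_j$, $w_j'\ne0$, $w_j(\gamma_j)$ winding once about $0$. Tangent vectors $X\leftrightarrow(\partial_Xa,\partial_X\hat a)$; $\ell=a_++\hat a_-$; $'=\partial_z$. Metric $\langle X_1,X_2\rangle_\eta=-\frac1{2\pi\mathrm i}\sum_j\oint_{\gamma_j}\frac{\partial_1\zeta\partial_2\zeta}{\zeta'}dz-(\operatorname{Res}_\infty+\sum_j\operatorname{Res}_{\varphi_j})\frac{\partial_1\ell\partial_2\ell}{\ell'}dz$. The linear map $\eta:\mathcal H\times\mathcal H\to T_{\vec a}\mathcal M$ is $\eta(\omega,\hat\omega)=(a'(\omega+\hat\omega)_--(\omega a'+\hat\omega\hat a')_-,\,-\hat a'(\omega+\hat\omega)_++(\omega a'+\hat\omega\hat a')_+)$ (it is surjective), and the cotangent space is $T^*_{\vec a}\mathcal M=(\mathcal H\times\mathcal H)/\ker\eta$, so $\eta^{-1}:T_{\vec a}\mathcal M\to T^*_{\vec a}\mathcal M$. The product on $T^*_{\vec a}\mathcal M$ is induced from the product on $\mathcal H\times\mathcal H$: $(\omega_1,\hat\omega_1)\circ(\omega_2,\hat\omega_2)=(\omega_2(\omega_1a')_+-\omega_1(\omega_2a')_--\omega_2(\hat\omega_1\hat a')_--\omega_1(\hat\omega_2\hat a')_-,\ \hat\omega_2(\hat\omega_1\hat a')_+-\hat\omega_1(\hat\omega_2\hat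 a')_-+\hat\omega_1(\omega_2a')_++\hat\omega_2(\omega_1a')_+)$, which is well defined on the quotient. *)

theory Defs
  imports "HOL-Complex_Analysis.Complex_Analysis"
begin

definition circles :: "(nat \<Rightarrow> complex) \<Rightarrow> (nat \<Rightarrow> real) \<Rightarrow> nat \<Rightarrow> complex set" where
  "circles c r m = (\<Union>j\<in>{1..m}. sphere (c j) (r j))"

definition Dint :: "(nat \<Rightarrow> complex) \<Rightarrow> (nat \<Rightarrow> real) \<Rightarrow> nat \<Rightarrow> complex set" where
  "Dint c r m = (\<Union>j\<in>{1..m}. ball (c j) (r j))"

text \<open>Finite part of D^ext (the point at infinity is handled via growth conditions / residue at infinity).\<close>
definition Dext :: "(nat \<Rightarrow> complex) \<Rightarrow> (nat \<Rightarrow> real) \<Rightarrow> nat \<Rightarrow> complex set" where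
  "Dext c r m = - (\<Union>j\<in>{1..m}. cball (c j) (r j))"

text \<open>The space H of germs of functions holomorphic near the circles (represented by functions).\<close>
definition Hgerm :: "(nat \<Rightarrow> complex) \<Rightarrow> (nat \<Rightarrow> real) \<Rightarrow> nat \<Rightarrow> (complex \<Rightarrow> complex) set" where
  "Hgerm c r m = {f. \<exists>U. open U \<and> circles c r m \<subseteq> U \<and> f holomorphic_on U}"

text \<open>Equality of germs near the circles (values on the circles themselves are ignored).\<close>
definition germ_eq :: "(nat \<Rightarrow> complex) \<Rightarrow> (nat \<Rightarrow> real) \<Rightarrow> nat \<Rightarrow> (complex \<Rightarrow> complex) \<Rightarrow> (complex \<Rightarrow> complex) \<Rightarrow> bool" where
  "germ_eq c r m f g \<longleftrightarrow>
     (\<exists>U. open U \<and> circles c r m \<subseteq> U \<and> (\<forall>z\<in>U - circles c r m. f z = g z))"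

definition germ_eq2 :: "(nat \<Rightarrow> complex) \<Rightarrow> (nat \<Rightarrow> real) \<Rightarrow> nat \<Rightarrow>
    (complex \<Rightarrow> complex) \<times> (complex \<Rightarrow> complex) \<Rightarrow> (complex \<Rightarrow> complex) \<times> (complex \<Rightarrow> complex) \<Rightarrow> bool" where
  "germ_eq2 c r m X Y \<longleftrightarrow> germ_eq c r m (fst X) (fst Y) \<and> germ_eq c r m (snd X) (snd Y)"

definition cauchy_sum :: "(nat \<Rightarrow> complex) \<Rightarrow> (nat \<Rightarrow> real) \<Rightarrow> nat \<Rightarrow> (complex \<Rightarrow> complex) \<Rightarrow> complex \<Rightarrow> complex" where
  "cauchy_sum c r m f z =
     (1 / (2 * pi * \<i>)) * (\<Sum>s\<in>{1..m}. contour_integral (circlepath (c s) (r s)) (\<lambda>p. f p / (p - z)))"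

definition fill_circles :: "(nat \<Rightarrow> complex) \<Rightarrow> (nat \<Rightarrow> real) \<Rightarrow> nat \<Rightarrow> (complex \<Rightarrow> complex) \<Rightarrow> complex \<Rightarrow> complex" where
  "fill_circles c r m g z =
     (if z \<in> circles c r m then Lim (at z within - circles c r m) g else g z)"

text \<open>f_+ : equals the paper's Cauchy integral on D^int; on D^ext it is its holomorphic
  continuation f - f_- (jump relation), which is the germ of f_+ near the circles
  (and the global continuation whenever f is holomorphic on D^ext).\<close>
definition plus_part :: "(nat \<Rightarrow> complex) \<Rightarrow> (nat \<Rightarrow> real) \<Rightarrow> nat \<Rightarrow> (complex \<Rightarrow> complex) \<Rightarrow> complex \<Rightarrow> complex" where
  "plus_part c r m f = fill_circles c r m
     (\<lambda>z. cauchy_sum c r m f z + (if z \<in> Dext c r m then f z else 0))"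

text \<open>f_- : equals the paper's -(Cauchy integral) on D^ext; on D^int it is f - f_+.\<close>
definition minus_part :: "(nat \<Rightarrow> complex) \<Rightarrow> (nat \<Rightarrow> real) \<Rightarrow> nat \<Rightarrow> (complex \<Rightarrow> complex) \<Rightarrow> complex \<Rightarrow> complex" where
  "minus_part c r m f = fill_circles c r m
     (\<lambda>z. - cauchy_sum c r m f z + (if z \<in> Dint c r m then f z else 0))"

text \<open>Membership of (a, ah) in M, with the poles phi j of ah made explicit.\<close>
definition inM :: "(nat \<Rightarrow> complex) \<Rightarrow> (nat \<Rightarrow> real) \<Rightarrow> nat \<Rightarrow> (nat \<Rightarrow> nat) \<Rightarrow> (nat \<Rightarrow> int) \<Rightarrow>
    (complex \<Rightarrow> complex) \<Rightarrow> (complex \<Rightarrow> complex) \<Rightarrow> (nat \<Rightarrow> complex) \<Rightarrow> bool" where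
  "inM c r m n d a ah phi \<longleftrightarrow>
     (\<exists>U. open U \<and> circles c r m \<subseteq> U \<and>
          a holomorphic_on (U \<union> Dext c r m) \<and>
          ah holomorphic_on ((U \<union> Dint c r m) - phi ` {1..m})) \<and>
     (\<exists>C. eventually (\<lambda>z. norm (a z - z ^ n 0) \<le> C * norm z powr (real (n 0) - 2)) at_infinity) \<and>
     (\<forall>j\<in>{1..m}. phi j \<in> ball (c j) (r j)) \<and>
     (\<forall>j\<in>{1..m}. \<exists>L. L \<noteq> 0 \<and> ((\<lambda>z. (z - phi j) ^ n j * ah z) \<longlongrightarrow> L) (at (phi j))) \<and>
     (\<forall>j\<in>{1..m}. \<exists>w V. open V \<and> sphere (c j) (r j) \<subseteq> V \<and> w holomorphic_on V \<and>
          (\<forall>z\<in>V. deriv w z \<noteq> 0 \<and> w z \<noteq> 0 \<and> a z - ah z = w z powi d j) \<and>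
          winding_number (w \<circ> circlepath (c j) (r j)) 0 = 1)"

definition eta :: "(nat \<Rightarrow> complex) \<Rightarrow> (nat \<Rightarrow> real) \<Rightarrow> nat \<Rightarrow>
    (complex \<Rightarrow> complex) \<Rightarrow> (complex \<Rightarrow> complex) \<Rightarrow>
    (complex \<Rightarrow> complex) \<times> (complex \<Rightarrow> complex) \<Rightarrow> (complex \<Rightarrow> complex) \<times> (complex \<Rightarrow> complex)" where
  "eta c r m a ah om =
     (let w = fst om; wh = snd om;
          s = (\<lambda>z. w z + wh z);
          t = (\<lambda>z. w z * deriv a z + wh z * deriv ah z)
      in (\<lambda>z. deriv a z * minus_part c r m s z - minus_part c r m t z,
          \<lambda>z. - deriv ah z * plus_part c r m s z + plus_part c r m t z))"

definition prodH :: "(nat \<Rightarrow> complex) \<Rightarrow> (nat \<Rightarrow> real) \<Rightarrow> nat \<Rightarrow>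
    (complex \<Rightarrow> complex) \<Rightarrow> (complex \<Rightarrow> complex) \<Rightarrow>
    (complex \<Rightarrow> complex) \<times> (complex \<Rightarrow> complex) \<Rightarrow>
    (complex \<Rightarrow> complex) \<times> (complex \<Rightarrow> complex) \<Rightarrow> (complex \<Rightarrow> complex) \<times> (complex \<Rightarrow> complex)" where
  "prodH c r m a ah X Y =
     (let w1 = fst X; wh1 = snd X; w2 = fst Y; wh2 = snd Y;
          P = plus_part c r m; N = minus_part c r m;
          w1a = (\<lambda>z. w1 z * deriv a z); w2a = (\<lambda>z. w2 z * deriv a z);
          wh1a = (\<lambda>z. wh1 z * deriv ah z); wh2a = (\<lambda>z. wh2 z * deriv ah z)
      in (\<lambda>z. w2 z * P w1a z - w1 z * N w2a z - w2 z * N wh1a z - w1 z * N wh2a z,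
          \<lambda>z. wh2 z * P wh1a z - wh1 z * N wh2a z + wh1 z * P w2a z + wh2 z * P w1a z))"

definition residue_inf :: "(complex \<Rightarrow> complex) \<Rightarrow> complex" where
  "residue_inf F = - residue (\<lambda>w. F (1 / w) / w ^ 2) 0"

definition metric_eta :: "(nat \<Rightarrow> complex) \<Rightarrow> (nat \<Rightarrow> real) \<Rightarrow> nat \<Rightarrow>
    (complex \<Rightarrow> complex) \<Rightarrow> (complex \<Rightarrow> complex) \<Rightarrow> (nat \<Rightarrow> complex) \<Rightarrow>
    (complex \<Rightarrow> complex) \<times> (complex \<Rightarrow> complex) \<Rightarrow>
    (complex \<Rightarrow> complex) \<times> (complex \<Rightarrow> complex) \<Rightarrow> complex" where
  "metric_eta c r m a ah phi X1 X2 =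
     (let zeta = (\<lambda>z. a z - ah z);
          dz1 = (\<lambda>z. fst X1 z - snd X1 z); dz2 = (\<lambda>z. fst X2 z - snd X2 z);
          ell = (\<lambda>z. plus_part c r m a z + minus_part c r m ah z);
          dl1 = (\<lambda>z. plus_part c r m (fst X1) z + minus_part c r m (snd X1) z);
          dl2 = (\<lambda>z. plus_part c r m (fst X2) z + minus_part c r m (snd X2) z);
          F = (\<lambda>z. dl1 z * dl2 z / deriv ell z)
      in - (1 / (2 * pi * \<i>)) *
           (\<Sum>j\<in>{1..m}. contour_integral (circlepath (c j) (r j))
                             (\<lambda>z. dz1 z * dz2 z / deriv zeta z))
         - (residue_inf F + (\<Sum>j\<in>{1..m}. residue F (phi j))))"

end

theory Submission
  imports Defs
begin

locale disks =
  fixes c :: "nat \<Rightarrow> complex" and r :: "nat \<Rightarrow> real" and m :: nat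
  assumes rpos: "\<And>j. j \<in> {1..m} \<Longrightarrow> r j > 0"
    and disj: "\<And>i j. i \<in> {1..m} \<Longrightarrow> j \<in> {1..m} \<Longrightarrow> i \<noteq> j \<Longrightarrow> cball (c i) (r i) \<inter> cball (c j) (r j) = {}"
begin

abbreviation "S \<equiv> circles c r m"
abbreviation "DI \<equiv> Dint c r m"
abbreviation "DE \<equiv> Dext c r m"

lemma in_S: "z \<in> S \<longleftrightarrow> (\<exists>j\<in>{1..m}. dist (c j) z = r j)"
  by (auto simp: circles_def)
lemma in_DI: "z \<in> DI \<longleftrightarrow> (\<exists>j\<in>{1..m}. dist (c j) z < r j)"
  by (auto simp: Dint_def)
lemma in_DE: "z \<in> DE \<longleftrightarrow> (\<forall>j\<in>{1..m}. dist (c j) z > r j)"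
  by (auto simp: Dext_def not_le)

lemma rpos': "1 \<le> j \<Longrightarrow> j \<le> m \<Longrightarrow> 0 < r j"
  using rpos by auto

lemma nr_nonneg: "j \<in> {1..m} \<Longrightarrow> 0 \<le> norm (c j) + r j"
  using rpos[of j] by (simp add: add_nonneg_nonneg less_imp_le)

lemma compact_S: "compact S"
  unfolding circles_def by (intro compact_UN) auto

lemma closed_S: "closed S" using compact_S compact_imp_closed by blast

lemma open_DI: "open DI" unfolding Dint_def by auto

lemma open_DE: "open DE" unfolding Dext_def
  by (intro open_Compl closed_UN) auto

lemma open_nS: "open (- S)" using closed_S by auto

lemma S_DI: "z \<in> S \<Longrightarrow> z \<notin> DI"
proof
  assume "z \<in> S" "z \<in> DI"
  then obtain i j where ij: "i\<in>{1..m}" "j\<in>{1..m}" "dist (c i) z = r i" "dist (c j) z < r j"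
    by (auto simp: in_S in_DI)
  show False
  proof (cases "i = j")
    case True then show ?thesis using ij by auto
  next
    case False then have "z \<notin> cball (c i) (r i) \<inter> cball (c j) (r j)" using disj ij by auto
    then show ?thesis using ij by auto
  qed
qed

lemma S_DE: "z \<in> S \<Longrightarrow> z \<notin> DE"
  unfolding in_S in_DE by force

lemma DI_DE: "z \<in> DI \<Longrightarrow> z \<notin> DE"
  unfolding in_DI in_DE by force

lemma cover: "z \<in> S \<or> z \<in> DI \<or> z \<in> DE"
  unfolding in_S in_DI in_DE by (meson not_less_iff_gr_or_eq)

lemma nS_eq: "- S = DI \<union> DE"
  using cover S_DI S_DE by blast

lemma sphere_sub_S: "j \<in> {1..m} \<Longrightarrow> sphere (c j) (r j) \<subseteq> S"
  by (auto simp: circles_def)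

lemma ball_sub_DI: "j \<in> {1..m} \<Longrightarrow> ball (c j) (r j) \<subseteq> DI"
  by (auto simp: Dint_def)

definition R0 :: real where "R0 = 1 + (\<Sum>j\<in>{1..m}. norm (c j) + r j)"

lemma R0_pos: "R0 \<ge> 1"
proof -
  have "(\<Sum>j\<in>{1..m}. norm (c j) + r j) \<ge> 0"
    by (intro sum_nonneg) (use nr_nonneg in auto)
  then show ?thesis by (simp add: R0_def)
qed

lemma cball_R0: assumes "j \<in> {1..m}" "dist (c j) z \<le> r j" shows "norm z < R0"
proof -
  have "norm (c j) + r j \<le> (\<Sum>j\<in>{1..m}. norm (c j) + r j)"
    using assms by (intro member_le_sum) (use nr_nonneg in auto)
  moreover have "norm z \<le> norm (c j) + dist (c j) z"
    by (metis dist_commute dist_norm norm_triangle_sub add.commute)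
  ultimately show ?thesis using assms unfolding R0_def by linarith
qed

lemma S_R0: "z \<in> S \<Longrightarrow> norm z < R0"
  using cball_R0 by (auto simp: in_S)

lemma DI_R0: "z \<in> DI \<Longrightarrow> norm z < R0"
  using cball_R0 by (force simp: in_DI)

lemma far_DE: "norm z \<ge> R0 \<Longrightarrow> z \<in> DE"
  unfolding in_DE using cball_R0 by (meson not_less not_le)

end

definition cint :: "complex \<Rightarrow> real \<Rightarrow> (complex \<Rightarrow> complex) \<Rightarrow> complex \<Rightarrow> complex" where
  "cint a \<rho> h z = contour_integral (circlepath a \<rho>) (\<lambda>p. h p / (p - z))"

lemma norm_vd_circlepath: "norm (vector_derivative (circlepath a \<rho>) (at t)) = 2 * pi * \<bar>\<rho>\<bar>"
  by (simp add: vector_derivative_circlepath norm_mult)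

lemma contint_circ:
  assumes "continuous_on (sphere a \<rho>) f" "\<rho> > 0"
  shows "f contour_integrable_on (circlepath a \<rho>)"
  using assms by (intro contour_integrable_continuous_circlepath) simp

lemma cont_div_sphere:
  fixes h :: "complex \<Rightarrow> complex"
  assumes "continuous_on (sphere a \<rho>) h" "z \<notin> sphere a \<rho>"
  shows "continuous_on (sphere a \<rho>) (\<lambda>p. h p / (p - z) ^ k)"
proof (rule continuous_on_divide)
  show "continuous_on (sphere a \<rho>) h" by fact
qed (use assms in \<open>auto intro!: continuous_intros\<close>)

lemma cint_deriv:
  assumes h: "continuous_on (sphere a \<rho>) h" and \<rho>: "\<rho> > 0" and z: "z \<notin> sphere a \<rho>"
  shows "(cint a \<rho> h has_field_derivative
           contour_integral (circlepath a \<rho>) (\<lambda>p. h p / (p - z) ^ 2)) (at z)"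
proof -
  have int: "((\<lambda>u. h u / (u - w) ^ 1) has_contour_integral cint a \<rho> h w) (circlepath a \<rho>)"
    if "w \<in> - sphere a \<rho> - path_image (circlepath a \<rho>)" for w
  proof -
    have "(\<lambda>u. h u / (u - w)) contour_integrable_on (circlepath a \<rho>)"
      using cont_div_sphere[OF h, of w 1] that \<rho> by (intro contint_circ) auto
    then show ?thesis unfolding cint_def by (simp add: has_contour_integral_integral)
  qed
  have "(cint a \<rho> h has_field_derivative
          (of_nat 1 * contour_integral (circlepath a \<rho>) ((\<lambda>k w u. h u / (u - w) ^ k) (Suc 1) z))) (at z)"
    by (rule Cauchy_next_derivative(2)[where S = "- sphere a \<rho>" and B = "2 * pi * \<bar>\<rho>\<bar>"])
       (use h \<rho> z int in \<open>auto simp: norm_vd_circlepath\<close>)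
  then show ?thesis by (simp add: numeral_2_eq_2)
qed

lemma cint_holo:
  assumes "continuous_on (sphere a \<rho>) h" "\<rho> > 0"
  shows "cint a \<rho> h holomorphic_on (- sphere a \<rho>)"
proof -
  have "\<exists>f'. (cint a \<rho> h has_field_derivative f') (at x)" if "x \<in> - sphere a \<rho>" for x
    using cint_deriv[OF assms, of x] that by blast
  then show ?thesis by (subst holomorphic_on_open) auto
qed

lemma circ_bound:
  assumes "continuous_on (sphere a \<rho>) f" "\<rho> > 0" "B \<ge> 0" "\<And>p. p \<in> sphere a \<rho> \<Longrightarrow> norm (f p) \<le> B"
  shows "norm (contour_integral (circlepath a \<rho>) f) \<le> B * (2 * pi * \<rho>)"
proof -
  have "(f has_contour_integral contour_integral (circlepath a \<rho>) f) (circlepath a \<rho>)"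
    using contint_circ[OF assms(1,2)] by (simp add: has_contour_integral_integral)
  then show ?thesis
    by (rule has_contour_integral_bound_circlepath) (use assms in \<open>auto simp: dist_norm norm_minus_commute\<close>)
qed

lemma cint_bound_k:
  assumes h: "continuous_on (sphere a \<rho>) h" and "\<rho> > 0" "M \<ge> 0" "d > 0"
    and M: "\<And>p. p \<in> sphere a \<rho> \<Longrightarrow> norm (h p) \<le> M"
    and d: "\<And>p. p \<in> sphere a \<rho> \<Longrightarrow> norm (p - z) \<ge> d"
  shows "norm (contour_integral (circlepath a \<rho>) (\<lambda>p. h p / (p - z) ^ k)) \<le> M / d ^ k * (2 * pi * \<rho>)"
proof (rule circ_bound)
  have "z \<notin> sphere a \<rho>" using d[of z] \<open>d > 0\<close> by force
  then show "continuous_on (sphere a \<rho>) (\<lambda>p. h p / (p - z) ^ k)" using cont_div_sphere[OF h] by auto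
  show "norm (h p / (p - z) ^ k) \<le> M / d ^ k" if "p \<in> sphere a \<rho>" for p
  proof -
    have "d ^ k \<le> norm (p - z) ^ k" using d[OF that] \<open>d > 0\<close> by (intro power_mono) auto
    then show ?thesis using M[OF that] \<open>d > 0\<close> \<open>M \<ge> 0\<close>
      by (auto simp: norm_divide norm_power intro!: frac_le)
  qed
qed (use assms in auto)

lemma cint_bound:
  assumes "continuous_on (sphere a \<rho>) h" "\<rho> > 0" "M \<ge> 0" "d > 0"
    "\<And>p. p \<in> sphere a \<rho> \<Longrightarrow> norm (h p) \<le> M"
    "\<And>p. p \<in> sphere a \<rho> \<Longrightarrow> norm (p - z) \<ge> d"
  shows "norm (cint a \<rho> h z) \<le> M / d * (2 * pi * \<rho>)"
  using cint_bound_k[OF assms, of 1] by (simp add: cint_def)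

lemma winding_circ_in: "dist a z < \<rho> \<Longrightarrow> winding_number (circlepath a \<rho>) z = 1"
  by (rule winding_number_circlepath) (simp add: dist_norm norm_minus_commute)

lemma winding_circ_out:
  assumes "dist a z > \<rho>" "\<rho> \<ge> 0"
  shows "winding_number (circlepath a \<rho>) z = 0"
  by (rule winding_number_zero_outside[where s = "cball a \<rho>"]) (use assms in auto)

lemma contour_integral_inv_circ:
  assumes "dist a z \<noteq> \<rho>" "\<rho> > 0"
  shows "contour_integral (circlepath a \<rho>) (\<lambda>p. 1 / (p - z)) = (if dist a z < \<rho> then 2 * pi * \<i> else 0)"
proof -
  have "z \<notin> path_image (circlepath a \<rho>)" using assms by auto
  then have "contour_integral (circlepath a \<rho>) (\<lambda>p. 1 / (p - z)) = 2 * pi * \<i> * winding_number (circlepath a \<rho>) z"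
    by (simp add: winding_number_valid_path)
  then show ?thesis using assms winding_circ_in winding_circ_out by auto
qed

lemma annulus_identity:
  assumes holo: "h holomorphic_on U" and U: "open U"
    and r12: "0 < \<rho>1" "\<rho>1 < \<rho>2"
    and ann: "{p. \<rho>1 \<le> dist a p \<and> dist a p \<le> \<rho>2} \<subseteq> U"
    and z: "z \<in> U" "dist a z < \<rho>2" "dist a z \<noteq> \<rho>1"
  shows "cint a \<rho>1 h z + (if dist a z > \<rho>1 then 2 * pi * \<i> * h z else 0) = cint a \<rho>2 h z"
proof -
  define g where "g = (\<lambda>p. if p = z then deriv h z else (h p - h z) / (p - z))"
  have gh: "g holomorphic_on U" unfolding g_def
    by (rule pole_lemma[OF holo]) (use U z in \<open>simp add: interior_open\<close>)
  have hom: "homotopic_loops U (circlepath a \<rho>1) (circlepath a \<rho>2)"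
  proof (rule homotopic_loops_linear)
    fix t :: real assume t: "t \<in> {0..1}"
    define e where "e = exp (2 * of_real pi * \<i> * of_real t)"
    have ne: "norm e = 1" unfolding e_def by simp
    show "closed_segment (circlepath a \<rho>1 t) (circlepath a \<rho>2 t) \<subseteq> U"
    proof
      fix x assume "x \<in> closed_segment (circlepath a \<rho>1 t) (circlepath a \<rho>2 t)"
      then obtain u where u: "0 \<le> u" "u \<le> 1" "x = (1 - u) *\<^sub>R (a + \<rho>1 * e) + u *\<^sub>R (a + \<rho>2 * e)"
        by (auto simp: closed_segment_def circlepath e_def)
      then have xa: "x - a = of_real ((1 - u) * \<rho>1 + u * \<rho>2) * e"
        by (simp add: scaleR_conv_of_real algebra_simps)
      have "dist a x = norm (x - a)" by (simp add: dist_norm norm_minus_commute)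
      also have "\<dots> = \<bar>(1 - u) * \<rho>1 + u * \<rho>2\<bar>" using xa ne by (simp only: norm_mult norm_of_real mult_1_right)
      also have "\<dots> = (1 - u) * \<rho>1 + u * \<rho>2" using u r12
        by (intro abs_of_nonneg add_nonneg_nonneg mult_nonneg_nonneg) auto
      finally have "dist a x = (1 - u) * \<rho>1 + u * \<rho>2" .
      moreover have "(1 - u) * \<rho>1 + u * \<rho>2 \<ge> \<rho>1" "(1 - u) * \<rho>1 + u * \<rho>2 \<le> \<rho>2"
      proof -
        have A: "0 \<le> u * (\<rho>2 - \<rho>1)" "0 \<le> (1 - u) * (\<rho>2 - \<rho>1)" using u r12 by auto
        have e1: "(1 - u) * \<rho>1 + u * \<rho>2 = \<rho>1 + u * (\<rho>2 - \<rho>1)"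
          and e2: "(1 - u) * \<rho>1 + u * \<rho>2 = \<rho>2 - (1 - u) * (\<rho>2 - \<rho>1)" by (simp_all add: algebra_simps)
        show "(1 - u) * \<rho>1 + u * \<rho>2 \<ge> \<rho>1" using A e1 by linarith
        show "(1 - u) * \<rho>1 + u * \<rho>2 \<le> \<rho>2" using A e2 by linarith
      qed
      ultimately show "x \<in> U" using ann by auto
    qed
  qed auto
  have eqI: "contour_integral (circlepath a \<rho>1) g = contour_integral (circlepath a \<rho>2) g"
    by (rule Cauchy_theorem_homotopic_loops[OF hom U gh]) auto
  have hcont: "continuous_on (sphere a \<rho>) h" if "\<rho> \<in> {\<rho>1, \<rho>2}" for \<rho>
    using that ann holomorphic_on_imp_continuous_on[OF holo] r12
    by (elim continuous_on_subset) auto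
  have split: "contour_integral (circlepath a \<rho>) g = cint a \<rho> h z - h z * contour_integral (circlepath a \<rho>) (\<lambda>p. 1 / (p - z))"
    if "\<rho> \<in> {\<rho>1, \<rho>2}" "dist a z \<noteq> \<rho>" for \<rho>
  proof -
    have rp: "\<rho> > 0" using that r12 by auto
    have zs: "z \<notin> sphere a \<rho>" using that by auto
    have "contour_integral (circlepath a \<rho>) g = contour_integral (circlepath a \<rho>) (\<lambda>p. h p / (p - z) - h z * (1 / (p - z)))"
      by (rule contour_integral_eq) (use rp zs in \<open>auto simp: g_def diff_divide_distrib\<close>)
    also have "\<dots> = cint a \<rho> h z - contour_integral (circlepath a \<rho>) (\<lambda>p. h z * (1 / (p - z)))"
      unfolding cint_def
      by (rule contour_integral_diff; rule contint_circ)
         (use rp zs hcont[OF that(1)] in \<open>auto intro!: continuous_intros\<close>)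
    also have "contour_integral (circlepath a \<rho>) (\<lambda>p. h z * (1 / (p - z))) = h z * contour_integral (circlepath a \<rho>) (\<lambda>p. 1 / (p - z))"
      by (rule contour_integral_lmul; rule contint_circ) (use rp zs in \<open>auto intro!: continuous_intros\<close>)
    finally show ?thesis .
  qed
  have z2: "dist a z \<noteq> \<rho>2" using z by auto
  show ?thesis
    using eqI split[of \<rho>1] split[of \<rho>2] z z2 r12
      contour_integral_inv_circ[of a z \<rho>1] contour_integral_inv_circ[of a z \<rho>2]
    by (auto simp: algebra_simps split: if_splits)
qed

lemma finite_pos_min:
  fixes f :: "'a \<Rightarrow> real"
  assumes "finite A" "\<And>a. a \<in> A \<Longrightarrow> f a > 0"
  shows "\<exists>e>0. \<forall>a\<in>A. e \<le> f a"
proof -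
  define e where "e = Min (insert 1 (f ` A))"
  have "e > 0" unfolding e_def using assms by (subst Min_gr_iff) auto
  moreover have "\<forall>a\<in>A. e \<le> f a" unfolding e_def using assms by (auto intro: Min_le)
  ultimately show ?thesis by blast
qed

context disks begin

lemma centers_far:
  assumes "i \<in> {1..m}" "j \<in> {1..m}" "i \<noteq> j"
  shows "dist (c i) (c j) > r i + r j"
proof (rule ccontr)
  assume "\<not> ?thesis"
  then have d: "dist (c i) (c j) \<le> r i + r j" by simp
  have ri: "r i > 0" and rj: "r j > 0" using rpos assms by auto
  define t where "t = r i / (r i + r j)"
  define p where "p = c i + of_real t * (c j - c i)"
  have t01: "0 \<le> t" "t \<le> 1" using ri rj by (auto simp: t_def)
  have "dist (c i) p = t * dist (c i) (c j)"
    using t01 by (simp add: p_def dist_norm norm_mult norm_minus_commute)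
  also have "\<dots> \<le> t * (r i + r j)" using d t01 by (intro mult_left_mono) auto
  also have "\<dots> = r i" using ri rj by (simp add: t_def)
  finally have p1: "p \<in> cball (c i) (r i)" by simp
  have eq: "c j - p = of_real (1 - t) * (c j - c i)" by (simp add: p_def algebra_simps)
  have "dist (c j) p = norm (of_real (1 - t) * (c j - c i))" by (simp only: dist_norm eq)
  also have "\<dots> = (1 - t) * dist (c i) (c j)"
    by (simp only: norm_mult norm_of_real) (simp add: t01 dist_norm norm_minus_commute)
  finally have "dist (c j) p = (1 - t) * dist (c i) (c j)" .
  also have "\<dots> \<le> (1 - t) * (r i + r j)" using d t01 by (intro mult_left_mono) auto
  also have "\<dots> = r j" using ri rj by (simp add: t_def field_simps)
  finally have p2: "p \<in> cball (c j) (r j)" by simp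
  show False using disj[OF assms] p1 p2 by blast
qed

lemma delta_exists:
  assumes U: "open U" "S \<subseteq> U"
  obtains \<delta> where "\<delta> > 0" "\<And>j. j \<in> {1..m} \<Longrightarrow> 2 * \<delta> < r j"
    "\<And>j z. j \<in> {1..m} \<Longrightarrow> r j - 2 * \<delta> \<le> dist (c j) z \<Longrightarrow> dist (c j) z \<le> r j + 2 * \<delta> \<Longrightarrow> z \<in> U"
    "\<And>i j z. i \<in> {1..m} \<Longrightarrow> j \<in> {1..m} \<Longrightarrow> i \<noteq> j \<Longrightarrow> dist (c j) z \<le> r j + 2 * \<delta> \<Longrightarrow> dist (c i) z > r i + 2 * \<delta>"
proof -
  obtain \<epsilon> where \<epsilon>: "\<epsilon> > 0" "(\<Union>x\<in>S. ball x \<epsilon>) \<subseteq> U"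
    using compact_subset_open_imp_ball_epsilon_subset[OF compact_S U] by blast
  obtain e1 where e1: "e1 > 0" "\<forall>a\<in>{1..m}. e1 \<le> r a"
    using finite_pos_min[of "{1..m}" r] rpos by auto
  have "\<exists>e>0. \<forall>a\<in>{1..m}\<times>{1..m}. e \<le> (if fst a = snd a then 1 else dist (c (fst a)) (c (snd a)) - r (fst a) - r (snd a))"
  proof (rule finite_pos_min)
    fix a assume a: "a \<in> {1..m}\<times>{1..m}"
    show "0 < (if fst a = snd a then 1 else dist (c (fst a)) (c (snd a)) - r (fst a) - r (snd a))"
    proof (cases "fst a = snd a")
      case False
      then have "dist (c (fst a)) (c (snd a)) > r (fst a) + r (snd a)"
        using a by (intro centers_far) auto
      then show ?thesis using False by simp
    qed simp
  qed simp
  then obtain e2 where e2: "e2 > 0" "\<forall>a\<in>{1..m}\<times>{1..m}. e2 \<le> (if fst a = snd a then 1 else dist (c (fst a)) (c (snd a)) - r (fst a) - r (snd a))"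
    by blast
  define \<delta> where "\<delta> = min (\<epsilon> / 4) (min (e1 / 4) (e2 / 8))"
  have \<delta>: "\<delta> > 0" "\<delta> \<le> \<epsilon> / 4" "\<delta> \<le> e1 / 4" "\<delta> \<le> e2 / 8"
    using \<epsilon> e1 e2 by (auto simp: \<delta>_def)
  show ?thesis
  proof
    show "0 < \<delta>" by fact
    show "2 * \<delta> < r j" if "j \<in> {1..m}" for j using e1 that \<delta> by force
    show "z \<in> U" if j: "j \<in> {1..m}" and z: "r j - 2 * \<delta> \<le> dist (c j) z" "dist (c j) z \<le> r j + 2 * \<delta>" for j z
    proof -
      have rj: "r j \<ge> e1" using e1 j by auto
      define d where "d = dist (c j) z"
      have dpos: "d > 0" using z(1) rj \<delta>(1) \<delta>(3) unfolding d_def by linarith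
      define x where "x = c j + of_real (r j / d) * (z - c j)"
      have "dist (c j) x = r j / d * d"
        using dpos rj e1 by (simp add: x_def dist_norm norm_mult norm_divide d_def norm_minus_commute)
      then have xS: "x \<in> S" using dpos j unfolding in_S by auto
      have eq: "z - x = of_real (1 - r j / d) * (z - c j)" by (simp add: x_def algebra_simps)
      have "dist x z = norm (of_real (1 - r j / d) * (z - c j))"
        by (simp only: dist_norm norm_minus_commute[of x] eq)
      also have "\<dots> = \<bar>1 - r j / d\<bar> * d"
        by (simp only: norm_mult norm_of_real) (simp add: d_def dist_norm norm_minus_commute)
      finally have "dist x z = \<bar>1 - r j / d\<bar> * d" .
      also have "\<dots> = \<bar>d - r j\<bar>" using dpos by (simp add: abs_mult_pos' field_simps abs_minus_commute)
      also have "\<dots> < \<epsilon>" using z \<delta> unfolding d_def by auto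
      finally have "z \<in> ball x \<epsilon>" by simp
      then show "z \<in> U" using xS \<epsilon>(2) by blast
    qed
    show "dist (c i) z > r i + 2 * \<delta>"
      if ij: "i \<in> {1..m}" "j \<in> {1..m}" "i \<noteq> j" and z: "dist (c j) z \<le> r j + 2 * \<delta>" for i j z
    proof -
      have "(i, j) \<in> {1..m}\<times>{1..m}" using ij by simp
      from bspec[OF e2(2) this] have "e2 \<le> dist (c i) (c j) - r i - r j" using ij(3) by simp
      moreover have "dist (c i) (c j) \<le> dist (c i) z + dist (c j) z" by (metis dist_commute dist_triangle)
      ultimately show ?thesis using z \<delta> by linarith
    qed
  qed
qed

lemma S_limpt:
  assumes "z \<in> S" shows "z islimpt (- S)"
proof -
  obtain j where j: "j \<in> {1..m}" "dist (c j) z = r j" using assms by (auto simp: in_S)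
  have rj: "r j > 0" using rpos j by auto
  show ?thesis unfolding islimpt_approachable
  proof (intro allI impI)
    fix e :: real assume e: "e > 0"
    define \<tau> where "\<tau> = min (e / 2) (r j / 2)"
    have \<tau>: "\<tau> > 0" "\<tau> < e" "\<tau> < r j" using e rj by (auto simp: \<tau>_def)
    define y where "y = z - of_real (\<tau> / r j) * (z - c j)"
    have eq: "y - c j = of_real (1 - \<tau> / r j) * (z - c j)" by (simp add: y_def algebra_simps)
    have "dist (c j) y = norm (of_real (1 - \<tau> / r j) * (z - c j))"
      by (simp only: dist_norm norm_minus_commute[of "c j"] eq)
    also have "\<dots> = (1 - \<tau> / r j) * r j"
      by (simp only: norm_mult norm_of_real) (use \<tau> j rj in \<open>simp add: dist_norm norm_minus_commute\<close>)
    finally have "dist (c j) y = (1 - \<tau> / r j) * r j" .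
    also have "\<dots> = r j - \<tau>" using rj by (simp add: field_simps)
    finally have "y \<in> DI" using \<tau> j unfolding in_DI by force
    then have "y \<in> - S" using S_DI by blast
    moreover have "dist y z = \<tau>"
      using \<tau> j rj by (simp add: y_def dist_norm norm_mult norm_divide norm_minus_commute)
    ultimately show "\<exists>x'\<in>- S. x' \<noteq> z \<and> dist x' z < e" using \<tau> by (intro bexI[of _ y]) auto
  qed
qed

lemma fill_eq:
  assumes V: "open V" and H: "continuous_on V H" and g: "\<And>x. x \<in> V - S \<Longrightarrow> g x = H x" and z: "z \<in> V"
  shows "fill_circles c r m g z = H z"
proof (cases "z \<in> S")
  case False then show ?thesis using g z by (simp add: fill_circles_def)
next
  case True
  have nt: "\<not> trivial_limit (at z within - S)"
    using S_limpt[OF True] by (simp add: trivial_limit_within)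
  have "(H \<longlongrightarrow> H z) (at z within - S)"
    using H V z by (meson continuous_on_eq_continuous_at continuous_at_imp_continuous_at_within continuous_within)
  moreover have "eventually (\<lambda>x. H x = g x) (at z within - S)"
    unfolding eventually_at_topological using V z g by (intro exI[of _ V]) auto
  ultimately have "(g \<longlongrightarrow> H z) (at z within - S)" by (rule Lim_transform_eventually)
  then show ?thesis using True nt by (simp add: fill_circles_def tendsto_Lim)
qed

end

definition decay :: "nat \<Rightarrow> (complex \<Rightarrow> complex) \<Rightarrow> bool" where
  "decay k f \<longleftrightarrow> (\<exists>C. eventually (\<lambda>z. norm (f z) \<le> C / norm z ^ k) at_infinity)"

lemma ev_norm_ge: "eventually (\<lambda>z::complex. norm z \<ge> R) at_infinity"
  by (simp add: eventually_at_infinity) (meson order_refl)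

lemma norm_at_top: "filterlim (\<lambda>z::complex. norm z) at_top at_infinity"
  using filterlim_at_infinity_imp_norm_at_top[OF filterlim_ident] by simp

lemma decay_tendsto:
  assumes "decay k f" "k \<ge> 1" shows "(f \<longlongrightarrow> 0) at_infinity"
proof -
  obtain C where C: "eventually (\<lambda>z. norm (f z) \<le> C / norm z ^ k) at_infinity"
    using assms by (auto simp: decay_def)
  have "filterlim (\<lambda>z::complex. norm z ^ k) at_top at_infinity"
    using assms(2) by (intro filterlim_pow_at_top norm_at_top) auto
  then have "((\<lambda>z::complex. C / norm z ^ k) \<longlongrightarrow> 0) at_infinity"
    by (intro tendsto_divide_0[OF tendsto_const] filterlim_at_top_imp_at_infinity)
  then show ?thesis by (rule Lim_null_comparison[OF C])
qed

lemma decay_mult: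
  assumes "decay j f" "decay k g" shows "decay (j + k) (\<lambda>z. f z * g z)"
proof -
  obtain C where C: "eventually (\<lambda>z. norm (f z) \<le> C / norm z ^ j) at_infinity"
    using assms by (auto simp: decay_def)
  obtain D where D: "eventually (\<lambda>z. norm (g z) \<le> D / norm z ^ k) at_infinity"
    using assms by (auto simp: decay_def)
  have "eventually (\<lambda>z. norm (f z * g z) \<le> (C * D) / norm z ^ (j + k)) at_infinity"
    using C D ev_norm_ge[of 1]
  proof eventually_elim
    case (elim z)
    have "norm (f z * g z) = norm (f z) * norm (g z)" by (simp add: norm_mult)
    also have "\<dots> \<le> (C / norm z ^ j) * (D / norm z ^ k)"
      using elim by (intro mult_mono) (auto intro: order_trans[OF norm_ge_zero])
    also have "\<dots> = (C * D) / norm z ^ (j + k)" by (simp add: power_add)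
    finally show ?case .
  qed
  then show ?thesis by (auto simp: decay_def)
qed

lemma decay_bounded_mult:
  assumes "decay k f" "eventually (\<lambda>z. norm (g z) \<le> B) at_infinity"
  shows "decay k (\<lambda>z. g z * f z)"
proof -
  obtain C where C: "eventually (\<lambda>z. norm (f z) \<le> C / norm z ^ k) at_infinity"
    using assms by (auto simp: decay_def)
  have "eventually (\<lambda>z. norm (g z * f z) \<le> (B * C) / norm z ^ k) at_infinity"
    using C assms(2) ev_norm_ge[of 1]
  proof eventually_elim
    case (elim z)
    have "norm (g z * f z) = norm (g z) * norm (f z)" by (simp add: norm_mult)
    also have "\<dots> \<le> B * (C / norm z ^ k)"
      using elim by (intro mult_mono) (auto intro: order_trans[OF norm_ge_zero])
    finally show ?case by simp
  qed
  then show ?thesis by (auto simp: decay_def)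
qed

lemma decay_add:
  assumes "decay k f" "decay k g" shows "decay k (\<lambda>z. f z + g z)"
proof -
  obtain C where C: "eventually (\<lambda>z. norm (f z) \<le> C / norm z ^ k) at_infinity"
    using assms by (auto simp: decay_def)
  obtain D where D: "eventually (\<lambda>z. norm (g z) \<le> D / norm z ^ k) at_infinity"
    using assms by (auto simp: decay_def)
  have "eventually (\<lambda>z. norm (f z + g z) \<le> (C + D) / norm z ^ k) at_infinity"
    using C D
  proof eventually_elim
    case (elim z)
    have "norm (f z + g z) \<le> norm (f z) + norm (g z)" by (rule norm_triangle_ineq)
    also have "\<dots> \<le> C / norm z ^ k + D / norm z ^ k" using elim by simp
    finally show ?case by (simp add: add_divide_distrib)
  qed
  then show ?thesis by (auto simp: decay_def)
qed

lemma decay_uminus: "decay k f \<Longrightarrow> decay k (\<lambda>z. - f z)"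
  by (simp add: decay_def)

lemma decay_cong:
  assumes "decay k f" "eventually (\<lambda>z. f z = g z) at_infinity" shows "decay k g"
proof -
  obtain C where C: "eventually (\<lambda>z. norm (f z) \<le> C / norm z ^ k) at_infinity"
    using assms by (auto simp: decay_def)
  have "eventually (\<lambda>z. norm (g z) \<le> C / norm z ^ k) at_infinity"
    using C assms(2) by eventually_elim auto
  then show ?thesis by (auto simp: decay_def)
qed

lemma decay_mono:
  assumes "decay (Suc k) f" shows "decay k f"
proof -
  obtain C where C: "eventually (\<lambda>z. norm (f z) \<le> C / norm z ^ Suc k) at_infinity"
    using assms by (auto simp: decay_def)
  have "eventually (\<lambda>z. norm (f z) \<le> \<bar>C\<bar> / norm z ^ k) at_infinity"
    using C ev_norm_ge[of 1]
  proof eventually_elim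
    case (elim z)
    have "C / norm z ^ Suc k \<le> \<bar>C\<bar> / norm z ^ Suc k" by (intro divide_right_mono) auto
    also have "\<dots> \<le> \<bar>C\<bar> / norm z ^ k"
    proof (rule divide_left_mono)
      show "norm z ^ k \<le> norm z ^ Suc k" using elim by (intro power_increasing) auto
      show "0 < norm z ^ Suc k * norm z ^ k" using elim by (intro mult_pos_pos zero_less_power) auto
    qed simp
    finally show ?case using elim by linarith
  qed
  then show ?thesis by (auto simp: decay_def)
qed

context disks begin


lemma cauchy_sum_eq:
  "cauchy_sum c r m h z = (1 / (2 * pi * \<i>)) * (\<Sum>s\<in>{1..m}. cint (c s) (r s) h z)"
  by (simp add: cauchy_sum_def cint_def)

lemma cauchy_sum_holo:
  assumes "continuous_on S h" shows "cauchy_sum c r m h holomorphic_on (- S)"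
proof -
  have "cint (c s) (r s) h holomorphic_on (- S)" if s: "s \<in> {1..m}" for s
  proof (rule holomorphic_on_subset[OF cint_holo])
    show "continuous_on (sphere (c s) (r s)) h"
      using assms sphere_sub_S[OF s] by (rule continuous_on_subset)
    show "0 < r s" using rpos s by auto
    show "- S \<subseteq> - sphere (c s) (r s)" using sphere_sub_S[OF s] by auto
  qed
  then show ?thesis unfolding cauchy_sum_eq by (intro holomorphic_intros) auto
qed

lemma S_bounded_fun:
  assumes "continuous_on S h" obtains M where "M \<ge> 0" "\<And>p. p \<in> S \<Longrightarrow> norm (h p) \<le> M"
proof -
  have "compact (h ` S)" using compact_continuous_image[OF assms compact_S] .
  then obtain B where "\<forall>x\<in>h ` S. norm x \<le> B" using compact_imp_bounded bounded_iff by metis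
  then show ?thesis using that[of "max B 0"] by force
qed

lemma cint_decay_k:
  assumes h: "continuous_on S h" and s: "s \<in> {1..m}"
  shows "decay k (\<lambda>z. contour_integral (circlepath (c s) (r s)) (\<lambda>p. h p / (p - z) ^ k))"
proof -
  obtain M where M: "M \<ge> 0" "\<And>p. p \<in> S \<Longrightarrow> norm (h p) \<le> M" using S_bounded_fun[OF h] by blast
  have rs: "r s > 0" using rpos s by auto
  have hs: "continuous_on (sphere (c s) (r s)) h" using h sphere_sub_S[OF s] by (rule continuous_on_subset)
  have "eventually (\<lambda>z. norm (contour_integral (circlepath (c s) (r s)) (\<lambda>p. h p / (p - z) ^ k))
          \<le> (M * 2 ^ k * (2 * pi * r s)) / norm z ^ k) at_infinity"
    using ev_norm_ge[of "2 * R0"]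
  proof eventually_elim
    case (elim z)
    have zpos: "norm z > 0" using elim R0_pos by linarith
    have d: "norm (p - z) \<ge> norm z / 2" if "p \<in> sphere (c s) (r s)" for p
    proof -
      have "norm p < R0" using S_R0 sphere_sub_S[OF s] that by blast
      moreover have "norm z - norm p \<le> norm (p - z)" by (metis norm_minus_commute norm_triangle_ineq2)
      ultimately show ?thesis using elim by linarith
    qed
    have "norm (contour_integral (circlepath (c s) (r s)) (\<lambda>p. h p / (p - z) ^ k)) \<le> M / (norm z / 2) ^ k * (2 * pi * r s)"
      by (rule cint_bound_k[OF hs rs M(1)]) (use zpos d M(2) sphere_sub_S[OF s] in auto)
    also have "\<dots> = (M * 2 ^ k * (2 * pi * r s)) / norm z ^ k" by (simp add: power_divide field_simps)
    finally show ?case .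
  qed
  then show ?thesis by (auto simp: decay_def)
qed

lemma cauchy_sum_decay:
  assumes h: "continuous_on S h" shows "decay 1 (cauchy_sum c r m h)"
proof -
  have "decay 1 (\<lambda>z. \<Sum>s\<in>{1..m}. cint (c s) (r s) h z)"
  proof -
    have "finite A \<Longrightarrow> A \<subseteq> {1..m} \<Longrightarrow> decay 1 (\<lambda>z. \<Sum>s\<in>A. cint (c s) (r s) h z)" for A
    proof (induction A rule: finite_induct)
      case empty then show ?case by (auto simp: decay_def intro!: exI[of _ 0])
    next
      case (insert x F)
      have "decay 1 (\<lambda>z. cint (c x) (r x) h z)" using cint_decay_k[OF h, of x 1] insert by (simp add: cint_def)
      then show ?case using insert by (simp add: decay_add)
    qed
    then show ?thesis by simp
  qed
  then show ?thesis unfolding cauchy_sum_eq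
    by (rule decay_bounded_mult[where B = "norm (1 / (2 * pi * \<i>))"]) auto
qed

lemma cauchy_sum_tendsto:
  assumes "continuous_on S h" shows "(cauchy_sum c r m h \<longlongrightarrow> 0) at_infinity"
  using decay_tendsto[OF cauchy_sum_decay[OF assms]] by simp

end

context disks begin
lemma extension:
  assumes U: "open U" "S \<subseteq> U" and h: "h holomorphic_on U"
  obtains V Hp where "open V" "S \<subseteq> V" "V \<subseteq> U" "Hp holomorphic_on V"
    "\<And>z. z \<in> V - S \<Longrightarrow> Hp z = cauchy_sum c r m h z + (if z \<in> DE then h z else 0)"
proof -
  obtain \<delta> where \<delta>: "\<delta> > 0" "\<And>j. j \<in> {1..m} \<Longrightarrow> 2 * \<delta> < r j"
    "\<And>j z. j \<in> {1..m} \<Longrightarrow> r j - 2 * \<delta> \<le> dist (c j) z \<Longrightarrow> dist (c j) z \<le> r j + 2 * \<delta> \<Longrightarrow> z \<in> U"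
    "\<And>i j z. i \<in> {1..m} \<Longrightarrow> j \<in> {1..m} \<Longrightarrow> i \<noteq> j \<Longrightarrow> dist (c j) z \<le> r j + 2 * \<delta> \<Longrightarrow> dist (c i) z > r i + 2 * \<delta>"
    using delta_exists[OF U] by blast
  have hc: "continuous_on U h" using h holomorphic_on_imp_continuous_on by blast
  define A where "A j = {z. r j - \<delta> < dist (c j) z \<and> dist (c j) z < r j + \<delta>}" for j
  define V where "V = (\<Union>j\<in>{1..m}. A j)"
  define G where "G s z = (if z \<in> A s then cint (c s) (r s + \<delta>) h z else cint (c s) (r s) h z)" for s z
  define Hp where "Hp z = (1 / (2 * pi * \<i>)) * (\<Sum>s\<in>{1..m}. G s z)" for z
  have openA: "open (A j)" for j
    unfolding A_def by (intro open_Collect_conj open_Collect_less continuous_intros)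
  have AU: "A j \<subseteq> U" if "j \<in> {1..m}" for j
    using \<delta>(1) \<delta>(3)[OF that] by (auto simp: A_def)
  have Adisj: "z \<notin> A s" if "z \<in> A j" "j \<in> {1..m}" "s \<in> {1..m}" "s \<noteq> j" for z j s
    using \<delta>(1) \<delta>(4)[OF that(3,2,4), of z] that(1) by (auto simp: A_def)
  have SA: "S \<subseteq> V"
  proof
    fix z assume "z \<in> S"
    then obtain j where "j \<in> {1..m}" "dist (c j) z = r j" by (auto simp: in_S)
    then show "z \<in> V" using \<delta>(1) unfolding V_def A_def by (intro UN_I[of j]) auto
  qed
  have contsph: "continuous_on (sphere (c s) \<rho>) h" if "s \<in> {1..m}" "\<rho> \<in> {r s, r s + \<delta>}" for s \<rho>
  proof (rule continuous_on_subset[OF hc])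
    show "sphere (c s) \<rho> \<subseteq> U" using that \<delta>(1) \<delta>(2)[OF that(1)] \<delta>(3)[OF that(1)] by auto
  qed
  have Hp_on_A: "Hp z = (1 / (2 * pi * \<i>)) * (\<Sum>s\<in>{1..m}. if s = j then cint (c s) (r s + \<delta>) h z else cint (c s) (r s) h z)"
    if "j \<in> {1..m}" "z \<in> A j" for j z
    unfolding Hp_def G_def using Adisj[OF that(2,1)] that by (intro arg_cong[where f = "(*) _"] sum.cong) auto
  have holA: "Hp holomorphic_on A j" if j: "j \<in> {1..m}" for j
  proof (rule holomorphic_transform[OF _ Hp_on_A[OF j, symmetric]])
    have "(\<lambda>z. if s = j then cint (c s) (r s + \<delta>) h z else cint (c s) (r s) h z) holomorphic_on A j"
      if s: "s \<in> {1..m}" for s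
    proof (cases "s = j")
      case True
      have "cint (c s) (r s + \<delta>) h holomorphic_on - sphere (c s) (r s + \<delta>)"
        using contsph[OF s] rpos[OF s] \<delta>(1) by (intro cint_holo) auto
      moreover have "A j \<subseteq> - sphere (c s) (r s + \<delta>)" using True by (auto simp: A_def)
      ultimately show ?thesis using True by (auto elim: holomorphic_on_subset)
    next
      case False
      have "cint (c s) (r s) h holomorphic_on - sphere (c s) (r s)"
        using contsph[OF s] rpos[OF s] by (intro cint_holo) auto
      moreover have "A j \<subseteq> - sphere (c s) (r s)"
      proof
        fix z assume "z \<in> A j"
        then have "dist (c j) z \<le> r j + 2 * \<delta>" using \<delta>(1) by (simp add: A_def)
        then have "dist (c s) z > r s + 2 * \<delta>" by (rule \<delta>(4)[OF s j False])
        then show "z \<in> - sphere (c s) (r s)" using \<delta>(1) by auto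
      qed
      ultimately show ?thesis using False by (auto elim: holomorphic_on_subset)
    qed
    then show "(\<lambda>z. (1 / (2 * pi * \<i>)) * (\<Sum>s\<in>{1..m}. if s = j then cint (c s) (r s + \<delta>) h z else cint (c s) (r s) h z)) holomorphic_on A j"
      by (intro holomorphic_intros) auto
  qed
  have holV: "Hp holomorphic_on V" unfolding V_def using holA openA by (intro holomorphic_on_UN_open) auto
  have ident: "Hp z = cauchy_sum c r m h z + (if z \<in> DE then h z else 0)" if z: "z \<in> V - S" for z
  proof -
    obtain j where j: "j \<in> {1..m}" "z \<in> A j" using z by (auto simp: V_def)
    have rj: "r j > 0" using rpos j by auto
    have dz: "dist (c j) z \<noteq> r j" using z sphere_sub_S[OF j(1)] by auto
    have ann: "cint (c j) (r j) h z + (if dist (c j) z > r j then 2 * pi * \<i> * h z else 0) = cint (c j) (r j + \<delta>) h z"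
    proof (rule annulus_identity[OF h U(1) rj])
      show "r j < r j + \<delta>" using \<delta> by simp
      show "{p. r j \<le> dist (c j) p \<and> dist (c j) p \<le> r j + \<delta>} \<subseteq> U" using \<delta>(1) \<delta>(3)[OF j(1)] by auto
      show "z \<in> U" using AU[OF j(1)] j(2) by auto
      show "dist (c j) z < r j + \<delta>" using j(2) by (simp add: A_def)
    qed (rule dz)
    have DEiff: "z \<in> DE \<longleftrightarrow> dist (c j) z > r j"
    proof
      assume "z \<in> DE" then show "dist (c j) z > r j" using j(1) by (auto simp: in_DE)
    next
      assume gt: "dist (c j) z > r j"
      have "dist (c s) z > r s" if s: "s \<in> {1..m}" for s
      proof (cases "s = j")
        case False
        have "dist (c j) z \<le> r j + 2 * \<delta>" using j(2) \<delta>(1) by (simp add: A_def)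
        then have "dist (c s) z > r s + 2 * \<delta>" by (rule \<delta>(4)[OF s j(1) False])
        then show ?thesis using \<delta>(1) by linarith
      qed (use gt in simp)
      then show "z \<in> DE" by (simp add: in_DE)
    qed
    have "(\<Sum>s\<in>{1..m}. if s = j then cint (c s) (r s + \<delta>) h z else cint (c s) (r s) h z)
        = (\<Sum>s\<in>{1..m}. cint (c s) (r s) h z) + (cint (c j) (r j + \<delta>) h z - cint (c j) (r j) h z)"
    proof -
      have "(\<Sum>s\<in>{1..m}. if s = j then cint (c s) (r s + \<delta>) h z else cint (c s) (r s) h z)
          = cint (c j) (r j + \<delta>) h z + (\<Sum>s\<in>{1..m} - {j}. cint (c s) (r s) h z)"
        using j(1) by (subst sum.remove[of _ j]) (auto intro!: sum.cong)
      moreover have "(\<Sum>s\<in>{1..m}. cint (c s) (r s) h z) = cint (c j) (r j) h z + (\<Sum>s\<in>{1..m} - {j}. cint (c s) (r s) h z)"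
        using j(1) by (subst sum.remove[of _ j]) auto
      ultimately show ?thesis by simp
    qed
    note sumeq = this
    have diff: "cint (c j) (r j + \<delta>) h z - cint (c j) (r j) h z = (if z \<in> DE then 2 * pi * \<i> * h z else 0)"
      using ann DEiff by (auto simp: algebra_simps eq_diff_eq)
    have "Hp z = (1 / (2 * pi * \<i>)) * (\<Sum>s\<in>{1..m}. cint (c s) (r s) h z) + (1 / (2 * pi * \<i>)) * (if z \<in> DE then 2 * pi * \<i> * h z else 0)"
      by (simp only: Hp_on_A[OF j] sumeq diff distrib_left)
    moreover have "(1 / (2 * pi * \<i>)) * (if z \<in> DE then 2 * pi * \<i> * h z else 0) = (if z \<in> DE then h z else 0)"
      by (cases "z \<in> DE") auto
    ultimately show ?thesis by (simp only: cauchy_sum_eq)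
  qed
  show ?thesis
  proof (rule that[OF _ SA _ holV ident])
    show "open V" unfolding V_def using openA by auto
    show "V \<subseteq> U" unfolding V_def using AU by blast
  qed
qed

end

context disks begin
lemma plus_DI: "z \<in> DI \<Longrightarrow> plus_part c r m h z = cauchy_sum c r m h z"
  using S_DI DI_DE by (auto simp: plus_part_def fill_circles_def)
lemma plus_DE: "z \<in> DE \<Longrightarrow> plus_part c r m h z = cauchy_sum c r m h z + h z"
  using S_DE by (auto simp: plus_part_def fill_circles_def)
lemma minus_DI: "z \<in> DI \<Longrightarrow> minus_part c r m h z = - cauchy_sum c r m h z + h z"
  using S_DI by (auto simp: minus_part_def fill_circles_def)
lemma minus_DE: "z \<in> DE \<Longrightarrow> minus_part c r m h z = - cauchy_sum c r m h z"
  using S_DE DI_DE by (auto simp: minus_part_def fill_circles_def)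

lemma PN_near:
  assumes U: "open U" "S \<subseteq> U" and h: "h holomorphic_on U"
  obtains V where "open V" "S \<subseteq> V" "V \<subseteq> U"
    "plus_part c r m h holomorphic_on V" "minus_part c r m h holomorphic_on V"
    "\<And>z. z \<in> V \<Longrightarrow> plus_part c r m h z + minus_part c r m h z = h z"
proof -
  obtain V Hp where V: "open V" "S \<subseteq> V" "V \<subseteq> U" "Hp holomorphic_on V"
    and id: "\<And>z. z \<in> V - S \<Longrightarrow> Hp z = cauchy_sum c r m h z + (if z \<in> DE then h z else 0)"
    using extension[OF U h] by blast
  have Hc: "continuous_on V Hp" using V(4) holomorphic_on_imp_continuous_on by blast
  have hV: "h holomorphic_on V" using h V(3) holomorphic_on_subset by blast
  have hc: "continuous_on V h" using hV holomorphic_on_imp_continuous_on by blast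
  have P: "plus_part c r m h z = Hp z" if "z \<in> V" for z
    unfolding plus_part_def by (rule fill_eq[OF V(1) Hc _ that]) (use id in auto)
  have N: "minus_part c r m h z = h z - Hp z" if "z \<in> V" for z
    unfolding minus_part_def
  proof (rule fill_eq[OF V(1) _ _ that])
    show "continuous_on V (\<lambda>z. h z - Hp z)" using hc Hc by (intro continuous_intros)
    fix x assume x: "x \<in> V - S"
    then have "x \<in> DI \<or> x \<in> DE" using cover by blast
    then show "- cauchy_sum c r m h x + (if x \<in> DI then h x else 0) = h x - Hp x"
      using id[OF x] DI_DE by auto
  qed
  show ?thesis
  proof (rule that[OF V(1,2,3)])
    show "plus_part c r m h holomorphic_on V" by (rule holomorphic_transform[OF V(4)]) (simp add: P)
    show "minus_part c r m h holomorphic_on V"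
      by (rule holomorphic_transform[OF holomorphic_on_diff[OF hV V(4)]]) (simp add: N)
    show "plus_part c r m h z + minus_part c r m h z = h z" if "z \<in> V" for z
      using P[OF that] N[OF that] by simp
  qed
qed

lemma plus_holo_DI:
  assumes "continuous_on S h" shows "plus_part c r m h holomorphic_on DI"
proof -
  have "DI \<subseteq> - S" using S_DI by blast
  then have "cauchy_sum c r m h holomorphic_on DI" using holomorphic_on_subset[OF cauchy_sum_holo[OF assms]] by blast
  then show ?thesis by (rule holomorphic_transform) (simp add: plus_DI)
qed

lemma minus_holo_DE:
  assumes "continuous_on S h" shows "minus_part c r m h holomorphic_on DE"
proof -
  have "(\<lambda>z. - cauchy_sum c r m h z) holomorphic_on DE"
    proof -
    have "DE \<subseteq> - S" using S_DE by blast
    then show ?thesis using holomorphic_on_subset[OF cauchy_sum_holo[OF assms]] by (intro holomorphic_intros) blast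
  qed
  then show ?thesis by (rule holomorphic_transform) (simp add: minus_DE)
qed

lemma plus_holo_DE:
  assumes "continuous_on S h" "h holomorphic_on DE" shows "plus_part c r m h holomorphic_on DE"
proof -
  have "(\<lambda>z. cauchy_sum c r m h z + h z) holomorphic_on DE"
    proof -
    have "DE \<subseteq> - S" using S_DE by blast
    then show ?thesis using holomorphic_on_subset[OF cauchy_sum_holo[OF assms(1)]] assms(2) by (intro holomorphic_intros) blast+
  qed
  then show ?thesis by (rule holomorphic_transform) (simp add: plus_DE)
qed

lemma minus_holo_DI:
  assumes "continuous_on S h" "h holomorphic_on DI" shows "minus_part c r m h holomorphic_on DI"
proof -
  have "(\<lambda>z. - cauchy_sum c r m h z + h z) holomorphic_on DI"
    proof -
    have "DI \<subseteq> - S" using S_DI by blast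
    then show ?thesis using holomorphic_on_subset[OF cauchy_sum_holo[OF assms(1)]] assms(2) by (intro holomorphic_intros) blast+
  qed
  then show ?thesis by (rule holomorphic_transform) (simp add: minus_DI)
qed

lemma UNIV_cover: "S \<subseteq> V \<Longrightarrow> UNIV = V \<union> DI \<union> DE"
  using cover by blast

lemma minus_zero:
  assumes W: "open W" "S \<subseteq> W" "DI \<subseteq> W" and h: "h holomorphic_on W"
  shows "minus_part c r m h z = 0"
proof -
  obtain V where V: "open V" "S \<subseteq> V" "V \<subseteq> W" "minus_part c r m h holomorphic_on V"
    using PN_near[OF W(1,2) h] by metis
  have hc: "continuous_on S h"
    using holomorphic_on_imp_continuous_on[OF h] W(2) continuous_on_subset by blast
  have "minus_part c r m h holomorphic_on (V \<union> DI \<union> DE)"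
    using V hc minus_holo_DI[OF hc holomorphic_on_subset[OF h W(3)]] minus_holo_DE[OF hc] open_DI open_DE
    by (intro holomorphic_on_Un) auto
  then have hol: "minus_part c r m h holomorphic_on UNIV" using UNIV_cover[OF V(2)] by simp
  have "((\<lambda>z. - cauchy_sum c r m h z) \<longlongrightarrow> 0) at_infinity"
    using tendsto_minus[OF cauchy_sum_tendsto[OF hc]] by simp
  moreover have "eventually (\<lambda>z. - cauchy_sum c r m h z = minus_part c r m h z) at_infinity"
    using ev_norm_ge[of R0] by eventually_elim (simp add: far_DE minus_DE)
  ultimately have "(minus_part c r m h \<longlongrightarrow> 0) at_infinity" by (rule Lim_transform_eventually)
  then show ?thesis using Liouville_weak_0[OF hol] by blast
qed

lemma plus_zero:
  assumes W: "open W" "S \<subseteq> W" "DE \<subseteq> W" and h: "h holomorphic_on W" and lim: "(h \<longlongrightarrow> 0) at_infinity"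
  shows "plus_part c r m h z = 0"
proof -
  obtain V where V: "open V" "S \<subseteq> V" "V \<subseteq> W" "plus_part c r m h holomorphic_on V"
    using PN_near[OF W(1,2) h] by metis
  have hc: "continuous_on S h"
    using holomorphic_on_imp_continuous_on[OF h] W(2) continuous_on_subset by blast
  have "plus_part c r m h holomorphic_on (V \<union> DI \<union> DE)"
    using V hc plus_holo_DI[OF hc] plus_holo_DE[OF hc holomorphic_on_subset[OF h W(3)]] open_DI open_DE
    by (intro holomorphic_on_Un) auto
  then have hol: "plus_part c r m h holomorphic_on UNIV" using UNIV_cover[OF V(2)] by simp
  have "((\<lambda>z. cauchy_sum c r m h z + h z) \<longlongrightarrow> 0) at_infinity"
    using tendsto_add[OF cauchy_sum_tendsto[OF hc] lim] by simp
  moreover have "eventually (\<lambda>z. cauchy_sum c r m h z + h z = plus_part c r m h z) at_infinity"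
    using ev_norm_ge[of R0] by eventually_elim (simp add: far_DE plus_DE)
  ultimately have "(plus_part c r m h \<longlongrightarrow> 0) at_infinity" by (rule Lim_transform_eventually)
  then show ?thesis using Liouville_weak_0[OF hol] by blast
qed

end

context disks begin

abbreviation "PP h \<equiv> plus_part c r m h"
abbreviation "NN h \<equiv> minus_part c r m h"
abbreviation "HG \<equiv> Hgerm c r m"

definition Ifun :: "(complex \<Rightarrow> complex) \<Rightarrow> complex" where
  "Ifun h = (\<Sum>s\<in>{1..m}. contour_integral (circlepath (c s) (r s)) h)"

definition unP :: "(complex \<Rightarrow> complex) \<Rightarrow> complex \<Rightarrow> complex" where
  "unP h z = cauchy_sum c r m h z + (if z \<in> DE then h z else 0)"

lemma PP_unP: "PP h = fill_circles c r m (unP h)"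
  by (simp add: plus_part_def unP_def[abs_def])

lemma HG_iff: "h \<in> HG \<longleftrightarrow> (\<exists>U. open U \<and> S \<subseteq> U \<and> h holomorphic_on U)"
  by (simp add: Hgerm_def)

lemma HG_cont: "h \<in> HG \<Longrightarrow> continuous_on S h"
  unfolding HG_iff using holomorphic_on_imp_continuous_on continuous_on_subset by blast

lemma fill_cong:
  assumes W: "open W" "z \<in> W" and eq: "\<And>x. x \<in> W - S \<Longrightarrow> g1 x = g2 x"
  shows "fill_circles c r m g1 z = fill_circles c r m g2 z"
proof (cases "z \<in> S")
  case True
  have "eventually (\<lambda>x. g1 x = g2 x) (at z within - S)"
    unfolding eventually_at_topological using W eq by (intro exI[of _ W]) auto
  then have "Lim (at z within - S) g1 = Lim (at z within - S) g2" by (rule Lim_cong) simp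
  then show ?thesis using True by (simp add: fill_circles_def)
next
  case False then show ?thesis using eq W by (simp add: fill_circles_def)
qed

lemma cs_cong:
  assumes "\<And>p. p \<in> S \<Longrightarrow> f p = g p"
  shows "cauchy_sum c r m f z = cauchy_sum c r m g z"
  unfolding cauchy_sum_def
proof (intro arg_cong[where f = "(*) _"] sum.cong refl contour_integral_eq)
  fix s x assume "s \<in> {1..m}" "x \<in> path_image (circlepath (c s) (r s))"
  then have "x \<in> S" using sphere_sub_S rpos by fastforce
  then show "f x / (x - z) = g x / (x - z)" using assms by simp
qed

lemma I_cong:
  assumes "\<And>p. p \<in> S \<Longrightarrow> f p = g p" shows "Ifun f = Ifun g"
  unfolding Ifun_def
proof (intro sum.cong refl contour_integral_eq)
  fix s x assume "s \<in> {1..m}" "x \<in> path_image (circlepath (c s) (r s))"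
  then have "x \<in> S" using sphere_sub_S rpos by fastforce
  then show "f x = g x" using assms by simp
qed

lemma P_cong:
  assumes W: "open W" "S \<subseteq> W" and eq: "\<And>x. x \<in> W \<Longrightarrow> f x = g x" and z: "z \<in> W \<union> DI"
  shows "PP f z = PP g z"
proof -
  have cs: "cauchy_sum c r m f x = cauchy_sum c r m g x" for x using eq W(2) by (intro cs_cong) auto
  show ?thesis
  proof (cases "z \<in> W")
    case True then show ?thesis unfolding PP_unP
      by (intro fill_cong[OF W(1) True]) (use cs eq in \<open>auto simp: unP_def\<close>)
  next
    case False then have "z \<in> DI" using z by auto
    then show ?thesis using cs by (simp add: plus_DI)
  qed
qed

lemma unP_tendsto:
  assumes h: "h \<in> HG" and z: "z \<in> S"
  shows "(unP h \<longlongrightarrow> PP h z) (at z within - S)"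
proof -
  obtain U where U: "open U" "S \<subseteq> U" "h holomorphic_on U" using h by (auto simp: HG_iff)
  obtain V where V: "open V" "S \<subseteq> V" "PP h holomorphic_on V" using PN_near[OF U] by metis
  have "(PP h \<longlongrightarrow> PP h z) (at z within - S)"
    using holomorphic_on_imp_continuous_on[OF V(3)] V(1,2) z
    by (meson continuous_on_eq_continuous_at continuous_at_imp_continuous_at_within continuous_within subsetD)
  moreover have "eventually (\<lambda>x. PP h x = unP h x) (at z within - S)"
    unfolding eventually_at_topological using V(1,2) z
    by (intro exI[of _ V]) (auto simp: PP_unP fill_circles_def)
  ultimately show ?thesis by (rule Lim_transform_eventually)
qed

lemma S_nontriv: "z \<in> S \<Longrightarrow> \<not> trivial_limit (at z within - S)"
  using S_limpt by (simp add: trivial_limit_within)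

lemma cs_lin:
  assumes f: "continuous_on S f" and g: "continuous_on S g" and z: "z \<notin> S"
  shows "cauchy_sum c r m (\<lambda>x. k1 * f x + k2 * g x) z = k1 * cauchy_sum c r m f z + k2 * cauchy_sum c r m g z"
proof -
  have ci: "contour_integral (circlepath (c s) (r s)) (\<lambda>p. (k1 * f p + k2 * g p) / (p - z))
      = k1 * contour_integral (circlepath (c s) (r s)) (\<lambda>p. f p / (p - z)) + k2 * contour_integral (circlepath (c s) (r s)) (\<lambda>p. g p / (p - z))"
    if s: "s \<in> {1..m}" for s
  proof -
    have rs: "r s > 0" using rpos s by auto
    have zs: "z \<notin> sphere (c s) (r s)" using z sphere_sub_S[OF s] by auto
    have fs: "continuous_on (sphere (c s) (r s)) f" "continuous_on (sphere (c s) (r s)) g"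
      using f g sphere_sub_S[OF s] continuous_on_subset by blast+
    have i1: "(\<lambda>p. f p / (p - z)) contour_integrable_on (circlepath (c s) (r s))"
      using cont_div_sphere[OF fs(1) zs, of 1] rs by (intro contint_circ) auto
    have i2: "(\<lambda>p. g p / (p - z)) contour_integrable_on (circlepath (c s) (r s))"
      using cont_div_sphere[OF fs(2) zs, of 1] rs by (intro contint_circ) auto
    have "contour_integral (circlepath (c s) (r s)) (\<lambda>p. (k1 * f p + k2 * g p) / (p - z))
        = contour_integral (circlepath (c s) (r s)) (\<lambda>p. k1 * (f p / (p - z)) + k2 * (g p / (p - z)))"
      by (simp add: add_divide_distrib)
    also have "\<dots> = contour_integral (circlepath (c s) (r s)) (\<lambda>p. k1 * (f p / (p - z))) + contour_integral (circlepath (c s) (r s)) (\<lambda>p. k2 * (g p / (p - z)))"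
      using i1 i2 by (intro contour_integral_add contour_integrable_lmul)
    also have "\<dots> = k1 * contour_integral (circlepath (c s) (r s)) (\<lambda>p. f p / (p - z)) + k2 * contour_integral (circlepath (c s) (r s)) (\<lambda>p. g p / (p - z))"
      by (simp only: contour_integral_lmul[OF i1] contour_integral_lmul[OF i2])
    finally show ?thesis .
  qed
  show ?thesis unfolding cauchy_sum_def by (simp add: ci sum.distrib sum_distrib_left algebra_simps)
qed

lemma P_lin:
  assumes f: "f \<in> HG" and g: "g \<in> HG"
  shows "PP (\<lambda>x. k1 * f x + k2 * g x) z = k1 * PP f z + k2 * PP g z"
proof -
  have fc: "continuous_on S f" and gc: "continuous_on S g" using f g HG_cont by auto
  have un: "unP (\<lambda>x. k1 * f x + k2 * g x) x = k1 * unP f x + k2 * unP g x" if "x \<notin> S" for x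
    using cs_lin[OF fc gc that] by (simp add: unP_def algebra_simps)
  show ?thesis
  proof (cases "z \<in> S")
    case False then show ?thesis using un by (simp add: PP_unP fill_circles_def)
  next
    case True
    have "((\<lambda>x. k1 * unP f x + k2 * unP g x) \<longlongrightarrow> k1 * PP f z + k2 * PP g z) (at z within - S)"
      using unP_tendsto[OF f True] unP_tendsto[OF g True] by (intro tendsto_intros)
    moreover have "eventually (\<lambda>x. k1 * unP f x + k2 * unP g x = unP (\<lambda>x. k1 * f x + k2 * g x) x) (at z within - S)"
      using un by (auto simp: eventually_at_filter)
    ultimately have "(unP (\<lambda>x. k1 * f x + k2 * g x) \<longlongrightarrow> k1 * PP f z + k2 * PP g z) (at z within - S)"
      by (rule Lim_transform_eventually)
    then show ?thesis using True S_nontriv[OF True] by (simp add: PP_unP fill_circles_def tendsto_Lim)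
  qed
qed

lemma N_eq:
  assumes h: "h \<in> HG" shows "NN h z = h z - PP h z"
proof -
  obtain U where U: "open U" "S \<subseteq> U" "h holomorphic_on U" using h by (auto simp: HG_iff)
  obtain V where V: "open V" "S \<subseteq> V" "\<And>z. z \<in> V \<Longrightarrow> PP h z + NN h z = h z" using PN_near[OF U] by metis
  consider "z \<in> S" | "z \<in> DI" | "z \<in> DE" using cover by blast
  then show ?thesis
  proof cases
    case 1 then show ?thesis using V by (force simp: algebra_simps)
  next
    case 2 then show ?thesis by (simp add: plus_DI minus_DI)
  next
    case 3 then show ?thesis by (simp add: plus_DE minus_DE)
  qed
qed

lemma HG2:
  assumes "f \<in> HG" "g \<in> HG"
  obtains U where "open U" "S \<subseteq> U" "f holomorphic_on U" "g holomorphic_on U"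
proof -
  obtain U1 where U1: "open U1" "S \<subseteq> U1" "f holomorphic_on U1" using assms(1) by (auto simp: HG_iff)
  obtain U2 where U2: "open U2" "S \<subseteq> U2" "g holomorphic_on U2" using assms(2) by (auto simp: HG_iff)
  show ?thesis
  proof (rule that[of "U1 \<inter> U2"])
    show "f holomorphic_on U1 \<inter> U2" using U1(3) by (rule holomorphic_on_subset) auto
    show "g holomorphic_on U1 \<inter> U2" using U2(3) by (rule holomorphic_on_subset) auto
  qed (use U1 U2 in auto)
qed

lemma HG_add: assumes "f \<in> HG" "g \<in> HG" shows "(\<lambda>z. f z + g z) \<in> HG"
proof -
  obtain U where "open U" "S \<subseteq> U" "f holomorphic_on U" "g holomorphic_on U" using HG2[OF assms] .
  then show ?thesis unfolding HG_iff by (intro exI[of _ U]) (auto intro!: holomorphic_intros)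
qed
lemma HG_mult: assumes "f \<in> HG" "g \<in> HG" shows "(\<lambda>z. f z * g z) \<in> HG"
proof -
  obtain U where "open U" "S \<subseteq> U" "f holomorphic_on U" "g holomorphic_on U" using HG2[OF assms] .
  then show ?thesis unfolding HG_iff by (intro exI[of _ U]) (auto intro!: holomorphic_intros)
qed
lemma HG_diff: assumes "f \<in> HG" "g \<in> HG" shows "(\<lambda>z. f z - g z) \<in> HG"
proof -
  obtain U where "open U" "S \<subseteq> U" "f holomorphic_on U" "g holomorphic_on U" using HG2[OF assms] .
  then show ?thesis unfolding HG_iff by (intro exI[of _ U]) (auto intro!: holomorphic_intros)
qed
lemma HG_cmult: assumes "f \<in> HG" shows "(\<lambda>z. k * f z) \<in> HG"
proof -
  obtain U where "open U" "S \<subseteq> U" "f holomorphic_on U" using assms by (auto simp: HG_iff)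
  then show ?thesis unfolding HG_iff by (intro exI[of _ U]) (auto intro!: holomorphic_intros)
qed
lemma HG_uminus: assumes "f \<in> HG" shows "(\<lambda>z. - f z) \<in> HG"
proof -
  obtain U where "open U" "S \<subseteq> U" "f holomorphic_on U" using assms by (auto simp: HG_iff)
  then show ?thesis unfolding HG_iff by (intro exI[of _ U]) (auto intro!: holomorphic_intros)
qed
lemma HG_const: "(\<lambda>z. k) \<in> HG"
  unfolding HG_iff by (intro exI[of _ UNIV]) auto

lemma HG_P: assumes "h \<in> HG" shows "PP h \<in> HG"
proof -
  obtain U where U: "open U" "S \<subseteq> U" "h holomorphic_on U" using assms by (auto simp: HG_iff)
  show ?thesis using PN_near[OF U] unfolding HG_iff by metis
qed

lemma HG_N: assumes "h \<in> HG" shows "NN h \<in> HG"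
proof -
  obtain U where U: "open U" "S \<subseteq> U" "h holomorphic_on U" using assms by (auto simp: HG_iff)
  show ?thesis using PN_near[OF U] unfolding HG_iff by metis
qed

lemma P_holo_big:
  assumes "h \<in> HG" obtains W where "open W" "S \<subseteq> W" "PP h holomorphic_on (W \<union> DI)" "NN h holomorphic_on (W \<union> DE)"
proof -
  obtain U where U: "open U" "S \<subseteq> U" "h holomorphic_on U" using assms by (auto simp: HG_iff)
  obtain V where V: "open V" "S \<subseteq> V" "PP h holomorphic_on V" "NN h holomorphic_on V"
    using PN_near[OF U] by metis
  have hc: "continuous_on S h" using HG_cont[OF assms] .
  show ?thesis
  proof (rule that[OF V(1,2)])
    show "PP h holomorphic_on (V \<union> DI)" using V plus_holo_DI[OF hc] open_DI by (intro holomorphic_on_Un)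
    show "NN h holomorphic_on (V \<union> DE)" using V minus_holo_DE[OF hc] open_DE by (intro holomorphic_on_Un)
  qed
qed

lemma PP_PP:
  assumes f: "f \<in> HG" and g: "g \<in> HG"
  shows "PP (\<lambda>x. PP f x * PP g x) z = PP f z * PP g z"
proof -
  obtain W1 where W1: "open W1" "S \<subseteq> W1" "PP f holomorphic_on (W1 \<union> DI)" using P_holo_big[OF f] by metis
  obtain W2 where W2: "open W2" "S \<subseteq> W2" "PP g holomorphic_on (W2 \<union> DI)" using P_holo_big[OF g] by metis
  have hol: "(\<lambda>x. PP f x * PP g x) holomorphic_on ((W1 \<inter> W2) \<union> DI)"
    using W1(3) W2(3) by (intro holomorphic_on_mult) (auto elim: holomorphic_on_subset)
  have "NN (\<lambda>x. PP f x * PP g x) z = 0"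
    by (rule minus_zero[OF _ _ _ hol]) (use W1 W2 open_DI in auto)
  moreover have "(\<lambda>x. PP f x * PP g x) \<in> HG" using HG_mult[OF HG_P[OF f] HG_P[OF g]] .
  ultimately show ?thesis using N_eq by force
qed

lemma N_decay: assumes "h \<in> HG" shows "decay 1 (NN h)"
proof -
  have "decay 1 (\<lambda>z. - cauchy_sum c r m h z)"
    using decay_uminus[OF cauchy_sum_decay[OF HG_cont[OF assms]]] .
  moreover have "eventually (\<lambda>z. - cauchy_sum c r m h z = NN h z) at_infinity"
    using ev_norm_ge[of R0] by eventually_elim (simp add: far_DE minus_DE)
  ultimately show ?thesis by (rule decay_cong)
qed

lemma PP_NN:
  assumes f: "f \<in> HG" and g: "g \<in> HG"
  shows "PP (\<lambda>x. NN f x * NN g x) z = 0"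
proof -
  obtain W1 where W1: "open W1" "S \<subseteq> W1" "NN f holomorphic_on (W1 \<union> DE)" using P_holo_big[OF f] by metis
  obtain W2 where W2: "open W2" "S \<subseteq> W2" "NN g holomorphic_on (W2 \<union> DE)" using P_holo_big[OF g] by metis
  have hol: "(\<lambda>x. NN f x * NN g x) holomorphic_on ((W1 \<inter> W2) \<union> DE)"
    using W1(3) W2(3) by (intro holomorphic_on_mult) (auto elim: holomorphic_on_subset)
  have "decay (1 + 1) (\<lambda>x. NN f x * NN g x)" using decay_mult[OF N_decay[OF f] N_decay[OF g]] .
  then have lim: "((\<lambda>x. NN f x * NN g x) \<longlongrightarrow> 0) at_infinity" by (rule decay_tendsto) simp
  show ?thesis by (rule plus_zero[OF _ _ _ hol lim]) (use W1 W2 open_DE in auto)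
qed

lemma NN_NN:
  assumes f: "f \<in> HG" and g: "g \<in> HG"
  shows "NN (\<lambda>x. NN f x * NN g x) z = NN f z * NN g z"
  using N_eq[OF HG_mult[OF HG_N[OF f] HG_N[OF g]]] PP_NN[OF f g] by simp

lemma NN_PP:
  assumes f: "f \<in> HG" and g: "g \<in> HG"
  shows "NN (\<lambda>x. PP f x * PP g x) z = 0"
  using N_eq[OF HG_mult[OF HG_P[OF f] HG_P[OF g]]] PP_PP[OF f g] by simp

end

lemma cint_expand:
  fixes h :: "complex \<Rightarrow> complex"
  assumes h: "continuous_on (sphere a \<rho>) h" and \<rho>: "\<rho> > 0" and z: "z \<notin> sphere a \<rho>"
  shows "z * cint a \<rho> h z = cint a \<rho> (\<lambda>p. p * h p) z - contour_integral (circlepath a \<rho>) h"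
proof -
  have hp: "continuous_on (sphere a \<rho>) (\<lambda>p. p * h p)" using h by (intro continuous_intros)
  have i1: "(\<lambda>p. p * h p / (p - z)) contour_integrable_on circlepath a \<rho>"
    using cont_div_sphere[OF hp z, of 1] \<rho> by (intro contint_circ) auto
  have i2: "h contour_integrable_on circlepath a \<rho>" using h \<rho> by (intro contint_circ)
  have i3: "(\<lambda>p. h p / (p - z)) contour_integrable_on circlepath a \<rho>"
    using cont_div_sphere[OF h z, of 1] \<rho> by (intro contint_circ) auto
  have "cint a \<rho> (\<lambda>p. p * h p) z - contour_integral (circlepath a \<rho>) h
      = contour_integral (circlepath a \<rho>) (\<lambda>p. p * h p / (p - z) - h p)"
    unfolding cint_def by (rule contour_integral_diff[OF i1 i2, symmetric])
  also have "\<dots> = contour_integral (circlepath a \<rho>) (\<lambda>p. z * (h p / (p - z)))"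
  proof (rule contour_integral_eq)
    fix p assume "p \<in> path_image (circlepath a \<rho>)"
    then have "p \<noteq> z" using z \<rho> by auto
    then show "p * h p / (p - z) - h p = z * (h p / (p - z))" by (simp add: field_simps)
  qed
  also have "\<dots> = z * cint a \<rho> h z" unfolding cint_def by (rule contour_integral_lmul[OF i3])
  finally show ?thesis by simp
qed

lemma decay_zmul:
  assumes "decay (Suc k) f" shows "decay k (\<lambda>z. z * f z)"
proof -
  obtain C where C: "eventually (\<lambda>z. norm (f z) \<le> C / norm z ^ Suc k) at_infinity"
    using assms by (auto simp: decay_def)
  have "eventually (\<lambda>z. norm (z * f z) \<le> C / norm z ^ k) at_infinity"
    using C ev_norm_ge[of 1]
  proof eventually_elim
    case (elim z)
    have "norm (z * f z) = norm z * norm (f z)" by (simp add: norm_mult)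
    also have "\<dots> \<le> norm z * (C / norm z ^ Suc k)" using elim by (intro mult_left_mono) auto
    also have "\<dots> = C / norm z ^ k"
    proof -
      have "z \<noteq> 0" using elim by auto
      then show ?thesis by (simp add: field_simps)
    qed
    finally show ?case .
  qed
  then show ?thesis by (auto simp: decay_def)
qed

lemma decay_divz:
  assumes "decay k f" shows "decay (Suc k) (\<lambda>z. f z / z)"
proof -
  obtain C where C: "eventually (\<lambda>z. norm (f z) \<le> C / norm z ^ k) at_infinity"
    using assms by (auto simp: decay_def)
  have "eventually (\<lambda>z. norm (f z / z) \<le> C / norm z ^ Suc k) at_infinity"
    using C ev_norm_ge[of 1]
  proof eventually_elim
    case (elim z)
    have "norm (f z / z) = norm (f z) / norm z" by (simp add: norm_divide)
    also have "\<dots> \<le> (C / norm z ^ k) / norm z" using elim by (intro divide_right_mono) auto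
    also have "\<dots> = C / norm z ^ Suc k" by (simp add: field_simps)
    finally show ?case .
  qed
  then show ?thesis by (auto simp: decay_def)
qed

lemma decay_ev_bound:
  assumes "decay k f"
  obtains C B where "B \<ge> 1" "\<And>z. norm z \<ge> B \<Longrightarrow> norm (f z) \<le> C / norm z ^ k"
proof -
  obtain C where C: "eventually (\<lambda>z. norm (f z) \<le> C / norm z ^ k) at_infinity"
    using assms by (auto simp: decay_def)
  then obtain B where "\<And>z. norm z \<ge> B \<Longrightarrow> norm (f z) \<le> C / norm z ^ k"
    by (auto simp: eventually_at_infinity)
  then show ?thesis using that[of "max B 1" C] by auto
qed

lemma decay_ev_bound':
  assumes "decay k f"
  shows "\<exists>B C. B \<ge> 1 \<and> (\<forall>z. norm z \<ge> B \<longrightarrow> norm (f z) \<le> C / norm z ^ k)"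
proof -
  obtain C where C: "eventually (\<lambda>z. norm (f z) \<le> C / norm z ^ k) at_infinity"
    using assms by (auto simp: decay_def)
  then obtain B where "\<And>z. norm z \<ge> B \<Longrightarrow> norm (f z) \<le> C / norm z ^ k"
    by (auto simp: eventually_at_infinity)
  then show ?thesis by (intro exI[of _ "max B 1"] exI[of _ C]) auto
qed

lemma const_small_zero:
  fixes x :: complex
  assumes "\<And>R. R \<ge> B \<Longrightarrow> norm x \<le> C / R"
  shows "x = 0"
proof (rule ccontr)
  assume "x \<noteq> 0"
  then have nx: "norm x > 0" by simp
  define R where "R = max B (2 * \<bar>C\<bar> / norm x + 1)"
  have R3: "R \<ge> 2 * \<bar>C\<bar> / norm x + 1" by (simp add: R_def)
  have nn: "2 * \<bar>C\<bar> / norm x \<ge> 0" using nx by simp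
  have R1: "R \<ge> B" "R > 0" "R \<ge> 2 * \<bar>C\<bar> / norm x + 1"
    using R3 nn by (simp add: R_def, linarith, simp add: R_def)
  have "norm x \<le> C / R" using assms R1(1) by blast
  also have "\<dots> \<le> \<bar>C\<bar> / R" using R1(2) by (intro divide_right_mono) auto
  also have "\<dots> < norm x"
  proof -
    have "\<bar>C\<bar> < norm x * R"
    proof -
      have "norm x * R \<ge> norm x * (2 * \<bar>C\<bar> / norm x + 1)" using R1(3) nx by (intro mult_left_mono) auto
      also have "norm x * (2 * \<bar>C\<bar> / norm x + 1) = 2 * \<bar>C\<bar> + norm x" using nx by (simp add: field_simps)
      finally show ?thesis using nx by linarith
    qed
    then show ?thesis using R1(2) by (simp add: field_simps)
  qed
  finally show False by simp
qed

definition Gw :: "(complex \<Rightarrow> complex) \<Rightarrow> complex \<Rightarrow> complex" where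
  "Gw F w = F (1 / w) / w ^ 2"

lemma residue_inf_Gw: "residue_inf F = - residue (Gw F) 0"
  by (simp add: residue_inf_def Gw_def[abs_def])

lemma inv_circlepath: "(\<lambda>w. 1 / w) \<circ> circlepath 0 (1 / R) = reversepath (circlepath 0 R)"
proof
  fix t
  have "exp (2 * of_real pi * \<i> * of_real (1 - t)) = exp (2 * of_real pi * \<i> - 2 * of_real pi * \<i> * of_real t)"
    by (simp add: algebra_simps)
  also have "\<dots> = exp (2 * of_real pi * \<i>) / exp (2 * of_real pi * \<i> * of_real t)" by (rule exp_diff)
  finally have e: "exp (2 * of_real pi * \<i> * of_real (1 - t)) = 1 / exp (2 * of_real pi * \<i> * of_real t)" by simp
  show "((\<lambda>w. 1 / w) \<circ> circlepath 0 (1 / R)) t = reversepath (circlepath 0 R) t"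
    by (simp only: o_def circlepath reversepath_def e) (simp add: field_simps)
qed

lemma res_inf_formula:
  assumes F: "F holomorphic_on {z. norm z > R1}" and R1: "R1 > 0" and R: "R > R1"
  shows "residue_inf F = - (1 / (2 * pi * \<i>)) * contour_integral (circlepath 0 R) F"
proof -
  define \<epsilon> where "\<epsilon> = 1 / R"
  have \<epsilon>: "\<epsilon> > 0" "\<epsilon> < 1 / R1" using R R1 by (auto simp: \<epsilon>_def field_simps)
  have Gh: "Gw F holomorphic_on (ball 0 (1 / R1) - {0})"
  proof -
    have "(\<lambda>w::complex. 1 / w) ` (ball 0 (1 / R1) - {0}) \<subseteq> {z. norm z > R1}"
    proof
      fix y :: complex assume "y \<in> (\<lambda>w. 1 / w) ` (ball 0 (1 / R1) - {0})"
      then obtain w :: complex where w0: "w \<in> ball 0 (1 / R1) - {0}" "y = 1 / w" by blast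
      then have w: "y = 1 / w" "norm w < 1 / R1" "w \<noteq> 0" by auto
      have "norm y = 1 / norm w" using w by (simp add: norm_divide)
      moreover have "R1 < 1 / norm w" using w R1 by (simp add: field_simps)
      ultimately show "y \<in> {z. norm z > R1}" by simp
    qed
    then have "(F \<circ> (\<lambda>w. 1 / w)) holomorphic_on (ball 0 (1 / R1) - {0})"
      by (intro holomorphic_on_compose holomorphic_on_subset[OF F]) (auto intro!: holomorphic_intros)
    then show ?thesis unfolding Gw_def[abs_def] by (auto intro!: holomorphic_intros simp: o_def)
  qed
  have base: "(Gw F has_contour_integral 2 * pi * \<i> * residue (Gw F) 0) (circlepath 0 \<epsilon>)"
    by (rule base_residue[OF _ _ \<epsilon>(1) Gh]) (use \<epsilon> R1 in auto)
  have an: "(\<lambda>w::complex. 1 / w) analytic_on (- {0})"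
    by (subst analytic_on_open) (auto intro!: holomorphic_intros)
  have pim: "path_image (circlepath 0 \<epsilon>) \<subseteq> - {0}" using \<epsilon> by auto
  have "contour_integral ((\<lambda>w. 1 / w) \<circ> circlepath 0 \<epsilon>) F
      = contour_integral (circlepath 0 \<epsilon>) (\<lambda>w. deriv (\<lambda>w. 1 / w) w * F (1 / w))"
    by (rule contour_integral_comp_analyticW[OF an _ pim]) simp
  also have "\<dots> = contour_integral (circlepath 0 \<epsilon>) (\<lambda>w. - Gw F w)"
  proof (rule contour_integral_eq)
    fix w assume "w \<in> path_image (circlepath 0 \<epsilon>)"
    then have w: "w \<noteq> 0" using \<epsilon> by auto
    have "deriv (\<lambda>w. 1 / w) w = - 1 / w ^ 2"
      using w by (intro DERIV_imp_deriv) (auto intro!: derivative_eq_intros simp: power2_eq_square field_simps)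
    then show "deriv (\<lambda>w. 1 / w) w * F (1 / w) = - Gw F w" by (simp add: Gw_def)
  qed
  also have "\<dots> = - contour_integral (circlepath 0 \<epsilon>) (Gw F)" by (rule contour_integral_neg)
  finally have eq1: "contour_integral ((\<lambda>w. 1 / w) \<circ> circlepath 0 \<epsilon>) F = - contour_integral (circlepath 0 \<epsilon>) (Gw F)" .
  have "contour_integral ((\<lambda>w. 1 / w) \<circ> circlepath 0 \<epsilon>) F = - contour_integral (circlepath 0 R) F"
    unfolding \<epsilon>_def inv_circlepath by (rule contour_integral_reversepath) simp
  with eq1 have "contour_integral (circlepath 0 \<epsilon>) (Gw F) = contour_integral (circlepath 0 R) F" by simp
  moreover have "contour_integral (circlepath 0 \<epsilon>) (Gw F) = 2 * pi * \<i> * residue (Gw F) 0"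
    using base by (rule contour_integral_unique)
  ultimately show ?thesis by (simp add: residue_inf_Gw field_simps)
qed

lemma open_far: "open {z::complex. norm z > R}"
  by (intro open_Collect_less continuous_intros)

lemma res_inf_decay2:
  assumes F: "F holomorphic_on {z. norm z > R1}" and R1: "R1 > 0" and d: "decay 2 F"
  shows "residue_inf F = 0"
proof -
  obtain B C where B: "B \<ge> 1" "\<And>z. norm z \<ge> B \<Longrightarrow> norm (F z) \<le> C / norm z ^ 2"
    using decay_ev_bound'[OF d] by auto
  have "norm (residue_inf F) \<le> \<bar>C\<bar> / R" if R: "R \<ge> max B (R1 + 1)" for R
  proof -
    have RR: "R > R1" "R \<ge> B" "R > 0" using R R1 B by auto
    have cont: "continuous_on (sphere 0 R) F"
      by (rule continuous_on_subset[OF holomorphic_on_imp_continuous_on[OF F]]) (use RR in auto)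
    have "norm (contour_integral (circlepath 0 R) F) \<le> \<bar>C\<bar> / R ^ 2 * (2 * pi * R)"
    proof (rule circ_bound[OF cont RR(3)])
      fix p :: complex assume "p \<in> sphere 0 R"
      then have "norm p = R" by simp
      then show "norm (F p) \<le> \<bar>C\<bar> / R ^ 2" using B(2)[of p] RR
        by (smt (verit) divide_right_mono zero_le_power2)
    qed simp
    also have "\<dots> = 2 * pi * (\<bar>C\<bar> / R)" using RR by (simp add: power2_eq_square field_simps)
    finally have bd: "norm (contour_integral (circlepath 0 R) F) \<le> 2 * pi * (\<bar>C\<bar> / R)" .
    have "norm (residue_inf F) = norm (contour_integral (circlepath 0 R) F) / (2 * pi)"
      unfolding res_inf_formula[OF F R1 RR(1)] by (simp add: norm_mult norm_divide)
    also have "\<dots> \<le> (2 * pi * (\<bar>C\<bar> / R)) / (2 * pi)" using bd by (rule divide_right_mono) simp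
    also have "\<dots> = \<bar>C\<bar> / R" by simp
    finally show ?thesis .
  qed
  then show ?thesis by (intro const_small_zero[where B = "max B (R1 + 1)" and C = "\<bar>C\<bar>"]) auto
qed

lemma res_inf_add:
  assumes F: "F holomorphic_on {z. norm z > R1}" and G: "G holomorphic_on {z. norm z > R1}" and R1: "R1 > 0"
  shows "residue_inf (\<lambda>z. F z + G z) = residue_inf F + residue_inf G"
proof -
  have R: "R1 + 1 > R1" by simp
  have sub: "sphere 0 (R1 + 1) \<subseteq> {z. norm z > R1}" by auto
  have iF: "F contour_integrable_on circlepath 0 (R1 + 1)"
    using holomorphic_on_imp_continuous_on[OF F] sub R1 by (intro contint_circ) (auto elim: continuous_on_subset)
  have iG: "G contour_integrable_on circlepath 0 (R1 + 1)"
    using holomorphic_on_imp_continuous_on[OF G] sub R1 by (intro contint_circ) (auto elim: continuous_on_subset)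
  have FG: "(\<lambda>z. F z + G z) holomorphic_on {z. norm z > R1}" using F G by (intro holomorphic_intros)
  show ?thesis
    unfolding res_inf_formula[OF F R1 R] res_inf_formula[OF G R1 R] res_inf_formula[OF FG R1 R]
      contour_integral_add[OF iF iG] by (simp add: algebra_simps)
qed

lemma res_bounded_zero:
  assumes e: "e > 0" and f: "f holomorphic_on (ball p e - {p})"
    and B: "\<And>z. z \<in> ball p e - {p} \<Longrightarrow> norm (f z) \<le> B"
  shows "residue f p = 0"
proof -
  have "norm (residue f p) \<le> \<bar>B\<bar> / R" if R: "R \<ge> 2 / e" for R
  proof -
    have Rp: "R > 0" using R e by (smt (verit) divide_pos_pos)
    define \<epsilon> where "\<epsilon> = 1 / R"
    have \<epsilon>: "\<epsilon> > 0" "\<epsilon> < e" using R Rp e by (auto simp: \<epsilon>_def field_simps)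
    have base: "(f has_contour_integral 2 * pi * \<i> * residue f p) (circlepath p \<epsilon>)"
      by (rule base_residue[OF _ _ \<epsilon>(1) f]) (use \<epsilon> in auto)
    have "norm (2 * pi * \<i> * residue f p) \<le> \<bar>B\<bar> * (2 * pi * \<epsilon>)"
      by (rule has_contour_integral_bound_circlepath[OF base]) (use \<epsilon> B in \<open>auto simp: dist_norm norm_minus_commute intro: order_trans[OF _ abs_ge_self]\<close>)
    then show ?thesis using Rp by (simp add: norm_mult \<epsilon>_def field_simps)
  qed
  then show ?thesis by (intro const_small_zero[where B = "2 / e" and C = "\<bar>B\<bar>"]) auto
qed

lemma res_circle:
  assumes f: "f holomorphic_on (ball a (\<rho> + e) - {p})" and e: "e > 0" and p: "dist a p < \<rho>"
  shows "contour_integral (circlepath a \<rho>) f = 2 * pi * \<i> * residue f p"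
proof -
  have \<rho>: "\<rho> > 0" using p by (smt (verit) zero_le_dist)
  have "contour_integral (circlepath a \<rho>) f = 2 * pi * \<i> * (\<Sum>q\<in>{p}. winding_number (circlepath a \<rho>) q * residue f q)"
  proof (rule Residue_theorem[OF open_ball connected_ball finite.insertI[OF finite.emptyI] f])
    show "path_image (circlepath a \<rho>) \<subseteq> ball a (\<rho> + e) - {p}" using \<rho> e p by auto
    show "\<forall>z. z \<notin> ball a (\<rho> + e) \<longrightarrow> winding_number (circlepath a \<rho>) z = 0"
      using \<rho> e by (auto intro!: winding_circ_out)
  qed auto
  then show ?thesis using winding_circ_in[OF p] by simp
qed

context disks begin

lemma I_lin:
  assumes f: "continuous_on S f" and g: "continuous_on S g"
  shows "Ifun (\<lambda>x. k1 * f x + k2 * g x) = k1 * Ifun f + k2 * Ifun g"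
proof -
  have ci: "contour_integral (circlepath (c s) (r s)) (\<lambda>x. k1 * f x + k2 * g x)
      = k1 * contour_integral (circlepath (c s) (r s)) f + k2 * contour_integral (circlepath (c s) (r s)) g"
    if s: "s \<in> {1..m}" for s
  proof -
    have rs: "r s > 0" using rpos s by auto
    have fs: "continuous_on (sphere (c s) (r s)) f" "continuous_on (sphere (c s) (r s)) g"
      using f g sphere_sub_S[OF s] continuous_on_subset by blast+
    have i1: "f contour_integrable_on (circlepath (c s) (r s))" using fs(1) rs by (rule contint_circ)
    have i2: "g contour_integrable_on (circlepath (c s) (r s))" using fs(2) rs by (rule contint_circ)
    have "contour_integral (circlepath (c s) (r s)) (\<lambda>x. k1 * f x + k2 * g x)
        = contour_integral (circlepath (c s) (r s)) (\<lambda>x. k1 * f x) + contour_integral (circlepath (c s) (r s)) (\<lambda>x. k2 * g x)"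
      using i1 i2 by (intro contour_integral_add contour_integrable_lmul)
    also have "\<dots> = k1 * contour_integral (circlepath (c s) (r s)) f + k2 * contour_integral (circlepath (c s) (r s)) g"
      by (simp only: contour_integral_lmul[OF i1] contour_integral_lmul[OF i2])
    finally show ?thesis .
  qed
  show ?thesis unfolding Ifun_def by (simp add: ci sum.distrib sum_distrib_left)
qed

lemma I_PP_zero:
  assumes W: "open W" "S \<subseteq> W" "DI \<subseteq> W" and h: "h holomorphic_on W"
  shows "Ifun h = 0"
proof -
  have "contour_integral (circlepath (c s) (r s)) h = 0" if s: "s \<in> {1..m}" for s
  proof (rule contour_integral_unique[OF Cauchy_theorem_global[OF W(1) h]])
    have rs: "r s > 0" using rpos s by auto
    show "path_image (circlepath (c s) (r s)) \<subseteq> W" using sphere_sub_S[OF s] W rs by auto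
    show "winding_number (circlepath (c s) (r s)) w = 0" if "w \<notin> W" for w
    proof -
      have "w \<notin> S" "w \<notin> DI" using that W by auto
      then have "dist (c s) w > r s" using s sphere_sub_S[OF s] ball_sub_DI[OF s] by force
      then show ?thesis using rs by (intro winding_circ_out) auto
    qed
  qed auto
  then show ?thesis by (simp add: Ifun_def)
qed

lemma I_PP:
  assumes f: "f \<in> HG" and g: "g \<in> HG"
  shows "Ifun (\<lambda>x. PP f x * PP g x) = 0"
proof -
  obtain W1 where W1: "open W1" "S \<subseteq> W1" "PP f holomorphic_on (W1 \<union> DI)" using P_holo_big[OF f] by metis
  obtain W2 where W2: "open W2" "S \<subseteq> W2" "PP g holomorphic_on (W2 \<union> DI)" using P_holo_big[OF g] by metis
  have hol: "(\<lambda>x. PP f x * PP g x) holomorphic_on ((W1 \<inter> W2) \<union> DI)"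
    using W1(3) W2(3) by (intro holomorphic_on_mult) (auto elim: holomorphic_on_subset)
  show ?thesis by (rule I_PP_zero[OF _ _ _ hol]) (use W1 W2 open_DI in auto)
qed

lemma cs_expand:
  assumes h: "continuous_on S h" and z: "z \<notin> S"
  shows "z * cauchy_sum c r m h z = cauchy_sum c r m (\<lambda>p. p * h p) z - (1 / (2 * pi * \<i>)) * Ifun h"
proof -
  have "z * cint (c s) (r s) h z = cint (c s) (r s) (\<lambda>p. p * h p) z - contour_integral (circlepath (c s) (r s)) h"
    if s: "s \<in> {1..m}" for s
  proof -
    have hs: "continuous_on (sphere (c s) (r s)) h" using continuous_on_subset[OF h sphere_sub_S[OF s]] .
    have zs: "z \<notin> sphere (c s) (r s)" using z sphere_sub_S[OF s] by blast
    show ?thesis using cint_expand[OF hs rpos[OF s] zs] .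
  qed
  then have "z * (\<Sum>s\<in>{1..m}. cint (c s) (r s) h z) = (\<Sum>s\<in>{1..m}. cint (c s) (r s) (\<lambda>p. p * h p) z) - Ifun h"
    by (simp add: sum_distrib_left Ifun_def sum_subtractf)
  note Z = this
  have "z * ((1 / (2 * pi * \<i>)) * (\<Sum>s\<in>{1..m}. cint (c s) (r s) h z)) = (1 / (2 * pi * \<i>)) * (z * (\<Sum>s\<in>{1..m}. cint (c s) (r s) h z))"
    by (rule mult.left_commute)
  also have "\<dots> = (1 / (2 * pi * \<i>)) * ((\<Sum>s\<in>{1..m}. cint (c s) (r s) (\<lambda>p. p * h p) z) - Ifun h)" by (simp only: Z)
  also have "\<dots> = (1 / (2 * pi * \<i>)) * (\<Sum>s\<in>{1..m}. cint (c s) (r s) (\<lambda>p. p * h p) z) - (1 / (2 * pi * \<i>)) * Ifun h"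
    by (rule right_diff_distrib)
  finally show ?thesis unfolding cauchy_sum_eq .
qed

lemma I_NN:
  assumes f: "f \<in> HG" and g: "g \<in> HG"
  shows "Ifun (\<lambda>x. NN f x * NN g x) = 0"
proof -
  define h where "h = (\<lambda>x. NN f x * NN g x)"
  have hG: "h \<in> HG" unfolding h_def by (intro HG_mult HG_N f g)
  have hc: "continuous_on S h" using HG_cont[OF hG] .
  have hpc: "continuous_on S (\<lambda>p. p * h p)" using hc by (intro continuous_intros)
  have dh: "decay 2 h" unfolding h_def using decay_mult[OF N_decay[OF f] N_decay[OF g]] by (simp add: numeral_2_eq_2)
  have ev: "eventually (\<lambda>z. (1 / (2 * pi * \<i>)) * Ifun h = cauchy_sum c r m (\<lambda>p. p * h p) z + z * h z) at_infinity"
    using ev_norm_ge[of R0]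
  proof eventually_elim
    case (elim z)
    then have zDE: "z \<in> DE" by (rule far_DE)
    then have zS: "z \<notin> S" using S_DE by blast
    have "PP h z = 0" unfolding h_def by (rule PP_NN[OF f g])
    then have "cauchy_sum c r m h z = - h z" using zDE by (simp add: plus_DE eq_neg_iff_add_eq_0)
    then show ?case using cs_expand[OF hc zS] by (simp add: algebra_simps)
  qed
  have "((\<lambda>z. cauchy_sum c r m (\<lambda>p. p * h p) z + z * h z) \<longlongrightarrow> 0 + 0) at_infinity"
    using cauchy_sum_tendsto[OF hpc] decay_tendsto[OF decay_zmul[of 1 h]] dh
    by (intro tendsto_add) (auto simp: numeral_2_eq_2)
  then have T: "((\<lambda>z. cauchy_sum c r m (\<lambda>p. p * h p) z + z * h z) \<longlongrightarrow> 0) at_infinity" by simp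
  have E: "eventually (\<lambda>z. cauchy_sum c r m (\<lambda>p. p * h p) z + z * h z = (1 / (2 * pi * \<i>)) * Ifun h) at_infinity"
    using ev by (rule eventually_mono) (rule sym)
  note L = Lim_transform_eventually[OF T E]
  have "(1 / (2 * pi * \<i>)) * Ifun h = 0"
    using L by (subst (asm) tendsto_const_iff) (simp_all add: trivial_limit_at_infinity)
  then show ?thesis by (simp add: h_def)
qed

end

context disks begin

definition sP :: "(complex \<Rightarrow> complex) \<times> (complex \<Rightarrow> complex) \<Rightarrow> complex \<Rightarrow> complex" where
  "sP X = (\<lambda>z. fst X z + snd X z)"

definition tP :: "(complex \<Rightarrow> complex) \<Rightarrow> (complex \<Rightarrow> complex) \<Rightarrow> (complex \<Rightarrow> complex) \<times> (complex \<Rightarrow> complex) \<Rightarrow> complex \<Rightarrow> complex" where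
  "tP a ah X = (\<lambda>z. fst X z * deriv a z + snd X z * deriv ah z)"

definition goodP :: "(complex \<Rightarrow> complex) \<times> (complex \<Rightarrow> complex) \<Rightarrow> bool" where
  "goodP X \<longleftrightarrow> fst X \<in> HG \<and> snd X \<in> HG"

lemma N_lin:
  assumes "f \<in> HG" "g \<in> HG"
  shows "NN (\<lambda>x. k1 * f x + k2 * g x) z = k1 * NN f z + k2 * NN g z"
proof -
  have h: "(\<lambda>x. k1 * f x + k2 * g x) \<in> HG" using assms by (intro HG_add HG_cmult)
  have "NN (\<lambda>x. k1 * f x + k2 * g x) z = (k1 * f z + k2 * g z) - PP (\<lambda>x. k1 * f x + k2 * g x) z"
    using N_eq[OF h] by simp
  also have "\<dots> = k1 * (f z - PP f z) + k2 * (g z - PP g z)"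
    unfolding P_lin[OF assms] by (simp add: algebra_simps)
  also have "\<dots> = k1 * NN f z + k2 * NN g z" using N_eq[OF assms(1)] N_eq[OF assms(2)] by simp
  finally show ?thesis .
qed

lemma N_add: "f \<in> HG \<Longrightarrow> g \<in> HG \<Longrightarrow> NN (\<lambda>x. f x + g x) z = NN f z + NN g z"
  using N_lin[of f g 1 1] by simp

lemma N_diff: "f \<in> HG \<Longrightarrow> g \<in> HG \<Longrightarrow> NN (\<lambda>x. f x - g x) z = NN f z - NN g z"
  using N_lin[of f g 1 "-1"] by simp

lemma P_eqN: "h \<in> HG \<Longrightarrow> PP h z = h z - NN h z"
  using N_eq by simp

context
  fixes a ah :: "complex \<Rightarrow> complex"
  assumes \<alpha>: "deriv a \<in> HG" and \<beta>: "deriv ah \<in> HG"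
begin

lemma HG_tP: "goodP X \<Longrightarrow> tP a ah X \<in> HG"
  unfolding tP_def goodP_def using \<alpha> \<beta> by (intro HG_add HG_mult) auto

lemma HG_sP: "goodP X \<Longrightarrow> sP X \<in> HG"
  unfolding sP_def goodP_def by (intro HG_add) auto

lemma N_tP: "goodP X \<Longrightarrow> NN (tP a ah X) z = NN (\<lambda>z. fst X z * deriv a z) z + NN (\<lambda>z. snd X z * deriv ah z) z"
  unfolding tP_def goodP_def using \<alpha> \<beta> by (intro N_add HG_mult) auto

lemma prod_fst:
  assumes X: "goodP X" and Y: "goodP Y"
  shows "fst (prodH c r m a ah X Y) z
    = fst X z * fst Y z * deriv a z - fst Y z * NN (tP a ah X) z - fst X z * NN (tP a ah Y) z"
proof -
  have x: "fst X \<in> HG" "snd X \<in> HG" and y: "fst Y \<in> HG" "snd Y \<in> HG" using X Y by (auto simp: goodP_def)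
  have "PP (\<lambda>z. fst X z * deriv a z) z = fst X z * deriv a z - NN (\<lambda>z. fst X z * deriv a z) z"
    using x \<alpha> by (intro P_eqN HG_mult)
  note 1 = this
  have "fst (prodH c r m a ah X Y) z = fst Y z * PP (\<lambda>z. fst X z * deriv a z) z - fst X z * NN (\<lambda>z. fst Y z * deriv a z) z
      - fst Y z * NN (\<lambda>z. snd X z * deriv ah z) z - fst X z * NN (\<lambda>z. snd Y z * deriv ah z) z"
    by (simp add: prodH_def Let_def)
  then show ?thesis unfolding 1 N_tP[OF X, of z] N_tP[OF Y, of z] by (simp add: algebra_simps)
qed

lemma prod_snd:
  assumes X: "goodP X" and Y: "goodP Y"
  shows "snd (prodH c r m a ah X Y) z
    = (fst X z * snd Y z + snd X z * fst Y z) * deriv a z + snd X z * snd Y z * deriv ah z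
      - snd Y z * NN (tP a ah X) z - snd X z * NN (tP a ah Y) z"
proof -
  have x: "fst X \<in> HG" "snd X \<in> HG" and y: "fst Y \<in> HG" "snd Y \<in> HG" using X Y by (auto simp: goodP_def)
  have 1: "PP (\<lambda>z. fst X z * deriv a z) z = fst X z * deriv a z - NN (\<lambda>z. fst X z * deriv a z) z"
    using x \<alpha> by (intro P_eqN HG_mult)
  have 2: "PP (\<lambda>z. fst Y z * deriv a z) z = fst Y z * deriv a z - NN (\<lambda>z. fst Y z * deriv a z) z"
    using y \<alpha> by (intro P_eqN HG_mult)
  have 3: "PP (\<lambda>z. snd X z * deriv ah z) z = snd X z * deriv ah z - NN (\<lambda>z. snd X z * deriv ah z) z"
    using x \<beta> by (intro P_eqN HG_mult)
  have "snd (prodH c r m a ah X Y) z = snd Y z * PP (\<lambda>z. snd X z * deriv ah z) z - snd X z * NN (\<lambda>z. snd Y z * deriv ah z) z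
      + snd X z * PP (\<lambda>z. fst Y z * deriv a z) z + snd Y z * PP (\<lambda>z. fst X z * deriv a z) z"
    by (simp add: prodH_def Let_def)
  then show ?thesis unfolding 1 2 3 N_tP[OF X, of z] N_tP[OF Y, of z] by (simp add: algebra_simps)
qed

lemma prod_fst_fun:
  assumes "goodP X" "goodP Y"
  shows "fst (prodH c r m a ah X Y)
    = (\<lambda>z. fst X z * fst Y z * deriv a z - fst Y z * NN (tP a ah X) z - fst X z * NN (tP a ah Y) z)"
  using prod_fst[OF assms] by (intro ext) simp

lemma prod_snd_fun:
  assumes "goodP X" "goodP Y"
  shows "snd (prodH c r m a ah X Y)
    = (\<lambda>z. (fst X z * snd Y z + snd X z * fst Y z) * deriv a z + snd X z * snd Y z * deriv ah z
      - snd Y z * NN (tP a ah X) z - snd X z * NN (tP a ah Y) z)"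
  using prod_snd[OF assms] by (intro ext) simp

lemma goodP_prod:
  assumes X: "goodP X" and Y: "goodP Y" shows "goodP (prodH c r m a ah X Y)"
proof -
  have x: "fst X \<in> HG" "snd X \<in> HG" and y: "fst Y \<in> HG" "snd Y \<in> HG" using X Y by (auto simp: goodP_def)
  have nx: "NN (tP a ah X) \<in> HG" and ny: "NN (tP a ah Y) \<in> HG" using HG_N HG_tP X Y by auto
  show ?thesis unfolding goodP_def prod_fst_fun[OF X Y] prod_snd_fun[OF X Y]
    using x y nx ny \<alpha> \<beta> by (auto intro!: HG_add HG_mult HG_diff)
qed

lemma tP_prod:
  assumes X: "goodP X" and Y: "goodP Y"
  shows "tP a ah (prodH c r m a ah X Y) z
    = PP (tP a ah X) z * PP (tP a ah Y) z - NN (tP a ah X) z * NN (tP a ah Y) z"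
proof -
  have tapp: "tP a ah W z = fst W z * deriv a z + snd W z * deriv ah z" for W by (simp add: tP_def)
  show ?thesis unfolding P_eqN[OF HG_tP[OF X], of z] P_eqN[OF HG_tP[OF Y], of z] tapp
    prod_fst[OF X Y] prod_snd[OF X Y] by (simp add: algebra_simps)
qed

lemma N_tP_prod:
  assumes X: "goodP X" and Y: "goodP Y"
  shows "NN (tP a ah (prodH c r m a ah X Y)) z = - (NN (tP a ah X) z * NN (tP a ah Y) z)"
proof -
  have tx: "tP a ah X \<in> HG" and ty: "tP a ah Y \<in> HG" using HG_tP X Y by auto
  have eq: "tP a ah (prodH c r m a ah X Y) = (\<lambda>z. PP (tP a ah X) z * PP (tP a ah Y) z - NN (tP a ah X) z * NN (tP a ah Y) z)"
    using tP_prod[OF X Y] by (intro ext) simp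
  have "NN (\<lambda>z. PP (tP a ah X) z * PP (tP a ah Y) z - NN (tP a ah X) z * NN (tP a ah Y) z) z
      = NN (\<lambda>z. PP (tP a ah X) z * PP (tP a ah Y) z) z - NN (\<lambda>z. NN (tP a ah X) z * NN (tP a ah Y) z) z"
    using tx ty by (intro N_diff HG_mult HG_P HG_N)
  also have "\<dots> = - (NN (tP a ah X) z * NN (tP a ah Y) z)"
    using NN_PP[OF tx ty] NN_NN[OF tx ty] by simp
  finally show ?thesis unfolding eq .
qed

lemma prod_comm:
  assumes X: "goodP X" and Y: "goodP Y"
  shows "prodH c r m a ah X Y = prodH c r m a ah Y X"
proof (rule prod_eqI)
  show "fst (prodH c r m a ah X Y) = fst (prodH c r m a ah Y X)"
    unfolding prod_fst_fun[OF X Y] prod_fst_fun[OF Y X] by (intro ext) (simp add: algebra_simps)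
  show "snd (prodH c r m a ah X Y) = snd (prodH c r m a ah Y X)"
    unfolding prod_snd_fun[OF X Y] prod_snd_fun[OF Y X] by (intro ext) (simp add: algebra_simps)
qed

lemma prod_assoc:
  assumes X: "goodP X" and Y: "goodP Y" and Z: "goodP Z"
  shows "prodH c r m a ah (prodH c r m a ah X Y) Z = prodH c r m a ah X (prodH c r m a ah Y Z)"
proof -
  have XY: "goodP (prodH c r m a ah X Y)" and YZ: "goodP (prodH c r m a ah Y Z)"
    using goodP_prod X Y Z by auto
  show ?thesis
  proof (rule prod_eqI)
    show "fst (prodH c r m a ah (prodH c r m a ah X Y) Z) = fst (prodH c r m a ah X (prodH c r m a ah Y Z))"
      unfolding prod_fst_fun[OF XY Z] prod_fst_fun[OF X YZ]
      by (intro ext) (simp add: N_tP_prod[OF X Y] N_tP_prod[OF Y Z] prod_fst[OF X Y] prod_fst[OF Y Z] algebra_simps)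
    show "snd (prodH c r m a ah (prodH c r m a ah X Y) Z) = snd (prodH c r m a ah X (prodH c r m a ah Y Z))"
      unfolding prod_snd_fun[OF XY Z] prod_snd_fun[OF X YZ]
      by (intro ext) (simp add: N_tP_prod[OF X Y] N_tP_prod[OF Y Z] prod_fst[OF X Y] prod_fst[OF Y Z]
          prod_snd[OF X Y] prod_snd[OF Y Z] algebra_simps)
  qed
qed

end
end

lemma decay_sum:
  assumes "finite A" "\<And>s. s \<in> A \<Longrightarrow> decay k (f s)"
  shows "decay k (\<lambda>z. \<Sum>s\<in>A. f s z)"
  using assms
proof (induction A rule: finite_induct)
  case empty then show ?case by (auto simp: decay_def intro!: exI[of _ 0])
next
  case (insert x F)
  then show ?case using decay_add[of k "f x" "\<lambda>z. \<Sum>s\<in>F. f s z"] by simp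
qed

lemma decay_cmult: "decay k f \<Longrightarrow> decay k (\<lambda>z. K * f z)"
  by (rule decay_bounded_mult[where B = "norm K"]) auto

lemma decay_bounded: assumes "decay 0 f" obtains B where "eventually (\<lambda>z. norm (f z) \<le> B) at_infinity"
  using assms by (auto simp: decay_def)

context disks begin

lemma plus_entire:
  assumes W: "open W" "S \<subseteq> W" "DE \<subseteq> W" and h: "h holomorphic_on W"
  shows "PP h holomorphic_on UNIV"
proof -
  obtain V where V: "open V" "S \<subseteq> V" "V \<subseteq> W" "PP h holomorphic_on V"
    using PN_near[OF W(1,2) h] by metis
  have hc: "continuous_on S h"
    using holomorphic_on_imp_continuous_on[OF h] W(2) continuous_on_subset by blast
  have "PP h holomorphic_on (V \<union> DI \<union> DE)"
    using V hc plus_holo_DI[OF hc] plus_holo_DE[OF hc holomorphic_on_subset[OF h W(3)]] open_DI open_DE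
    by (intro holomorphic_on_Un) auto
  then show ?thesis using UNIV_cover[OF V(2)] by simp
qed

lemma res_inf_I:
  assumes W: "open W" "S \<subseteq> W" "DE \<subseteq> W" and h: "h holomorphic_on W"
  shows "residue_inf h = - (1 / (2 * pi * \<i>)) * Ifun h"
proof -
  have hG: "h \<in> HG" unfolding HG_iff using W h by blast
  have hc: "continuous_on S h" using HG_cont[OF hG] .
  have hpc: "continuous_on S (\<lambda>p. p * h p)" using hc by (intro continuous_intros)
  have Pent: "PP h holomorphic_on UNIV" by (rule plus_entire[OF W h])
  have farsub: "{z. norm z > R0} \<subseteq> DE" using far_DE by force
  have hfar: "h holomorphic_on {z. norm z > R0}" by (rule holomorphic_on_subset[OF h]) (use W(3) farsub in auto)
  have R0p: "R0 > 0" using R0_pos by simp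
  define Q where "Q z = cauchy_sum c r m (\<lambda>p. p * h p) z / z" for z
  have dQ: "decay 2 Q" unfolding Q_def using decay_divz[OF cauchy_sum_decay[OF hpc]] by (simp add: numeral_2_eq_2)
  obtain B C where CB: "B \<ge> 1" "\<And>z. norm z \<ge> B \<Longrightarrow> norm (Q z) \<le> C / norm z ^ 2"
    using decay_ev_bound'[OF dQ] by auto
  have main: "norm (- (2 * pi * \<i>) * residue_inf h - Ifun h) \<le> 2 * pi * \<bar>C\<bar> / R"
    if R: "R \<ge> max B (R0 + 1)" for R
  proof -
    have RR: "R > R0" "R \<ge> B" "R > 0" using R R0p CB(1) by auto
    have sphDE: "sphere 0 R \<subseteq> DE" using farsub RR by auto
    have sphS: "z \<notin> S" if "z \<in> sphere 0 R" for z using that sphDE S_DE by blast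
    have res: "residue_inf h = - (1 / (2 * pi * \<i>)) * contour_integral (circlepath 0 R) h"
      by (rule res_inf_formula[OF hfar R0p RR(1)])
    have contP: "continuous_on (sphere 0 R) (PP h)"
      using holomorphic_on_imp_continuous_on[OF Pent] by (rule continuous_on_subset) auto
    have conth: "continuous_on (sphere 0 R) h"
      by (rule continuous_on_subset[OF holomorphic_on_imp_continuous_on[OF h]]) (use sphDE W(3) in auto)
    have contN: "continuous_on (sphere 0 R) (NN h)"
    proof -
      have "continuous_on (sphere 0 R) (\<lambda>z. h z - PP h z)" using conth contP by (intro continuous_intros)
      then show ?thesis using N_eq[OF hG] by simp
    qed
    have iP: "PP h contour_integrable_on circlepath 0 R" using contP RR(3) by (rule contint_circ)
    have iN: "NN h contour_integrable_on circlepath 0 R" using contN RR(3) by (rule contint_circ)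
    have "contour_integral (circlepath 0 R) h = contour_integral (circlepath 0 R) (\<lambda>z. PP h z + NN h z)"
      using N_eq[OF hG] by simp
    also have "\<dots> = contour_integral (circlepath 0 R) (PP h) + contour_integral (circlepath 0 R) (NN h)"
      by (rule contour_integral_add[OF iP iN])
    also have "contour_integral (circlepath 0 R) (PP h) = 0"
      by (rule contour_integral_unique[OF Cauchy_theorem_convex_simple[OF Pent]]) auto
    also have "contour_integral (circlepath 0 R) (NN h)
        = contour_integral (circlepath 0 R) (\<lambda>z. (1 / (2 * pi * \<i>)) * Ifun h * (1 / (z - 0)) - Q z)"
    proof (rule contour_integral_eq)
      fix z assume "z \<in> path_image (circlepath 0 R)"
      then have z: "z \<in> sphere 0 R" using RR by simp
      then have zne: "z \<noteq> 0" using RR by auto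
      have "NN h z = - cauchy_sum c r m h z" using sphDE z by (auto simp: minus_DE)
      moreover have "z * cauchy_sum c r m h z = cauchy_sum c r m (\<lambda>p. p * h p) z - (1 / (2 * pi * \<i>)) * Ifun h"
        by (rule cs_expand[OF hc sphS[OF z]])
      ultimately show "NN h z = (1 / (2 * pi * \<i>)) * Ifun h * (1 / (z - 0)) - Q z"
        using zne unfolding Q_def by (simp add: field_simps)
    qed
    also have "\<dots> = contour_integral (circlepath 0 R) (\<lambda>z. (1 / (2 * pi * \<i>)) * Ifun h * (1 / (z - 0))) - contour_integral (circlepath 0 R) Q"
    proof (rule contour_integral_diff)
      show "(\<lambda>z. (1 / (2 * pi * \<i>)) * Ifun h * (1 / (z - 0))) contour_integrable_on circlepath 0 R"
        using RR by (intro contint_circ continuous_intros) auto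
      have "continuous_on (sphere 0 R) (cauchy_sum c r m (\<lambda>p. p * h p))"
        by (rule continuous_on_subset[OF holomorphic_on_imp_continuous_on[OF cauchy_sum_holo[OF hpc]]]) (use sphS in blast)
      then show "Q contour_integrable_on circlepath 0 R"
        unfolding Q_def[abs_def] using RR by (intro contint_circ continuous_intros) auto
    qed
    also have "contour_integral (circlepath 0 R) (\<lambda>z. (1 / (2 * pi * \<i>)) * Ifun h * (1 / (z - 0))) = Ifun h"
    proof -
      have "contour_integral (circlepath 0 R) (\<lambda>z. (1 / (2 * pi * \<i>)) * Ifun h * (1 / (z - 0)))
          = (1 / (2 * pi * \<i>)) * Ifun h * contour_integral (circlepath 0 R) (\<lambda>z. 1 / (z - 0))"
        by (rule contour_integral_lmul) (use RR in \<open>intro contint_circ continuous_intros, auto\<close>)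
      also have "contour_integral (circlepath 0 R) (\<lambda>z. 1 / (z - 0)) = 2 * pi * \<i>"
        using contour_integral_inv_circ[of 0 0 R] RR by simp
      finally show ?thesis by simp
    qed
    finally have eq: "contour_integral (circlepath 0 R) h = Ifun h - contour_integral (circlepath 0 R) Q" by simp
    have "- (2 * pi * \<i>) * residue_inf h = contour_integral (circlepath 0 R) h" unfolding res by simp
    then have "- (2 * pi * \<i>) * residue_inf h - Ifun h = - contour_integral (circlepath 0 R) Q" using eq by simp
    then have nq: "norm (- (2 * pi * \<i>) * residue_inf h - Ifun h) = norm (contour_integral (circlepath 0 R) Q)"
      by (simp only: norm_minus_cancel)
    moreover have "norm (contour_integral (circlepath 0 R) Q) \<le> \<bar>C\<bar> / R ^ 2 * (2 * pi * R)"
    proof (rule circ_bound)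
      have "continuous_on (sphere 0 R) (cauchy_sum c r m (\<lambda>p. p * h p))"
        by (rule continuous_on_subset[OF holomorphic_on_imp_continuous_on[OF cauchy_sum_holo[OF hpc]]]) (use sphS in blast)
      then show "continuous_on (sphere 0 R) Q" unfolding Q_def[abs_def] using RR by (intro continuous_intros) auto
      fix p :: complex assume "p \<in> sphere 0 R"
      then have "norm p = R" by simp
      then show "norm (Q p) \<le> \<bar>C\<bar> / R ^ 2" using CB(2)[of p] RR
        by (smt (verit) divide_right_mono zero_le_power2)
    qed (use RR in auto)
    ultimately have "norm (- (2 * pi * \<i>) * residue_inf h - Ifun h) \<le> \<bar>C\<bar> / R ^ 2 * (2 * pi * R)" by simp
    also have "\<dots> = 2 * pi * \<bar>C\<bar> / R" using RR by (simp add: power2_eq_square field_simps)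
    finally show ?thesis .
  qed
  have "- (2 * pi * \<i>) * residue_inf h - Ifun h = 0"
    by (rule const_small_zero[where B = "max B (R0 + 1)" and C = "2 * pi * \<bar>C\<bar>"]) (use main in auto)
  then have "- (2 * pi * \<i>) * residue_inf h = Ifun h" by (simp only: right_minus_eq)
  then have "Ifun h = - ((2 * pi * \<i>) * residue_inf h)" by simp
  then show ?thesis by simp
qed

lemma cs_deriv:
  assumes h: "continuous_on S h" and z: "z \<notin> S"
  shows "(cauchy_sum c r m h has_field_derivative
     (1 / (2 * pi * \<i>)) * (\<Sum>s\<in>{1..m}. contour_integral (circlepath (c s) (r s)) (\<lambda>p. h p / (p - z) ^ 2))) (at z)"
proof -
  have "((\<lambda>z. (1 / (2 * pi * \<i>)) * (\<Sum>s\<in>{1..m}. cint (c s) (r s) h z)) has_field_derivative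
     (1 / (2 * pi * \<i>)) * (\<Sum>s\<in>{1..m}. contour_integral (circlepath (c s) (r s)) (\<lambda>p. h p / (p - z) ^ 2))) (at z)"
  proof (intro DERIV_cmult DERIV_sum)
    fix s assume s: "s \<in> {1..m}"
    show "((\<lambda>x. cint (c s) (r s) h x) has_field_derivative contour_integral (circlepath (c s) (r s)) (\<lambda>p. h p / (p - z) ^ 2)) (at z)"
    proof -
      have "dist (c s) z \<noteq> r s" using z sphere_sub_S[OF s] by auto
      then show ?thesis using cint_deriv[of "c s" "r s" h z] continuous_on_subset[OF h sphere_sub_S[OF s]] rpos[OF s]
        by auto
    qed
  qed
  then show ?thesis unfolding cauchy_sum_eq[abs_def] .
qed

lemma deriv_cs_decay:
  assumes h: "continuous_on S h" shows "decay 2 (deriv (cauchy_sum c r m h))"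
proof -
  have "decay 2 (\<lambda>z. (1 / (2 * pi * \<i>)) * (\<Sum>s\<in>{1..m}. contour_integral (circlepath (c s) (r s)) (\<lambda>p. h p / (p - z) ^ 2)))"
    by (intro decay_cmult decay_sum cint_decay_k[OF h]) auto
  moreover have "eventually (\<lambda>z. (1 / (2 * pi * \<i>)) * (\<Sum>s\<in>{1..m}. contour_integral (circlepath (c s) (r s)) (\<lambda>p. h p / (p - z) ^ 2))
      = deriv (cauchy_sum c r m h) z) at_infinity"
    using ev_norm_ge[of R0]
  proof eventually_elim
    case (elim z)
    then have "z \<notin> S" using far_DE S_DE by blast
    then show ?case by (rule DERIV_imp_deriv[OF cs_deriv[OF h], symmetric])
  qed
  ultimately show ?thesis by (rule decay_cong)
qed

lemma a_deriv_lower: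
  fixes a :: "complex \<Rightarrow> complex" and N :: nat
  assumes hol: "a holomorphic_on DE" and N: "N \<ge> 1"
    and gr: "eventually (\<lambda>z. norm (a z - z ^ N) \<le> C * norm z powr (real N - 2)) at_infinity"
  shows "eventually (\<lambda>z. norm (deriv a z) \<ge> 1 / 2) at_infinity"
proof -
  obtain B where B: "\<And>z. norm z \<ge> B \<Longrightarrow> norm (a z - z ^ N) \<le> C * norm z powr (real N - 2)"
    using gr by (auto simp: eventually_at_infinity)
  define g where "g z = a z - z ^ N" for z
  have gh: "g holomorphic_on DE" unfolding g_def using hol by (intro holomorphic_intros)
  define K where "K = 8 * \<bar>C\<bar> * (3 / 2) ^ N"
  have K0: "K \<ge> 0" by (simp add: K_def)
  define Z0 where "Z0 = max (2 * B) (max (2 * R0) (2 * K + 1))"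
  have "eventually (\<lambda>z::complex. norm z \<ge> Z0) at_infinity" by (rule ev_norm_ge)
  then show ?thesis
  proof eventually_elim
    case (elim z)
    define x where "x = norm z"
    have x: "x \<ge> 2 * B" "x \<ge> 2 * R0" "x \<ge> 2 * K + 1" using elim by (auto simp: x_def Z0_def)
    have x1: "x \<ge> 1" using x K0 by linarith
    have xR: "x / 2 \<ge> R0" using x by simp
    define \<rho> where "\<rho> = x / 2"
    have \<rho>: "\<rho> > 0" using x1 by (simp add: \<rho>_def)
    have cb: "cball z \<rho> \<subseteq> DE"
    proof
      fix w assume "w \<in> cball z \<rho>"
      then have "norm (z - w) \<le> \<rho>" by (simp add: dist_norm)
      moreover have "norm z - norm (z - w) \<le> norm w" using norm_triangle_sub[of z w] by linarith
      ultimately have "norm w \<ge> R0" using xR unfolding \<rho>_def x_def by linarith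
      then show "w \<in> DE" by (rule far_DE)
    qed
    have bnd: "norm (g w) \<le> \<bar>C\<bar> * (3 / 2) ^ N * 4 * x ^ N / x ^ 2" if w: "norm (z - w) = \<rho>" for w
    proof -
      have w1: "norm w \<ge> x / 2" "norm w \<le> 3 * x / 2"
      proof -
        have "norm z - norm (z - w) \<le> norm w" using norm_triangle_sub[of z w] by linarith
        moreover have "norm w \<le> norm z + norm (z - w)" using norm_triangle_sub[of w z] norm_minus_commute[of w z] by linarith
        ultimately show "norm w \<ge> x / 2" "norm w \<le> 3 * x / 2" using w unfolding \<rho>_def x_def by auto
      qed
      have wpos: "norm w > 0" using w1 x1 by linarith
      have "norm (g w) \<le> C * norm w powr (real N - 2)" unfolding g_def
        by (rule B) (use w1 x in linarith)
      also have "norm w powr (real N - 2) = norm w ^ N / norm w ^ 2"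
        using wpos by (simp add: powr_diff powr_realpow)
      also have "C * (norm w ^ N / norm w ^ 2) \<le> \<bar>C\<bar> * (norm w ^ N / norm w ^ 2)"
        by (intro mult_right_mono) auto
      also have "\<dots> \<le> \<bar>C\<bar> * ((3 * x / 2) ^ N / (x / 2) ^ 2)"
      proof (rule mult_left_mono)
        show "norm w ^ N / norm w ^ 2 \<le> (3 * x / 2) ^ N / (x / 2) ^ 2"
          using w1 wpos x1 by (intro frac_le power_mono) auto
      qed auto
      also have "\<dots> = \<bar>C\<bar> * (3 / 2) ^ N * 4 * x ^ N / x ^ 2"
        by (simp add: power_divide power_mult_distrib field_simps)
      finally show ?thesis .
    qed
    have gd: "norm (deriv g z) \<le> K * x ^ N / x ^ 3"
    proof -
      have "norm ((deriv ^^ 1) g z) \<le> fact 1 * (\<bar>C\<bar> * (3 / 2) ^ N * 4 * x ^ N / x ^ 2) / \<rho> ^ 1"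
      proof (rule Cauchy_inequality)
        show "g holomorphic_on ball z \<rho>" by (rule holomorphic_on_subset[OF gh]) (use cb in auto)
        show "continuous_on (cball z \<rho>) g" using holomorphic_on_imp_continuous_on[OF gh] cb by (rule continuous_on_subset)
      qed (use \<rho> bnd in auto)
      then show ?thesis by (simp add: K_def \<rho>_def power_numeral_reduce field_simps)
    qed
    have zDE: "z \<in> DE" using cb \<rho> by auto
    have "deriv a z = deriv g z + of_nat N * z ^ (N - 1)"
    proof -
      have "a = (\<lambda>w. g w + w ^ N)" by (simp add: g_def)
      moreover have "g field_differentiable at z"
        using gh open_DE zDE holomorphic_on_imp_differentiable_at by blast
      moreover have "(\<lambda>w. w ^ N) field_differentiable at z" by (intro derivative_intros)
      ultimately have "deriv a z = deriv g z + deriv (\<lambda>w. w ^ N) z" by (simp add: deriv_add)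
      moreover have "deriv (\<lambda>w. w ^ N) z = of_nat N * z ^ (N - 1)"
      proof (rule DERIV_imp_deriv)
        show "((\<lambda>w. w ^ N) has_field_derivative of_nat N * z ^ (N - 1)) (at z)"
          by (auto intro!: derivative_eq_intros)
      qed
      ultimately show ?thesis by simp
    qed
    then have "norm (deriv a z) \<ge> norm (of_nat N * z ^ (N - 1)) - norm (deriv g z)"
      using norm_diff_ineq[of "of_nat N * z ^ (N - 1)" "deriv g z"] by (simp add: add.commute)
    moreover have "norm (of_nat N * z ^ (N - 1)) = N * x ^ (N - 1)" by (simp add: norm_mult norm_power x_def)
    moreover have "K * x ^ N / x ^ 3 \<le> (1 / 2) * x ^ (N - 1)"
    proof -
      have xN: "x ^ N = x ^ (N - 1) * x" using N by (cases N) auto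
      have "K * x ^ N / x ^ 3 = (K / x ^ 2) * x ^ (N - 1)" using x1 unfolding xN by (simp add: power_numeral_reduce field_simps)
      also have "K / x ^ 2 \<le> 1 / 2"
      proof -
        have "x ^ 2 \<ge> x" using x1 by (simp add: power2_eq_square)
        then have "x ^ 2 \<ge> 2 * K" using x by linarith
        then show ?thesis using x1 by (simp add: field_simps)
      qed
      then have "(K / x ^ 2) * x ^ (N - 1) \<le> (1 / 2) * x ^ (N - 1)" using x1 by (intro mult_right_mono) auto
      finally show ?thesis .
    qed
    moreover have "x ^ (N - 1) \<ge> 1" using x1 by (simp add: one_le_power)
    moreover have "real N \<ge> 1" using N by simp
    ultimately show ?case using gd
    proof -
      assume a1: "norm (of_nat N * z ^ (N - 1)) - norm (deriv g z) \<le> norm (deriv a z)"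
        and a2: "norm (of_nat N * z ^ (N - 1)) = N * x ^ (N - 1)"
        and a3: "K * x ^ N / x ^ 3 \<le> (1 / 2) * x ^ (N - 1)" and a4: "x ^ (N - 1) \<ge> 1"
        and a5: "real N \<ge> 1" and a6: "norm (deriv g z) \<le> K * x ^ N / x ^ 3"
      have "N * x ^ (N - 1) \<ge> 1 * x ^ (N - 1)" using a5 a4 by (intro mult_right_mono) auto
      then show "norm (deriv a z) \<ge> 1 / 2" using a1 a2 a3 a4 a6 by linarith
    qed
  qed
qed

end

lemma pole_alg:
  fixes w D G :: complex
  assumes "w \<noteq> 0"
  shows "w ^ Suc (Suc k) * ((D * w ^ Suc k - G * (of_nat (Suc k) * w ^ (Suc k - 1))) / (w ^ Suc k * w ^ Suc k))
    = w * D - of_nat (Suc k) * G"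
  using assms by (simp add: field_simps)

lemma pole_deriv_limit:
  fixes ah :: "complex \<Rightarrow> complex" and \<phi> L :: complex and n :: nat
  assumes e: "e > 0" and hol: "ah holomorphic_on (ball \<phi> e - {\<phi>})" and n: "n \<ge> 1"
    and lim: "((\<lambda>z. (z - \<phi>) ^ n * ah z) \<longlongrightarrow> L) (at \<phi>)"
  shows "((\<lambda>z. (z - \<phi>) ^ Suc n * deriv ah z) \<longlongrightarrow> - (of_nat n * L)) (at \<phi>)"
proof -
  define g where "g z = (if z = \<phi> then L else (z - \<phi>) ^ n * ah z)" for z
  have gh0: "g holomorphic_on (ball \<phi> e - {\<phi>})"
  proof (rule holomorphic_transform)
    show "(\<lambda>z. (z - \<phi>) ^ n * ah z) holomorphic_on (ball \<phi> e - {\<phi>})" using hol by (intro holomorphic_intros)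
  qed (simp add: g_def)
  have gc: "continuous_on (ball \<phi> e) g"
  proof (subst continuous_on_eq_continuous_at, simp, intro ballI)
    fix z assume z: "z \<in> ball \<phi> e"
    show "isCont g z"
    proof (cases "z = \<phi>")
      case True
      have "(g \<longlongrightarrow> L) (at \<phi>)"
        using lim by (rule Lim_transform_eventually) (auto simp: g_def eventually_at_filter)
      then show ?thesis using True by (simp add: isCont_def g_def)
    next
      case False
      have op: "open (ball \<phi> e - {\<phi>})" by auto
      have "z \<in> ball \<phi> e - {\<phi>}" using z False by auto
      then show ?thesis using holomorphic_on_imp_continuous_on[OF gh0] op
        by (simp add: continuous_on_eq_continuous_at)
    qed
  qed
  have gh: "g holomorphic_on ball \<phi> e"
    by (rule no_isolated_singularity[where K = "{\<phi>}"]) (use gc gh0 in auto)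
  have dgc: "isCont (deriv g) \<phi>"
    using holomorphic_deriv[OF gh] e by (intro continuous_on_interior[OF holomorphic_on_imp_continuous_on]) auto
  have gphi: "isCont g \<phi>" using gc e by (simp add: continuous_on_eq_continuous_at)
  obtain k where k: "n = Suc k" using n by (cases n) auto
  have key: "(z - \<phi>) ^ Suc n * deriv ah z = (z - \<phi>) * deriv g z - of_nat n * g z"
    if z: "z \<in> ball \<phi> e - {\<phi>}" for z
  proof -
    have zp: "z - \<phi> \<noteq> 0" using z by auto
    have op: "open (ball \<phi> e - {\<phi>})" by auto
    have gd: "(g has_field_derivative deriv g z) (at z)"
      using gh z by (auto intro!: holomorphic_derivI[of _ "ball \<phi> e"])
    have pd: "((\<lambda>w. (w - \<phi>) ^ n) has_field_derivative of_nat n * (z - \<phi>) ^ (n - 1)) (at z)"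
      by (auto intro!: derivative_eq_intros)
    have qd: "((\<lambda>w. g w / (w - \<phi>) ^ n) has_field_derivative
        (deriv g z * (z - \<phi>) ^ n - g z * (of_nat n * (z - \<phi>) ^ (n - 1))) / ((z - \<phi>) ^ n * (z - \<phi>) ^ n)) (at z)"
      using DERIV_divide[OF gd pd] zp by simp
    have ahd: "(ah has_field_derivative
        (deriv g z * (z - \<phi>) ^ n - g z * (of_nat n * (z - \<phi>) ^ (n - 1))) / ((z - \<phi>) ^ n * (z - \<phi>) ^ n)) (at z)"
    proof (rule has_field_derivative_transform_within_open[OF qd op z])
      fix w assume "w \<in> ball \<phi> e - {\<phi>}"
      then show "g w / (w - \<phi>) ^ n = ah w" by (auto simp: g_def)
    qed
    then have "deriv ah z = (deriv g z * (z - \<phi>) ^ n - g z * (of_nat n * (z - \<phi>) ^ (n - 1))) / ((z - \<phi>) ^ n * (z - \<phi>) ^ n)"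
      by (rule DERIV_imp_deriv)
    then show ?thesis using pole_alg[OF zp, of k "deriv g z" "g z"] unfolding k by simp
  qed
  have "((\<lambda>z. (z - \<phi>) * deriv g z - of_nat n * g z) \<longlongrightarrow> (\<phi> - \<phi>) * deriv g \<phi> - of_nat n * g \<phi>) (at \<phi>)"
    using dgc gphi by (intro tendsto_intros) (auto simp: isCont_def)
  then have "((\<lambda>z. (z - \<phi>) * deriv g z - of_nat n * g z) \<longlongrightarrow> - (of_nat n * L)) (at \<phi>)"
    by (simp add: g_def)
  moreover have "eventually (\<lambda>z. (z - \<phi>) * deriv g z - of_nat n * g z = (z - \<phi>) ^ Suc n * deriv ah z) (at \<phi>)"
    unfolding eventually_at using e key by (intro exI[of _ e]) (auto simp: dist_commute)
  ultimately show ?thesis by (rule Lim_transform_eventually)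
qed

lemma res_inf_cong:
  assumes F: "F holomorphic_on {z. norm z > R1}" and G: "G holomorphic_on {z. norm z > R1}" and R1: "R1 > 0"
    and eq: "\<And>z. norm z > R1 \<Longrightarrow> F z = G z"
  shows "residue_inf F = residue_inf G"
proof -
  have R: "R1 + 1 > R1" by simp
  have "contour_integral (circlepath 0 (R1 + 1)) F = contour_integral (circlepath 0 (R1 + 1)) G"
    by (rule contour_integral_eq) (use R1 eq in auto)
  then show ?thesis unfolding res_inf_formula[OF F R1 R] res_inf_formula[OF G R1 R] by simp
qed

context disks begin

lemma minus_holo_sub:
  assumes "continuous_on S h" "h holomorphic_on T" "T \<subseteq> DI" "open T"
  shows "NN h holomorphic_on T"
proof -
  have "(\<lambda>z. - cauchy_sum c r m h z + h z) holomorphic_on T"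
  proof -
    have "T \<subseteq> - S" using assms(3) S_DI by blast
    then show ?thesis using holomorphic_on_subset[OF cauchy_sum_holo[OF assms(1)]] assms(2)
      by (intro holomorphic_intros) blast+
  qed
  then show ?thesis by (rule holomorphic_transform) (use assms(3) in \<open>auto simp: minus_DI\<close>)
qed

end

locale mdata = disks +
  fixes a ah :: "complex \<Rightarrow> complex" and phi :: "nat \<Rightarrow> complex" and nn :: "nat \<Rightarrow> nat" and U0 :: "complex set"
  assumes U0: "open U0" "circles c r m \<subseteq> U0"
    and a_hol: "a holomorphic_on (U0 \<union> Dext c r m)"
    and ah_hol: "ah holomorphic_on ((U0 \<union> Dint c r m) - phi ` {1..m})"
    and n0: "nn 0 \<ge> 1"
    and growth: "\<exists>C. eventually (\<lambda>z. norm (a z - z ^ nn 0) \<le> C * norm z powr (real (nn 0) - 2)) at_infinity"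
    and phi_in: "\<And>j. j \<in> {1..m} \<Longrightarrow> phi j \<in> ball (c j) (r j)"
    and nj: "\<And>j. j \<in> {1..m} \<Longrightarrow> nn j \<ge> 1"
    and pole: "\<And>j. j \<in> {1..m} \<Longrightarrow> \<exists>L. L \<noteq> 0 \<and> ((\<lambda>z. (z - phi j) ^ nn j * ah z) \<longlongrightarrow> L) (at (phi j))"
    and zeta_nz: "\<And>z. z \<in> circles c r m \<Longrightarrow> deriv a z - deriv ah z \<noteq> 0"
begin

abbreviation "PH \<equiv> phi ` {1..m}"
abbreviation "\<alpha> \<equiv> deriv a"
abbreviation "\<beta> \<equiv> deriv ah"
definition "Oset = DE \<union> (DI - PH)"
definition "GG = (\<lambda>z. cauchy_sum c r m a z - cauchy_sum c r m ah z)"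
definition "ell = (\<lambda>z. PP a z + NN ah z)"

lemma PH_DI: "PH \<subseteq> DI" using phi_in ball_sub_DI by blast
lemma PH_closed: "closed PH" by (intro finite_imp_closed) auto
lemma PH_S: "PH \<inter> S = {}" using PH_DI S_DI by blast
lemma open_Oset: "open Oset" unfolding Oset_def using open_DE open_DI PH_closed by auto
lemma Oset_nS: "Oset \<subseteq> - S" unfolding Oset_def using S_DE S_DI by blast

lemma open_U1: "open (U0 - PH)" using U0(1) PH_closed by auto
lemma S_U1: "S \<subseteq> U0 - PH" using U0(2) PH_S by blast

lemma a_HG: "a \<in> HG"
  unfolding HG_iff using U0 a_hol by (intro exI[of _ U0]) (auto elim: holomorphic_on_subset)
lemma ah_HG: "ah \<in> HG"
  unfolding HG_iff using open_U1 S_U1 ah_hol by (intro exI[of _ "U0 - PH"]) (auto elim: holomorphic_on_subset)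

lemma open_U0DE: "open (U0 \<union> DE)" using U0(1) open_DE by auto
lemma open_U0DI: "open ((U0 \<union> DI) - PH)" using U0(1) open_DI PH_closed by auto

lemma alpha_hol: "\<alpha> holomorphic_on (U0 \<union> DE)"
  using holomorphic_deriv[OF a_hol open_U0DE] .
lemma beta_hol: "\<beta> holomorphic_on ((U0 \<union> DI) - PH)"
  using holomorphic_deriv[OF ah_hol open_U0DI] .

lemma alpha_HG: "\<alpha> \<in> HG"
  unfolding HG_iff using U0 alpha_hol by (intro exI[of _ U0]) (auto elim: holomorphic_on_subset)
lemma beta_HG: "\<beta> \<in> HG"
  unfolding HG_iff using open_U1 S_U1 beta_hol by (intro exI[of _ "U0 - PH"]) (auto elim: holomorphic_on_subset)

lemma a_cont: "continuous_on S a" using HG_cont[OF a_HG] .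
lemma ah_cont: "continuous_on S ah" using HG_cont[OF ah_HG] .

lemma GG_hol: "GG holomorphic_on (- S)"
  unfolding GG_def using cauchy_sum_holo[OF a_cont] cauchy_sum_holo[OF ah_cont] by (intro holomorphic_intros)

lemma dGG_hol: "deriv GG holomorphic_on (- S)"
  using holomorphic_deriv[OF GG_hol open_nS] .

lemma GG_diff: "z \<notin> S \<Longrightarrow> GG field_differentiable at z"
  using GG_hol open_nS holomorphic_on_imp_differentiable_at by blast

lemma dGG_decay: "decay 2 (deriv GG)"
proof -
  have "decay 2 (\<lambda>z. deriv (cauchy_sum c r m a) z + (- deriv (cauchy_sum c r m ah) z))"
    by (intro decay_add decay_uminus deriv_cs_decay a_cont ah_cont)
  moreover have "eventually (\<lambda>z. deriv (cauchy_sum c r m a) z + (- deriv (cauchy_sum c r m ah) z) = deriv GG z) at_infinity"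
    using ev_norm_ge[of R0]
  proof eventually_elim
    case (elim z)
    then have z: "z \<notin> S" using far_DE S_DE by blast
    have "cauchy_sum c r m a field_differentiable at z" "cauchy_sum c r m ah field_differentiable at z"
      using cauchy_sum_holo[OF a_cont] cauchy_sum_holo[OF ah_cont] open_nS z holomorphic_on_imp_differentiable_at by blast+
    then show ?case unfolding GG_def by simp
  qed
  ultimately show ?thesis by (rule decay_cong)
qed

lemma ell_DE: "z \<in> DE \<Longrightarrow> ell z = a z + GG z"
  by (simp add: ell_def GG_def plus_DE minus_DE)
lemma ell_DI: "z \<in> DI \<Longrightarrow> ell z = ah z + GG z"
  by (simp add: ell_def GG_def plus_DI minus_DI)

lemma dell_DE:
  assumes z: "z \<in> DE" shows "deriv ell z = \<alpha> z + deriv GG z"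
proof -
  have "deriv ell z = deriv (\<lambda>w. a w + GG w) z"
    by (rule deriv_cong_ev) (use z open_DE in \<open>auto simp: eventually_nhds ell_DE intro!: exI[of _ DE]\<close>)
  also have "\<dots> = \<alpha> z + deriv GG z"
  proof (rule deriv_add)
    show "a field_differentiable at z" using a_hol open_U0DE z holomorphic_on_imp_differentiable_at by blast
    show "GG field_differentiable at z" using GG_diff z S_DE by blast
  qed
  finally show ?thesis .
qed

lemma dell_DI:
  assumes z: "z \<in> DI - PH" shows "deriv ell z = \<beta> z + deriv GG z"
proof -
  have op: "open (DI - PH)" using open_DI PH_closed by auto
  have "deriv ell z = deriv (\<lambda>w. ah w + GG w) z"
    by (rule deriv_cong_ev) (use z op in \<open>auto simp: eventually_nhds ell_DI intro!: exI[of _ "DI - PH"]\<close>)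
  also have "\<dots> = \<beta> z + deriv GG z"
  proof (rule deriv_add)
    show "ah field_differentiable at z" using ah_hol open_U0DI z holomorphic_on_imp_differentiable_at by blast
    show "GG field_differentiable at z" using GG_diff z S_DI by blast
  qed
  finally show ?thesis .
qed

lemma ell_hol: "ell holomorphic_on Oset"
proof -
  have "ell holomorphic_on DE"
  proof (rule holomorphic_transform[of "\<lambda>z. a z + GG z"])
    show "(\<lambda>z. a z + GG z) holomorphic_on DE"
      using a_hol GG_hol S_DE by (intro holomorphic_intros) (auto elim: holomorphic_on_subset)
  qed (simp add: ell_DE)
  moreover have "ell holomorphic_on (DI - PH)"
  proof (rule holomorphic_transform[of "\<lambda>z. ah z + GG z"])
    show "(\<lambda>z. ah z + GG z) holomorphic_on (DI - PH)"
      using ah_hol GG_hol S_DI by (intro holomorphic_intros) (auto elim: holomorphic_on_subset)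
  qed (simp add: ell_DI)
  ultimately show ?thesis unfolding Oset_def using open_DE open_DI PH_closed
    by (intro holomorphic_on_Un) auto
qed

lemma dell_hol: "deriv ell holomorphic_on Oset"
  using holomorphic_deriv[OF ell_hol open_Oset] .

lemma eta_fst: "fst (eta c r m a ah X) = (\<lambda>z. \<alpha> z * NN (sP X) z - NN (tP a ah X) z)"
  by (simp add: eta_def Let_def sP_def tP_def)
lemma eta_snd: "snd (eta c r m a ah X) = (\<lambda>z. - \<beta> z * PP (sP X) z + PP (tP a ah X) z)"
  by (simp add: eta_def Let_def sP_def tP_def)

lemma goodP_eta:
  assumes X: "goodP X" shows "goodP (eta c r m a ah X)"
  unfolding goodP_def eta_fst eta_snd
  using HG_sP[OF alpha_HG beta_HG X] HG_tP[OF alpha_HG beta_HG X] alpha_HG beta_HG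
  by (auto intro!: HG_add HG_mult HG_diff HG_uminus HG_N HG_P)

definition "dl X = (\<lambda>z. PP (fst (eta c r m a ah X)) z + NN (snd (eta c r m a ah X)) z)"
definition "Rf X = (\<lambda>z. cauchy_sum c r m (\<lambda>z. fst (eta c r m a ah X) z - snd (eta c r m a ah X) z) z
    + cauchy_sum c r m (tP a ah X) z + deriv GG z * cauchy_sum c r m (sP X) z)"
definition "cc X = cauchy_sum c r m (sP X)"

lemma dl_eq:
  assumes X: "goodP X" and z: "z \<in> Oset"
  shows "dl X z = Rf X z - deriv ell z * cc X z"
proof -
  have sG: "sP X \<in> HG" and tG: "tP a ah X \<in> HG" using HG_sP[OF alpha_HG beta_HG X] HG_tP[OF alpha_HG beta_HG X] by auto
  have eG: "goodP (eta c r m a ah X)" using goodP_eta[OF X] .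
  have f1: "continuous_on S (fst (eta c r m a ah X))" "continuous_on S (snd (eta c r m a ah X))"
    using eG HG_cont by (auto simp: goodP_def)
  have zS: "z \<notin> S" using z Oset_nS by blast
  have lin: "cauchy_sum c r m (\<lambda>x. fst (eta c r m a ah X) x - snd (eta c r m a ah X) x) z
     = cauchy_sum c r m (fst (eta c r m a ah X)) z - cauchy_sum c r m (snd (eta c r m a ah X)) z"
    using cs_lin[OF f1 zS, of 1 "-1"] by simp
  consider "z \<in> DE" | "z \<in> DI - PH" using z unfolding Oset_def by blast
  then show ?thesis
  proof cases
    case 1
    have "dl X z = cauchy_sum c r m (fst (eta c r m a ah X)) z + fst (eta c r m a ah X) z - cauchy_sum c r m (snd (eta c r m a ah X)) z"
      using 1 by (simp add: dl_def plus_DE minus_DE)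
    also have "fst (eta c r m a ah X) z = \<alpha> z * (- cc X z) + cauchy_sum c r m (tP a ah X) z"
      using 1 by (simp add: eta_fst minus_DE cc_def)
    finally show ?thesis using 1 unfolding Rf_def lin dell_DE[OF 1] by (simp add: algebra_simps cc_def)
  next
    case 2
    then have zDI: "z \<in> DI" by blast
    have "dl X z = cauchy_sum c r m (fst (eta c r m a ah X)) z - cauchy_sum c r m (snd (eta c r m a ah X)) z + snd (eta c r m a ah X) z"
      using zDI by (simp add: dl_def plus_DI minus_DI)
    also have "snd (eta c r m a ah X) z = - \<beta> z * cc X z + cauchy_sum c r m (tP a ah X) z"
      using zDI by (simp add: eta_snd plus_DI cc_def)
    finally show ?thesis using 2 unfolding Rf_def lin dell_DI[OF 2] by (simp add: algebra_simps cc_def)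
  qed
qed

lemma cc_hol: "goodP X \<Longrightarrow> cc X holomorphic_on (- S)"
  unfolding cc_def using HG_sP[OF alpha_HG beta_HG] HG_cont by (intro cauchy_sum_holo) blast

lemma Rf_hol: assumes X: "goodP X" shows "Rf X holomorphic_on (- S)"
proof -
  have eG: "goodP (eta c r m a ah X)" using goodP_eta[OF X] .
  have c1: "continuous_on S (\<lambda>z. fst (eta c r m a ah X) z - snd (eta c r m a ah X) z)"
    using eG HG_cont by (auto simp: goodP_def intro!: continuous_intros)
  have c2: "continuous_on S (tP a ah X)" using HG_tP[OF alpha_HG beta_HG X] HG_cont by blast
  show ?thesis unfolding Rf_def using cauchy_sum_holo[OF c1] cauchy_sum_holo[OF c2] dGG_hol cc_hol[OF X]
    unfolding cc_def by (intro holomorphic_on_add holomorphic_on_mult) auto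
qed

lemma dl_hol: assumes X: "goodP X" shows "dl X holomorphic_on Oset"
proof -
  have eG: "goodP (eta c r m a ah X)" using goodP_eta[OF X] .
  have sG: "sP X \<in> HG" and tG: "tP a ah X \<in> HG" using HG_sP[OF alpha_HG beta_HG X] HG_tP[OF alpha_HG beta_HG X] by auto
  have fc: "continuous_on S (fst (eta c r m a ah X))" and sc: "continuous_on S (snd (eta c r m a ah X))"
    using eG HG_cont by (auto simp: goodP_def)
  have aDE: "\<alpha> holomorphic_on DE" using alpha_hol by (rule holomorphic_on_subset) auto
  have bDI: "\<beta> holomorphic_on (DI - PH)" using beta_hol by (rule holomorphic_on_subset) auto
  have pDI: "PP (sP X) holomorphic_on (DI - PH)" "PP (tP a ah X) holomorphic_on (DI - PH)"
    using plus_holo_DI[OF HG_cont[OF sG]] plus_holo_DI[OF HG_cont[OF tG]] by (auto elim: holomorphic_on_subset)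
  have fDE: "fst (eta c r m a ah X) holomorphic_on DE"
    unfolding eta_fst using aDE minus_holo_DE[OF HG_cont[OF sG]] minus_holo_DE[OF HG_cont[OF tG]]
    by (intro holomorphic_on_diff holomorphic_on_mult)
  have sDI: "snd (eta c r m a ah X) holomorphic_on (DI - PH)"
    unfolding eta_snd using bDI pDI
    by (intro holomorphic_on_add holomorphic_on_mult holomorphic_on_minus)
  have opDI: "open (DI - PH)" using open_DI PH_closed by auto
  have "PP (fst (eta c r m a ah X)) holomorphic_on DE" using plus_holo_DE[OF fc fDE] .
  moreover have "PP (fst (eta c r m a ah X)) holomorphic_on (DI - PH)"
    using plus_holo_DI[OF fc] by (rule holomorphic_on_subset) auto
  moreover have "NN (snd (eta c r m a ah X)) holomorphic_on DE" using minus_holo_DE[OF sc] .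
  moreover have "NN (snd (eta c r m a ah X)) holomorphic_on (DI - PH)"
    using minus_holo_sub[OF sc sDI _ opDI] by blast
  ultimately have "PP (fst (eta c r m a ah X)) holomorphic_on Oset" "NN (snd (eta c r m a ah X)) holomorphic_on Oset"
    unfolding Oset_def using open_DE opDI by (auto intro!: holomorphic_on_Un)
  then show ?thesis unfolding dl_def by (intro holomorphic_intros)
qed

definition "Fm X Y = (\<lambda>z. dl X z * dl Y z / deriv ell z)"
definition "Brest X Y = (\<lambda>z. deriv GG z * cc X z * cc Y z - cc X z * Rf Y z - cc Y z * Rf X z + Rf X z * Rf Y z / deriv ell z)"

lemma F_decomp:
  assumes X: "goodP X" and Y: "goodP Y" and z: "z \<in> Oset" and nz: "deriv ell z \<noteq> 0"
  shows "Fm X Y z = (deriv ell z - deriv GG z) * cc X z * cc Y z + Brest X Y z"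
  unfolding Fm_def Brest_def dl_eq[OF X z] dl_eq[OF Y z] using nz by (simp add: field_simps)

end

lemma cont_compact_bound:
  fixes f :: "complex \<Rightarrow> complex"
  assumes "continuous_on K f" "compact K"
  obtains M where "M \<ge> 0" "\<And>z. z \<in> K \<Longrightarrow> norm (f z) \<le> M"
proof -
  have "compact (f ` K)" using compact_continuous_image[OF assms] .
  then obtain B where "\<forall>x\<in>f ` K. norm x \<le> B" using compact_imp_bounded bounded_iff by metis
  then show ?thesis using that[of "max B 0"] by force
qed

context mdata begin

lemma claimA:
  assumes X: "goodP X" and Y: "goodP Y"
  shows "residue_inf (Fm X Y) = - (1 / (2 * pi * \<i>)) * Ifun (\<lambda>z. \<alpha> z * NN (sP X) z * NN (sP Y) z)"
proof -
  obtain C where gr: "eventually (\<lambda>z. norm (a z - z ^ nn 0) \<le> C * norm z powr (real (nn 0) - 2)) at_infinity"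
    using growth by blast
  have aDE: "a holomorphic_on DE" using a_hol by (rule holomorphic_on_subset) auto
  have al: "eventually (\<lambda>z. norm (\<alpha> z) \<ge> 1 / 2) at_infinity" by (rule a_deriv_lower[OF aDE n0 gr])
  have "((\<lambda>z. norm (deriv GG z)) \<longlongrightarrow> 0) at_infinity"
    using tendsto_norm[OF decay_tendsto[OF dGG_decay]] by simp
  then have gs: "eventually (\<lambda>z. norm (deriv GG z) < 1 / 4) at_infinity"
    by (rule order_tendstoD) simp
  have "eventually (\<lambda>z. z \<in> DE \<and> norm (deriv ell z) \<ge> 1 / 4 \<and> norm (deriv GG z) \<le> 1 / 4) at_infinity"
    using al gs ev_norm_ge[of R0]
  proof eventually_elim
    case (elim z)
    then have zDE: "z \<in> DE" using far_DE by blast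
    have "norm (deriv ell z) \<ge> norm (\<alpha> z) - norm (deriv GG z)"
      unfolding dell_DE[OF zDE] using norm_diff_ineq[of "\<alpha> z" "deriv GG z"] by simp
    then show ?case using elim zDE by auto
  qed
  then obtain B0 where B0: "\<And>z. norm z \<ge> B0 \<Longrightarrow> z \<in> DE \<and> norm (deriv ell z) \<ge> 1 / 4 \<and> norm (deriv GG z) \<le> 1 / 4"
    by (auto simp: eventually_at_infinity)
  define R1 where "R1 = max B0 1"
  have R1: "R1 > 0" by (simp add: R1_def)
  have far: "z \<in> DE" "deriv ell z \<noteq> 0" "norm (deriv ell z) \<ge> 1 / 4" if "norm z > R1" for z
    using B0[of z] that by (auto simp: R1_def)
  have farsub: "{z. norm z > R1} \<subseteq> DE" using far by blast
  have farO: "{z. norm z > R1} \<subseteq> Oset" using farsub by (auto simp: Oset_def)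
  have Fh: "Fm X Y holomorphic_on {z. norm z > R1}"
    unfolding Fm_def using dl_hol[OF X] dl_hol[OF Y] dell_hol farO far(2)
    by (intro holomorphic_on_divide holomorphic_on_mult) (auto elim: holomorphic_on_subset)
  define H1 where "H1 = (\<lambda>z. \<alpha> z * cc X z * cc Y z)"
  have H1h: "H1 holomorphic_on {z. norm z > R1}"
  proof -
    have "\<alpha> holomorphic_on {z. norm z > R1}" by (rule holomorphic_on_subset[OF alpha_hol]) (use farsub in auto)
    moreover have "cc X holomorphic_on {z. norm z > R1}" "cc Y holomorphic_on {z. norm z > R1}"
      using cc_hol[OF X] cc_hol[OF Y] farsub S_DE by (auto elim!: holomorphic_on_subset)
    ultimately show ?thesis unfolding H1_def by (intro holomorphic_on_mult)
  qed
  define B1 where "B1 = (\<lambda>z. Fm X Y z - H1 z)"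
  have B1h: "B1 holomorphic_on {z. norm z > R1}" unfolding B1_def using Fh H1h by (intro holomorphic_on_diff)
  have B1eq: "B1 z = Brest X Y z" if "norm z > R1" for z
  proof -
    have zO: "z \<in> Oset" using farO that by auto
    show ?thesis unfolding B1_def H1_def F_decomp[OF X Y zO far(2)[OF that]] dell_DE[OF far(1)[OF that]] by simp
  qed
  have Gb: "eventually (\<lambda>z. norm (deriv GG z) \<le> 1 / 4) at_infinity"
    using ev_norm_ge[of B0] by eventually_elim (use B0 in auto)
  have lb: "eventually (\<lambda>z. norm (1 / deriv ell z) \<le> 4) at_infinity"
    using ev_norm_ge[of B0]
  proof eventually_elim
    case (elim z)
    then have h: "norm (deriv ell z) \<ge> 1 / 4" using B0 by auto
    then have "norm (deriv ell z) > 0" by linarith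
    then show ?case using h by (simp add: norm_divide divide_le_eq)
  qed
  have sc: "continuous_on S (sP X)" "continuous_on S (sP Y)"
    using HG_sP[OF alpha_HG beta_HG X] HG_sP[OF alpha_HG beta_HG Y] HG_cont by auto
  have dcX: "decay 1 (cc X)" and dcY: "decay 1 (cc Y)" unfolding cc_def using sc cauchy_sum_decay by auto
  have dR: "decay 1 (Rf W)" if W: "goodP W" for W
  proof -
    have eG: "goodP (eta c r m a ah W)" using goodP_eta[OF W] .
    have c1: "continuous_on S (\<lambda>z. fst (eta c r m a ah W) z - snd (eta c r m a ah W) z)"
      using eG HG_cont by (auto simp: goodP_def intro!: continuous_intros)
    have c2: "continuous_on S (tP a ah W)" using HG_tP[OF alpha_HG beta_HG W] HG_cont by blast
    have c3: "continuous_on S (sP W)" using HG_sP[OF alpha_HG beta_HG W] HG_cont by blast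
    show ?thesis unfolding Rf_def
      by (intro decay_add cauchy_sum_decay c1 c2 decay_bounded_mult[OF cauchy_sum_decay[OF c3] Gb])
  qed
  have dB: "decay 2 (Brest X Y)"
  proof -
    have "decay 2 (\<lambda>z. ((deriv GG z * (cc X z * cc Y z) + - (cc X z * Rf Y z)) + - (cc Y z * Rf X z)) + (1 / deriv ell z) * (Rf X z * Rf Y z))"
    proof (intro decay_add decay_uminus)
      show "decay 2 (\<lambda>z. deriv GG z * (cc X z * cc Y z))"
        using decay_bounded_mult[OF decay_mult[OF dcX dcY] Gb] by (simp add: numeral_2_eq_2)
      show "decay 2 (\<lambda>z. cc X z * Rf Y z)" using decay_mult[OF dcX dR[OF Y]] by (simp add: numeral_2_eq_2)
      show "decay 2 (\<lambda>z. cc Y z * Rf X z)" using decay_mult[OF dcY dR[OF X]] by (simp add: numeral_2_eq_2)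
      show "decay 2 (\<lambda>z. 1 / deriv ell z * (Rf X z * Rf Y z))"
        using decay_bounded_mult[OF decay_mult[OF dR[OF X] dR[OF Y]] lb] by (simp add: numeral_2_eq_2)
    qed
    then show ?thesis unfolding Brest_def by (rule decay_cong) (simp add: algebra_simps)
  qed
  have dB1: "decay 2 B1"
    using dB by (rule decay_cong) (use ev_norm_ge[of "R1 + 1"] B1eq R1 in \<open>auto elim!: eventually_mono\<close>)
  have rB1: "residue_inf B1 = 0" by (rule res_inf_decay2[OF B1h R1 dB1])
  have "residue_inf (Fm X Y) = residue_inf (\<lambda>z. H1 z + B1 z)" by (simp add: B1_def)
  also have "\<dots> = residue_inf H1 + residue_inf B1" by (rule res_inf_add[OF H1h B1h R1])
  also have "\<dots> = residue_inf H1" using rB1 by simp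
  finally have r1: "residue_inf (Fm X Y) = residue_inf H1" .
  obtain W1 where W1: "open W1" "S \<subseteq> W1" "NN (sP X) holomorphic_on (W1 \<union> DE)"
    using P_holo_big[OF HG_sP[OF alpha_HG beta_HG X]] by metis
  obtain W2 where W2: "open W2" "S \<subseteq> W2" "NN (sP Y) holomorphic_on (W2 \<union> DE)"
    using P_holo_big[OF HG_sP[OF alpha_HG beta_HG Y]] by metis
  define H1' where "H1' = (\<lambda>z. \<alpha> z * NN (sP X) z * NN (sP Y) z)"
  have H1'h: "H1' holomorphic_on ((U0 \<inter> W1 \<inter> W2) \<union> DE)"
    unfolding H1'_def using alpha_hol W1(3) W2(3)
    by (intro holomorphic_on_mult) (auto elim!: holomorphic_on_subset)
  have "residue_inf H1 = residue_inf H1'"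
  proof (rule res_inf_cong[OF H1h _ R1])
    show "H1' holomorphic_on {z. norm z > R1}" by (rule holomorphic_on_subset[OF H1'h]) (use farsub in auto)
    fix z :: complex assume "norm z > R1"
    then have "z \<in> DE" using far by blast
    then show "H1 z = H1' z" by (simp add: H1_def H1'_def cc_def minus_DE)
  qed
  also have "\<dots> = - (1 / (2 * pi * \<i>)) * Ifun H1'"
    by (rule res_inf_I[OF _ _ _ H1'h]) (use U0 W1 W2 open_DE in auto)
  finally show ?thesis using r1 by (simp add: H1'_def)
qed

end

context mdata begin

lemma phi_other:
  assumes "j \<in> {1..m}" "k \<in> {1..m}" "k \<noteq> j" shows "phi k \<notin> ball (c j) (r j)"
proof
  assume "phi k \<in> ball (c j) (r j)"
  then have "phi k \<in> cball (c k) (r k) \<inter> cball (c j) (r j)" using phi_in[OF assms(2)] by auto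
  then show False using disj[OF assms(2,1,3)] by blast
qed

lemma claimB:
  assumes X: "goodP X" and Y: "goodP Y" and j: "j \<in> {1..m}"
  shows "residue (Fm X Y) (phi j) = (1 / (2 * pi * \<i>)) * contour_integral (circlepath (c j) (r j)) (\<lambda>z. \<beta> z * PP (sP X) z * PP (sP Y) z)"
proof -
  define \<phi> where "\<phi> = phi j"
  have \<phi>in: "\<phi> \<in> ball (c j) (r j)" using phi_in[OF j] by (simp add: \<phi>_def)
  obtain e0 where e0: "e0 > 0" "ball \<phi> e0 \<subseteq> ball (c j) (r j)"
    using \<phi>in open_ball openE by metis
  have punct: "ball \<phi> e0 - {\<phi>} \<subseteq> DI - PH"
  proof
    fix z assume z: "z \<in> ball \<phi> e0 - {\<phi>}"
    then have zb: "z \<in> ball (c j) (r j)" using e0 by auto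
    then have "z \<in> DI" using ball_sub_DI[OF j] by auto
    moreover have "z \<notin> PH"
    proof
      assume "z \<in> PH"
      then obtain k where k: "k \<in> {1..m}" "z = phi k" by auto
      show False
      proof (cases "k = j")
        case True then show False using z k by (simp add: \<phi>_def)
      next
        case False then show False using phi_other[OF j k(1) False] zb k by simp
      qed
    qed
    ultimately show "z \<in> DI - PH" by simp
  qed
  have puncO: "ball \<phi> e0 - {\<phi>} \<subseteq> Oset" using punct by (auto simp: Oset_def)
  have ballDI: "ball \<phi> e0 \<subseteq> DI" using e0 ball_sub_DI[OF j] by auto
  obtain L where L: "L \<noteq> 0" "((\<lambda>z. (z - \<phi>) ^ nn j * ah z) \<longlongrightarrow> L) (at \<phi>)"
    using pole[OF j] by (auto simp: \<phi>_def)
  have ahp: "ah holomorphic_on (ball \<phi> e0 - {\<phi>})"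
    by (rule holomorphic_on_subset[OF ah_hol]) (use punct in auto)
  have PL: "((\<lambda>z. (z - \<phi>) ^ Suc (nn j) * \<beta> z) \<longlongrightarrow> - (of_nat (nn j) * L)) (at \<phi>)"
    by (rule pole_deriv_limit[OF e0(1) ahp nj[OF j] L(2)])
  have \<phi>nS: "\<phi> \<in> - S" using \<phi>in ball_sub_DI[OF j] S_DI by blast
  have Gc: "isCont (deriv GG) \<phi>"
    using holomorphic_on_imp_continuous_on[OF dGG_hol] open_nS \<phi>nS by (simp add: continuous_on_eq_continuous_at)
  have "((\<lambda>z. (z - \<phi>) ^ Suc (nn j) * deriv GG z) \<longlongrightarrow> (\<phi> - \<phi>) ^ Suc (nn j) * deriv GG \<phi>) (at \<phi>)"
    using Gc by (intro tendsto_intros) (auto simp: isCont_def)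
  then have PG: "((\<lambda>z. (z - \<phi>) ^ Suc (nn j) * deriv GG z) \<longlongrightarrow> 0) (at \<phi>)" by simp
  have "((\<lambda>z. (z - \<phi>) ^ Suc (nn j) * \<beta> z + (z - \<phi>) ^ Suc (nn j) * deriv GG z) \<longlongrightarrow> - (of_nat (nn j) * L) + 0) (at \<phi>)"
    by (intro tendsto_add PL PG)
  then have "((\<lambda>z. (z - \<phi>) ^ Suc (nn j) * (\<beta> z + deriv GG z)) \<longlongrightarrow> - (of_nat (nn j) * L)) (at \<phi>)"
    by (simp add: distrib_left)
  from tendsto_norm[OF this]
  have PT: "((\<lambda>z. norm ((z - \<phi>) ^ Suc (nn j) * (\<beta> z + deriv GG z))) \<longlongrightarrow> norm (of_nat (nn j) * L)) (at \<phi>)"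
    by (simp only: norm_minus_cancel)
  have nL: "norm (of_nat (nn j) * L) > 0" using L(1) nj[OF j] by (simp add: norm_mult)
  define q where "q = norm (of_nat (nn j) * L) / 2"
  have q: "q > 0" using nL by (simp add: q_def)
  have "eventually (\<lambda>z. norm ((z - \<phi>) ^ Suc (nn j) * (\<beta> z + deriv GG z)) > q) (at \<phi>)"
    using PT by (rule order_tendstoD) (use nL in \<open>simp add: q_def\<close>)
  then obtain d where d: "d > 0" "\<And>z. z \<noteq> \<phi> \<Longrightarrow> dist z \<phi> < d \<Longrightarrow> norm ((z - \<phi>) ^ Suc (nn j) * (\<beta> z + deriv GG z)) > q"
    by (auto simp: eventually_at)
  define \<epsilon> where "\<epsilon> = min d (min e0 1)"
  have \<epsilon>: "\<epsilon> > 0" "\<epsilon> \<le> d" "\<epsilon> \<le> e0" "\<epsilon> \<le> 1" using d e0 by (auto simp: \<epsilon>_def)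
  have sub\<epsilon>: "ball \<phi> \<epsilon> - {\<phi>} \<subseteq> ball \<phi> e0 - {\<phi>}" using \<epsilon> by auto
  have ellp: "deriv ell z \<noteq> 0 \<and> norm (1 / deriv ell z) \<le> 1 / q" if z: "z \<in> ball \<phi> \<epsilon> - {\<phi>}" for z
  proof -
    have zz: "z \<in> DI - PH" using z sub\<epsilon> punct by blast
    have dz: "dist z \<phi> < d" "z \<noteq> \<phi>" using z \<epsilon> by (auto simp: dist_commute)
    have big: "norm ((z - \<phi>) ^ Suc (nn j) * deriv ell z) > q" using d(2)[OF dz(2) dz(1)] dell_DI[OF zz] by simp
    then have ne: "deriv ell z \<noteq> 0" using q by auto
    have sm: "norm ((z - \<phi>) ^ Suc (nn j)) \<le> 1"
    proof -
      have "norm (z - \<phi>) \<le> 1" using z \<epsilon> by (auto simp: dist_norm norm_minus_commute)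
      then have "norm (z - \<phi>) ^ Suc (nn j) \<le> 1" by (intro power_le_one) auto
      then show ?thesis by (simp only: norm_power)
    qed
    have "norm (1 / deriv ell z) = norm ((z - \<phi>) ^ Suc (nn j)) / norm ((z - \<phi>) ^ Suc (nn j) * deriv ell z)"
      using dz(2) by (simp add: norm_mult norm_divide)
    also have "\<dots> \<le> 1 / q" using sm big q by (intro frac_le) auto
    finally show ?thesis using ne by simp
  qed
  have ballO: "ball \<phi> \<epsilon> - {\<phi>} \<subseteq> Oset" using sub\<epsilon> puncO by blast
  have Fh: "Fm X Y holomorphic_on (ball \<phi> \<epsilon> - {\<phi>})"
    unfolding Fm_def using dl_hol[OF X] dl_hol[OF Y] dell_hol ballO ellp
    by (intro holomorphic_on_divide holomorphic_on_mult) (auto elim: holomorphic_on_subset)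
  define H2 where "H2 = (\<lambda>z. \<beta> z * cc X z * cc Y z)"
  have ballnS: "ball \<phi> e0 \<subseteq> - S" using ballDI S_DI by blast
  have H2h: "H2 holomorphic_on (ball \<phi> \<epsilon> - {\<phi>})"
  proof -
    have "\<beta> holomorphic_on (ball \<phi> \<epsilon> - {\<phi>})"
      by (rule holomorphic_on_subset[OF beta_hol]) (use sub\<epsilon> punct in auto)
    moreover have "cc X holomorphic_on (ball \<phi> \<epsilon> - {\<phi>})" "cc Y holomorphic_on (ball \<phi> \<epsilon> - {\<phi>})"
      using cc_hol[OF X] cc_hol[OF Y] sub\<epsilon> ballnS by (auto elim!: holomorphic_on_subset)
    ultimately show ?thesis unfolding H2_def by (intro holomorphic_on_mult)
  qed
  define B2 where "B2 = (\<lambda>z. Fm X Y z - H2 z)"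
  have B2h: "B2 holomorphic_on (ball \<phi> \<epsilon> - {\<phi>})" unfolding B2_def using Fh H2h by (intro holomorphic_on_diff)
  have B2eq: "B2 z = Brest X Y z" if z: "z \<in> ball \<phi> \<epsilon> - {\<phi>}" for z
  proof -
    have zO: "z \<in> Oset" using ballO z by blast
    have zz: "z \<in> DI - PH" using z sub\<epsilon> punct by blast
    show ?thesis unfolding B2_def H2_def F_decomp[OF X Y zO conjunct1[OF ellp[OF z]]] dell_DI[OF zz] by simp
  qed
  define K where "K = cball \<phi> (\<epsilon> / 2)"
  have "K \<subseteq> ball \<phi> e0" using \<epsilon> unfolding K_def by (intro cball_subset_ball_iff[THEN iffD2]) auto
  then have Ksub: "K \<subseteq> - S" using ballnS by blast
  have Kc: "compact K" by (simp add: K_def)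
  have contK: "continuous_on K f" if "f holomorphic_on (- S)" for f
    using holomorphic_on_imp_continuous_on[OF that] Ksub by (rule continuous_on_subset)
  obtain M1 where M1: "M1 \<ge> 0" "\<And>z. z \<in> K \<Longrightarrow> norm (deriv GG z) \<le> M1" using cont_compact_bound[OF contK[OF dGG_hol] Kc] by blast
  obtain M2 where M2: "M2 \<ge> 0" "\<And>z. z \<in> K \<Longrightarrow> norm (cc X z) \<le> M2" using cont_compact_bound[OF contK[OF cc_hol[OF X]] Kc] by blast
  obtain M3 where M3: "M3 \<ge> 0" "\<And>z. z \<in> K \<Longrightarrow> norm (cc Y z) \<le> M3" using cont_compact_bound[OF contK[OF cc_hol[OF Y]] Kc] by blast
  obtain M4 where M4: "M4 \<ge> 0" "\<And>z. z \<in> K \<Longrightarrow> norm (Rf X z) \<le> M4" using cont_compact_bound[OF contK[OF Rf_hol[OF X]] Kc] by blast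
  obtain M5 where M5: "M5 \<ge> 0" "\<And>z. z \<in> K \<Longrightarrow> norm (Rf Y z) \<le> M5" using cont_compact_bound[OF contK[OF Rf_hol[OF Y]] Kc] by blast
  have B2bd: "norm (B2 z) \<le> M1 * M2 * M3 + M2 * M5 + M3 * M4 + M4 * M5 * (1 / q)" if z: "z \<in> ball \<phi> (\<epsilon> / 2) - {\<phi>}" for z
  proof -
    have zK: "z \<in> K" using z by (auto simp: K_def)
    have z\<epsilon>: "z \<in> ball \<phi> \<epsilon> - {\<phi>}" using z \<epsilon> by auto
    have "norm (Brest X Y z) \<le> norm (deriv GG z * cc X z * cc Y z) + norm (cc X z * Rf Y z) + norm (cc Y z * Rf X z)
        + norm (Rf X z * Rf Y z / deriv ell z)"
      unfolding Brest_def by (intro order_trans[OF norm_triangle_ineq] add_mono order_trans[OF norm_triangle_ineq4] order_refl)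
    also have "\<dots> \<le> M1 * M2 * M3 + M2 * M5 + M3 * M4 + M4 * M5 * (1 / q)"
    proof (intro add_mono)
      show "norm (deriv GG z * cc X z * cc Y z) \<le> M1 * M2 * M3"
        unfolding norm_mult using M1 M2 M3 zK by (intro mult_mono) auto
      show "norm (cc X z * Rf Y z) \<le> M2 * M5" unfolding norm_mult using M2 M5 zK by (intro mult_mono) auto
      show "norm (cc Y z * Rf X z) \<le> M3 * M4" unfolding norm_mult using M3 M4 zK by (intro mult_mono) auto
      have "norm (Rf X z * Rf Y z / deriv ell z) = norm (Rf X z) * norm (Rf Y z) * norm (1 / deriv ell z)"
        by (simp add: norm_mult norm_divide)
      also have "\<dots> \<le> M4 * M5 * (1 / q)"
        using M4 M5 zK conjunct2[OF ellp[OF z\<epsilon>]] by (intro mult_mono) auto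
      finally show "norm (Rf X z * Rf Y z / deriv ell z) \<le> M4 * M5 * (1 / q)" .
    qed
    finally show ?thesis using B2eq[OF z\<epsilon>] by simp
  qed
  have e2: "\<epsilon> / 2 > 0" using \<epsilon> by simp
  have "ball \<phi> (\<epsilon> / 2) \<subseteq> ball \<phi> \<epsilon>" using \<epsilon> by (intro ball_subset_ball_iff[THEN iffD2]) auto
  then have bs: "ball \<phi> (\<epsilon> / 2) - {\<phi>} \<subseteq> ball \<phi> \<epsilon> - {\<phi>}" by blast
  have B2h2: "B2 holomorphic_on (ball \<phi> (\<epsilon> / 2) - {\<phi>})" using B2h bs by (rule holomorphic_on_subset)
  have H2h2: "H2 holomorphic_on (ball \<phi> (\<epsilon> / 2) - {\<phi>})" using H2h bs by (rule holomorphic_on_subset)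
  have rB2: "residue B2 \<phi> = 0" by (rule res_bounded_zero[OF e2 B2h2 B2bd])
  have "residue (Fm X Y) \<phi> = residue (\<lambda>z. H2 z + B2 z) \<phi>" by (simp add: B2_def)
  also have "\<dots> = residue H2 \<phi> + residue B2 \<phi>" by (rule residue_add[OF _ _ H2h2 B2h2]) (use e2 in auto)
  finally have r1: "residue (Fm X Y) \<phi> = residue H2 \<phi>" using rB2 by simp
  define H3 where "H3 = (\<lambda>z. \<beta> z * PP (sP X) z * PP (sP Y) z)"
  have "residue H2 \<phi> = residue H3 \<phi>"
  proof (rule residue_cong)
    show "eventually (\<lambda>z. H2 z = H3 z) (at \<phi>)"
      unfolding eventually_at using e0 ballDI
      by (intro exI[of _ e0]) (auto simp: H2_def H3_def cc_def plus_DI dist_commute subset_iff)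
  qed simp
  obtain Wp1 where Wp1: "open Wp1" "S \<subseteq> Wp1" "PP (sP X) holomorphic_on (Wp1 \<union> DI)"
    using P_holo_big[OF HG_sP[OF alpha_HG beta_HG X]] by metis
  obtain Wp2 where Wp2: "open Wp2" "S \<subseteq> Wp2" "PP (sP Y) holomorphic_on (Wp2 \<union> DI)"
    using P_holo_big[OF HG_sP[OF alpha_HG beta_HG Y]] by metis
  define U3 where "U3 = U0 \<inter> Wp1 \<inter> Wp2"
  have U3: "open U3" "S \<subseteq> U3" using U0 Wp1 Wp2 by (auto simp: U3_def)
  obtain \<delta> where \<delta>: "\<delta> > 0"
    "\<And>j z. j \<in> {1..m} \<Longrightarrow> r j - 2 * \<delta> \<le> dist (c j) z \<Longrightarrow> dist (c j) z \<le> r j + 2 * \<delta> \<Longrightarrow> z \<in> U3"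
    "\<And>i j z. i \<in> {1..m} \<Longrightarrow> j \<in> {1..m} \<Longrightarrow> i \<noteq> j \<Longrightarrow> dist (c j) z \<le> r j + 2 * \<delta> \<Longrightarrow> dist (c i) z > r i + 2 * \<delta>"
    using delta_exists[OF U3] by metis
  have H3h: "H3 holomorphic_on (ball (c j) (r j + \<delta>) - {\<phi>})"
  proof -
    have sub: "ball (c j) (r j + \<delta>) - {\<phi>} \<subseteq> (U3 \<union> DI) - PH"
    proof
      fix z assume z: "z \<in> ball (c j) (r j + \<delta>) - {\<phi>}"
      have inU: "z \<in> U3 \<union> DI"
      proof (cases "dist (c j) z < r j - 2 * \<delta>")
        case True then have "z \<in> ball (c j) (r j)" using \<delta> by auto
        then show ?thesis using ball_sub_DI[OF j] by auto
      next
        case False then show ?thesis using \<delta>(2)[OF j, of z] z \<delta>(1) by auto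
      qed
      moreover have "z \<notin> PH"
      proof
        assume "z \<in> PH"
        then obtain k where k: "k \<in> {1..m}" "z = phi k" by auto
        show False
        proof (cases "k = j")
          case True then show False using z k by (simp add: \<phi>_def)
        next
          case False
          have "dist (c j) z \<le> r j + 2 * \<delta>" using z \<delta>(1) by auto
          then have "dist (c k) z > r k + 2 * \<delta>" by (rule \<delta>(3)[OF k(1) j False])
          moreover have "dist (c k) z < r k" using phi_in[OF k(1)] k(2) by simp
          ultimately show False using \<delta>(1) by linarith
        qed
      qed
      ultimately show "z \<in> (U3 \<union> DI) - PH" by simp
    qed
    have "\<beta> holomorphic_on ((U3 \<union> DI) - PH)"
      by (rule holomorphic_on_subset[OF beta_hol]) (auto simp: U3_def)
    moreover have "PP (sP X) holomorphic_on ((U3 \<union> DI) - PH)"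
      by (rule holomorphic_on_subset[OF Wp1(3)]) (auto simp: U3_def)
    moreover have "PP (sP Y) holomorphic_on ((U3 \<union> DI) - PH)"
      by (rule holomorphic_on_subset[OF Wp2(3)]) (auto simp: U3_def)
    ultimately have "H3 holomorphic_on ((U3 \<union> DI) - PH)" unfolding H3_def by (intro holomorphic_on_mult)
    then show ?thesis using sub by (rule holomorphic_on_subset)
  qed
  have "contour_integral (circlepath (c j) (r j)) H3 = 2 * pi * \<i> * residue H3 \<phi>"
    by (rule res_circle[OF H3h \<delta>(1)]) (use \<phi>in in simp)
  then have "residue H3 \<phi> = (1 / (2 * pi * \<i>)) * contour_integral (circlepath (c j) (r j)) H3" by simp
  then show ?thesis using r1 \<open>residue H2 \<phi> = residue H3 \<phi>\<close> by (simp add: \<phi>_def H3_def)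
qed

end

context disks begin

lemma I_add2:
  assumes "continuous_on S f" "continuous_on S g"
  shows "Ifun (\<lambda>z. f z + g z) = Ifun f + Ifun g"
  using I_lin[OF assms, of 1 1] by simp

lemma I_diff2:
  assumes "continuous_on S f" "continuous_on S g"
  shows "Ifun (\<lambda>z. f z - g z) = Ifun f - Ifun g"
  using I_lin[OF assms, of 1 "-1"] by simp

end

context mdata begin

lemma metric_formula:
  assumes X: "goodP X" and Y: "goodP Y"
  shows "metric_eta c r m a ah phi (eta c r m a ah X) (eta c r m a ah Y)
    = (1 / (2 * pi * \<i>)) * Ifun (sP (prodH c r m a ah X Y))"
proof -
  have aG: "\<alpha> \<in> HG" and bG: "\<beta> \<in> HG" using alpha_HG beta_HG .
  have xG: "fst X \<in> HG" "snd X \<in> HG" "fst Y \<in> HG" "snd Y \<in> HG" using X Y by (auto simp: goodP_def)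
  have s1: "sP X \<in> HG" and s2: "sP Y \<in> HG" using HG_sP[OF aG bG] X Y by auto
  have t1: "tP a ah X \<in> HG" and t2: "tP a ah Y \<in> HG" using HG_tP[OF aG bG] X Y by auto
  define f1 where "f1 = (\<lambda>z. (\<alpha> z - \<beta> z) * (NN (sP X) z - fst X z) * (NN (sP Y) z - fst Y z))"
  define f2 where "f2 = (\<lambda>z. \<alpha> z * NN (sP X) z * NN (sP Y) z)"
  define f3 where "f3 = (\<lambda>z. \<beta> z * PP (sP X) z * PP (sP Y) z)"
  define f4 where "f4 = (\<lambda>z. PP (sP X) z * PP (tP a ah Y) z)"
  define f5 where "f5 = (\<lambda>z. PP (sP Y) z * PP (tP a ah X) z)"
  define f6 where "f6 = (\<lambda>z. NN (sP Y) z * NN (tP a ah X) z)"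
  define f7 where "f7 = (\<lambda>z. NN (sP X) z * NN (tP a ah Y) z)"
  have HGs: "f1 \<in> HG" "f2 \<in> HG" "f3 \<in> HG" "f4 \<in> HG" "f5 \<in> HG" "f6 \<in> HG" "f7 \<in> HG"
    unfolding f1_def f2_def f3_def f4_def f5_def f6_def f7_def using aG bG xG s1 s2 t1 t2
    by (auto intro!: HG_mult HG_diff HG_N HG_P)
  have cs: "continuous_on S f1" "continuous_on S f2" "continuous_on S f3" "continuous_on S f4"
    "continuous_on S f5" "continuous_on S f6" "continuous_on S f7" using HGs HG_cont by auto
  have I4: "Ifun f4 = 0" unfolding f4_def by (rule I_PP[OF s1 t2])
  have I5: "Ifun f5 = 0" unfolding f5_def by (rule I_PP[OF s2 t1])
  have I6: "Ifun f6 = 0" unfolding f6_def by (rule I_NN[OF s2 t1])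
  have I7: "Ifun f7 = 0" unfolding f7_def by (rule I_NN[OF s1 t2])
  have sapp: "sP W z = fst W z + snd W z" for W z by (simp add: sP_def)
  have tapp: "tP a ah W z = fst W z * \<alpha> z + snd W z * \<beta> z" for W z by (simp add: tP_def)
  have pw: "sP (prodH c r m a ah X Y) z = (((f2 z - f1 z) - f3 z) + (f4 z + f5 z)) - (f6 z + f7 z)" for z
    unfolding f1_def f2_def f3_def f4_def f5_def f6_def f7_def
      P_eqN[OF s1] P_eqN[OF s2] P_eqN[OF t1] P_eqN[OF t2]
    unfolding sapp tapp prod_fst[OF aG bG X Y] prod_snd[OF aG bG X Y]
    by (simp add: algebra_simps)
  have "Ifun (sP (prodH c r m a ah X Y)) = Ifun (\<lambda>z. (((f2 z - f1 z) - f3 z) + (f4 z + f5 z)) - (f6 z + f7 z))"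
    by (rule arg_cong[where f = Ifun]) (rule ext, rule pw)
  also have "\<dots> = (((Ifun f2 - Ifun f1) - Ifun f3) + (Ifun f4 + Ifun f5)) - (Ifun f6 + Ifun f7)"
    using cs by (simp add: I_diff2 I_add2 continuous_intros)
  finally have Is: "Ifun (sP (prodH c r m a ah X Y)) = Ifun f2 - Ifun f1 - Ifun f3"
    using I4 I5 I6 I7 by simp
  have T1: "(\<Sum>j\<in>{1..m}. contour_integral (circlepath (c j) (r j))
      (\<lambda>z. (fst (eta c r m a ah X) z - snd (eta c r m a ah X) z) * (fst (eta c r m a ah Y) z - snd (eta c r m a ah Y) z)
            / deriv (\<lambda>z. a z - ah z) z)) = Ifun f1"
    unfolding Ifun_def[symmetric]
  proof (rule I_cong)
    fix z assume z: "z \<in> S"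
    have da: "a field_differentiable at z"
      using a_hol open_U0DE z U0(2) holomorphic_on_imp_differentiable_at by blast
    have dah: "ah field_differentiable at z"
      using ah_hol open_U0DI z S_U1 holomorphic_on_imp_differentiable_at by blast
    have dz: "deriv (\<lambda>z. a z - ah z) z = \<alpha> z - \<beta> z" using da dah by simp
    have nz: "\<alpha> z - \<beta> z \<noteq> 0" using zeta_nz z by simp
    have dzeta: "fst (eta c r m a ah W) z - snd (eta c r m a ah W) z = (\<alpha> z - \<beta> z) * (NN (sP W) z - fst W z)"
      if W: "goodP W" for W
    proof -
      have sW: "sP W \<in> HG" and tW: "tP a ah W \<in> HG" using HG_sP[OF aG bG W] HG_tP[OF aG bG W] by auto
      show ?thesis unfolding eta_fst eta_snd P_eqN[OF sW] P_eqN[OF tW] sapp tapp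
        by (simp add: algebra_simps)
    qed
    show "(fst (eta c r m a ah X) z - snd (eta c r m a ah X) z) * (fst (eta c r m a ah Y) z - snd (eta c r m a ah Y) z)
            / deriv (\<lambda>z. a z - ah z) z = f1 z"
      unfolding dz dzeta[OF X] dzeta[OF Y] f1_def using nz by (simp add: field_simps)
  qed
  have FF: "(\<lambda>z. (PP (fst (eta c r m a ah X)) z + NN (snd (eta c r m a ah X)) z) *
                 (PP (fst (eta c r m a ah Y)) z + NN (snd (eta c r m a ah Y)) z) /
                 deriv (\<lambda>z. PP a z + NN ah z) z) = Fm X Y"
    by (simp add: Fm_def dl_def ell_def)
  have RB: "(\<Sum>j\<in>{1..m}. residue (Fm X Y) (phi j)) = (1 / (2 * pi * \<i>)) * Ifun f3"
    unfolding Ifun_def sum_distrib_left f3_def using claimB[OF X Y] by (intro sum.cong) auto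
  have RA: "residue_inf (Fm X Y) = - (1 / (2 * pi * \<i>)) * Ifun f2"
    unfolding f2_def by (rule claimA[OF X Y])
  show ?thesis
    unfolding metric_eta_def Let_def FF T1 RA RB Is by (simp add: algebra_simps)
qed

end

theorem proposition2p7:
  fixes m :: nat and n :: "nat \<Rightarrow> nat" and d :: "nat \<Rightarrow> int"
    and c :: "nat \<Rightarrow> complex" and r :: "nat \<Rightarrow> real"
    and a ah :: "complex \<Rightarrow> complex" and phi :: "nat \<Rightarrow> complex"
    and w1 wh1 w2 wh2 w3 wh3 :: "complex \<Rightarrow> complex"
  assumes "m \<ge> 1"
    and "\<forall>j\<in>{0..m}. n j > 0"
    and "\<forall>j\<in>{1..m}. d j \<noteq> 0"
    and "\<forall>j\<in>{1..m}. r j > 0"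
    and "\<forall>i\<in>{1..m}. \<forall>j\<in>{1..m}. i \<noteq> j \<longrightarrow> cball (c i) (r i) \<inter> cball (c j) (r j) = {}"
    and "inM c r m n d a ah phi"
    and "{w1, wh1, w2, wh2, w3, wh3} \<subseteq> Hgerm c r m"
  shows "germ_eq2 c r m
           (eta c r m a ah (prodH c r m a ah (w1, wh1) (w2, wh2)))
           (eta c r m a ah (prodH c r m a ah (w2, wh2) (w1, wh1)))
       \<and> germ_eq2 c r m
           (eta c r m a ah (prodH c r m a ah (prodH c r m a ah (w1, wh1) (w2, wh2)) (w3, wh3)))
           (eta c r m a ah (prodH c r m a ah (w1, wh1) (prodH c r m a ah (w2, wh2) (w3, wh3))))
       \<and> metric_eta c r m a ah phi
           (eta c r m a ah (prodH c r m a ah (w1, wh1) (w2, wh2))) (eta c r m a ah (w3, wh3))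
         = metric_eta c r m a ah phi
           (eta c r m a ah (w1, wh1)) (eta c r m a ah (prodH c r m a ah (w2, wh2) (w3, wh3)))"
proof -
  note A = assms
  interpret D: disks c r m
    by unfold_locales (use A(4,5) in auto)
  obtain U where U: "open U" "circles c r m \<subseteq> U" "a holomorphic_on (U \<union> Dext c r m)"
      "ah holomorphic_on ((U \<union> Dint c r m) - phi ` {1..m})"
    using A(6) unfolding inM_def by blast
  have growth: "\<exists>C. eventually (\<lambda>z. norm (a z - z ^ n 0) \<le> C * norm z powr (real (n 0) - 2)) at_infinity"
    using A(6) unfolding inM_def by blast
  have phi_in: "\<And>j. j \<in> {1..m} \<Longrightarrow> phi j \<in> ball (c j) (r j)" using A(6) unfolding inM_def by blast
  have pole: "\<And>j. j \<in> {1..m} \<Longrightarrow> \<exists>L. L \<noteq> 0 \<and> ((\<lambda>z. (z - phi j) ^ n j * ah z) \<longlongrightarrow> L) (at (phi j))"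
    using A(6) unfolding inM_def by blast
  have wc: "\<And>j. j \<in> {1..m} \<Longrightarrow> \<exists>w V. open V \<and> sphere (c j) (r j) \<subseteq> V \<and> w holomorphic_on V \<and>
          (\<forall>z\<in>V. deriv w z \<noteq> 0 \<and> w z \<noteq> 0 \<and> a z - ah z = w z powi d j)"
    using A(6) unfolding inM_def by blast
  have PHcl: "closed (phi ` {1..m})" by (intro finite_imp_closed) auto
  have PH_S: "phi ` {1..m} \<inter> circles c r m = {}"
    using phi_in D.ball_sub_DI D.S_DI by blast
  have zeta_nz: "deriv a z - deriv ah z \<noteq> 0" if z: "z \<in> circles c r m" for z
  proof -
    obtain j where j: "j \<in> {1..m}" "z \<in> sphere (c j) (r j)" using z unfolding circles_def by blast
    obtain w V where wV: "open V" "sphere (c j) (r j) \<subseteq> V" "w holomorphic_on V"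
      "\<And>z. z \<in> V \<Longrightarrow> deriv w z \<noteq> 0 \<and> w z \<noteq> 0 \<and> a z - ah z = w z powi d j"
      using wc[OF j(1)] by blast
    have zV: "z \<in> V" using wV(2) j(2) by blast
    have U1: "open (U - phi ` {1..m})" using U(1) PHcl by auto
    have zU1: "z \<in> U - phi ` {1..m}" using z U(2) PH_S by blast
    have da: "a field_differentiable at z"
      using U(3) U(1) open_Un[OF U(1) D.open_DE] z U(2) holomorphic_on_imp_differentiable_at
      by (metis (no_types, lifting) UnI1 subsetD)
    have dah: "ah field_differentiable at z"
    proof -
      have "ah holomorphic_on (U - phi ` {1..m})" by (rule holomorphic_on_subset[OF U(4)]) auto
      then show ?thesis using U1 zU1 holomorphic_on_imp_differentiable_at by blast
    qed
    have "deriv (\<lambda>z. a z - ah z) z = deriv (\<lambda>z. w z powi d j) z"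
      by (rule deriv_cong_ev) (use wV(1,4) zV in \<open>auto simp: eventually_nhds intro!: exI[of _ V]\<close>)
    also have "\<dots> = of_int (d j) * w z powi (d j - 1) * deriv w z"
    proof (rule DERIV_imp_deriv)
      have wd: "(w has_field_derivative deriv w z) (at z)"
        using wV(1,3) zV by (auto intro!: holomorphic_derivI)
      show "((\<lambda>z. w z powi d j) has_field_derivative of_int (d j) * w z powi (d j - 1) * deriv w z) (at z)"
        using wd wV(4)[OF zV] by (auto intro!: derivative_eq_intros)
    qed
    finally have "deriv (\<lambda>z. a z - ah z) z = of_int (d j) * w z powi (d j - 1) * deriv w z" .
    moreover have "deriv (\<lambda>z. a z - ah z) z = deriv a z - deriv ah z" using da dah by simp
    moreover have "of_int (d j) * w z powi (d j - 1) * deriv w z \<noteq> 0"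
      using wV(4)[OF zV] A(3) j(1) by auto
    ultimately show ?thesis by simp
  qed
  interpret M: mdata c r m a ah phi n U
  proof unfold_locales
    show "open U" "circles c r m \<subseteq> U" by (fact U(1), fact U(2))
    show "a holomorphic_on (U \<union> Dext c r m)" by (fact U(3))
    show "ah holomorphic_on ((U \<union> Dint c r m) - phi ` {1..m})" by (fact U(4))
    show "n 0 \<ge> 1" using A(2) by (simp add: Suc_le_eq)
    show "\<exists>C. eventually (\<lambda>z. norm (a z - z ^ n 0) \<le> C * norm z powr (real (n 0) - 2)) at_infinity" by (fact growth)
    show "phi j \<in> ball (c j) (r j)" if "j \<in> {1..m}" for j using phi_in[OF that] .
    show "n j \<ge> 1" if "j \<in> {1..m}" for j using A(2) that by (simp add: Suc_le_eq)
    show "\<exists>L. L \<noteq> 0 \<and> ((\<lambda>z. (z - phi j) ^ n j * ah z) \<longlongrightarrow> L) (at (phi j))" if "j \<in> {1..m}" for j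
      using pole[OF that] .
    show "deriv a z - deriv ah z \<noteq> 0" if "z \<in> circles c r m" for z using zeta_nz[OF that] .
  qed
  have gX: "D.goodP (w1, wh1)" "D.goodP (w2, wh2)" "D.goodP (w3, wh3)"
    using A(7) by (auto simp: D.goodP_def)
  have aG: "deriv a \<in> Hgerm c r m" and bG: "deriv ah \<in> Hgerm c r m" using M.alpha_HG M.beta_HG .
  have refl2: "germ_eq2 c r m P P" for P
    unfolding germ_eq2_def germ_eq_def by (auto intro!: exI[of _ UNIV])
  have comm: "prodH c r m a ah (w1, wh1) (w2, wh2) = prodH c r m a ah (w2, wh2) (w1, wh1)"
    by (rule D.prod_comm[OF aG bG gX(1) gX(2)])
  have assoc: "prodH c r m a ah (prodH c r m a ah (w1, wh1) (w2, wh2)) (w3, wh3)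
      = prodH c r m a ah (w1, wh1) (prodH c r m a ah (w2, wh2) (w3, wh3))"
    by (rule D.prod_assoc[OF aG bG gX(1) gX(2) gX(3)])
  have gXY: "D.goodP (prodH c r m a ah (w1, wh1) (w2, wh2))" by (rule D.goodP_prod[OF aG bG gX(1) gX(2)])
  have gYZ: "D.goodP (prodH c r m a ah (w2, wh2) (w3, wh3))" by (rule D.goodP_prod[OF aG bG gX(2) gX(3)])
  have met: "metric_eta c r m a ah phi
           (eta c r m a ah (prodH c r m a ah (w1, wh1) (w2, wh2))) (eta c r m a ah (w3, wh3))
         = metric_eta c r m a ah phi
           (eta c r m a ah (w1, wh1)) (eta c r m a ah (prodH c r m a ah (w2, wh2) (w3, wh3)))"
    unfolding M.metric_formula[OF gXY gX(3)] M.metric_formula[OF gX(1) gYZ] assoc ..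
  show ?thesis using refl2 comm assoc met by simp
qed

end
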